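(* Let $b,f\in H^2(I)$ with $0<\underline b\le b\le\overline b$ on $\overline I$. Then for every $\varepsilon\in(0,1]$ the remainder $u^R_\varepsilon$ belongs to $H^2(I)\cap H^1_0(I)$ with $\|u^R_\varepsilon\|_{L^2(I)}\le\|u^R_\varepsilon\|_{1,\varepsilon,I}\le C\varepsilon^2$ and $\|(u^R_\varepsilon)''\|_{L^2(I)}\le C$, with $C$ independent of $\varepsilon$. Consequently, if $\mathcal I_\Delta u^R_\varepsilon$ denotes the continuous piecewise linear nodal interpolant of $u^R_\varepsilon$ on a quasi-uniform partition $\Delta$ of $I$ into $N$ intervals, then $\|u^R_\varepsilon-\mathcal I_\Delta u^R_\varepsilon\|_{1,\varepsilon,I}\le C N^{-1}$ for all $N\ge1$, $\varepsilon\in(0,1]$, and $\|u^R_\varepsilon-\mathcal I_\Delta u^R_\varepsilon\|_{1,\varepsilon,I}\le CN^{-2}$ whenever $1\le N\le \varepsilon^{-1}$, with $C$ independent of $\varepsilon$ and $N$ (depending on the quasi-uniformity constant).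
   Context: $I=(-1,1)$, $\varepsilon\in(0,1]$, $u_\varepsilon\in H^1_0(I)$ the weak solution of $-\varepsilon^2u''+bu=f$, $u(\pm1)=0$. $u_0=f/b$; $u^{BL}_{\varepsilon,-}$ solves $-\varepsilon^2u''+bu=0$, $u(-1)=-u_0(-1)$, $u(1)=0$; $u^{BL}_{\varepsilon,+}$ solves $-\varepsilon^2u''+bu=0$, $u(-1)=0$, $u(1)=-u_0(1)$; $u^R_\varepsilon=u_\varepsilon-u_0-u^{BL}_{\varepsilon,-}-u^{BL}_{\varepsilon,+}$. Energy norm $\|w\|_{1,\varepsilon,I}^2=\int_I(\varepsilon^2(w')^2+bw^2)dx$. *)

theory Defs
  imports "HOL-Analysis.Analysis"
begin

abbreviation Iopen :: "real set" where "Iopen \<equiv> {-1<..<1}"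

definition test_fun :: "(real \<Rightarrow> real) \<Rightarrow> bool" where
  "test_fun \<phi> \<longleftrightarrow> (\<forall>k x. ((deriv ^^ k) \<phi>) differentiable (at x)) \<and>
     (\<exists>a c. -1 < a \<and> c < 1 \<and> (\<forall>x. x \<notin> {a..c} \<longrightarrow> \<phi> x = 0))"

definition L2I :: "(real \<Rightarrow> real) \<Rightarrow> bool" where
  "L2I u \<longleftrightarrow> set_borel_measurable lborel Iopen u \<and>
     set_integrable lborel Iopen (\<lambda>x. (u x)^2)"

definition L2norm :: "(real \<Rightarrow> real) \<Rightarrow> real" where
  "L2norm u = sqrt (LINT x:Iopen|lborel. (u x)^2)"

definition L2_weak_deriv :: "(real \<Rightarrow> real) \<Rightarrow> (real \<Rightarrow> real) \<Rightarrow> bool" where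
  "L2_weak_deriv u g \<longleftrightarrow> L2I u \<and> L2I g \<and>
     (\<forall>\<phi>. test_fun \<phi> \<longrightarrow>
        (LINT x:Iopen|lborel. u x * deriv \<phi> x) = - (LINT x:Iopen|lborel. g x * \<phi> x))"

definition H1 :: "(real \<Rightarrow> real) \<Rightarrow> bool" where
  "H1 u \<longleftrightarrow> (\<exists>g. L2_weak_deriv u g)"

definition H2 :: "(real \<Rightarrow> real) \<Rightarrow> bool" where
  "H2 u \<longleftrightarrow> (\<exists>g. L2_weak_deriv u g \<and> H1 g)"

definition H10 :: "(real \<Rightarrow> real) \<Rightarrow> bool" where
  "H10 u \<longleftrightarrow> H1 u \<and> (\<exists>v. continuous_on {-1..1} v \<and>
      (AE x in lborel. x \<in> Iopen \<longrightarrow> u x = v x) \<and> v (-1) = 0 \<and> v 1 = 0)"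

text \<open>Energy norm, given a weak derivative g of w.\<close>
definition enorm :: "real \<Rightarrow> (real \<Rightarrow> real) \<Rightarrow> (real \<Rightarrow> real) \<Rightarrow> (real \<Rightarrow> real) \<Rightarrow> real" where
  "enorm \<epsilon> b w g = sqrt (LINT x:Iopen|lborel. \<epsilon>^2 * (g x)^2 + b x * (w x)^2)"

text \<open>Weak form of  -eps^2 u'' + b u = F  tested with H^1_0(I).\<close>
definition weak_eq :: "real \<Rightarrow> (real \<Rightarrow> real) \<Rightarrow> (real \<Rightarrow> real) \<Rightarrow> (real \<Rightarrow> real) \<Rightarrow> bool" where
  "weak_eq \<epsilon> b F u \<longleftrightarrow> (\<forall>u' \<phi> \<phi>'. L2_weak_deriv u u' \<and> H10 \<phi> \<and> L2_weak_deriv \<phi> \<phi>' \<longrightarrow>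
      (LINT x:Iopen|lborel. \<epsilon>^2 * u' x * \<phi>' x + b x * u x * \<phi> x) = (LINT x:Iopen|lborel. F x * \<phi> x))"

text \<open>u, uBLm, uBLp are (continuous representatives of) the weak solution and the two
  boundary layer functions, with u0 = f / b.\<close>
definition problem_data ::
  "real \<Rightarrow> (real \<Rightarrow> real) \<Rightarrow> (real \<Rightarrow> real) \<Rightarrow> (real \<Rightarrow> real) \<Rightarrow> (real \<Rightarrow> real) \<Rightarrow> (real \<Rightarrow> real) \<Rightarrow> bool" where
  "problem_data \<epsilon> b f u uBLm uBLp \<longleftrightarrow>
     continuous_on {-1..1} u \<and> H10 u \<and> u (-1) = 0 \<and> u 1 = 0 \<and> weak_eq \<epsilon> b f u \<and>
     continuous_on {-1..1} uBLm \<and> H1 uBLm \<and> uBLm (-1) = - (f (-1) / b (-1)) \<and> uBLm 1 = 0 \<and>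
       weak_eq \<epsilon> b (\<lambda>_. 0) uBLm \<and>
     continuous_on {-1..1} uBLp \<and> H1 uBLp \<and> uBLp (-1) = 0 \<and> uBLp 1 = - (f 1 / b 1) \<and>
       weak_eq \<epsilon> b (\<lambda>_. 0) uBLp"

definition remainder ::
  "(real \<Rightarrow> real) \<Rightarrow> (real \<Rightarrow> real) \<Rightarrow> (real \<Rightarrow> real) \<Rightarrow> (real \<Rightarrow> real) \<Rightarrow> (real \<Rightarrow> real) \<Rightarrow> real \<Rightarrow> real" where
  "remainder b f u uBLm uBLp x = u x - f x / b x - uBLm x - uBLp x"

definition quasi_uniform :: "real \<Rightarrow> nat \<Rightarrow> (nat \<Rightarrow> real) \<Rightarrow> bool" where
  "quasi_uniform \<kappa> N xs \<longleftrightarrow> N \<ge> 1 \<and> xs 0 = -1 \<and> xs N = 1 \<and>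
     (\<forall>i<N. xs i < xs (Suc i)) \<and>
     (\<forall>i<N. \<forall>j<N. xs (Suc i) - xs i \<le> \<kappa> * (xs (Suc j) - xs j))"

definition pl_interp :: "nat \<Rightarrow> (nat \<Rightarrow> real) \<Rightarrow> (real \<Rightarrow> real) \<Rightarrow> real \<Rightarrow> real" where
  "pl_interp N xs v x =
     (if \<exists>i<N. xs i \<le> x \<and> x \<le> xs (Suc i) then
        (let i = (SOME i. i < N \<and> xs i \<le> x \<and> x \<le> xs (Suc i)) in
          v (xs i) + (v (xs (Suc i)) - v (xs i)) * (x - xs i) / (xs (Suc i) - xs i))
      else 0)"

end

theory Submission
  imports Defs "HOL-Computational_Algebra.Polynomial"
begin


definition Ck :: "nat \<Rightarrow> (real \<Rightarrow> real) \<Rightarrow> bool" where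
  "Ck k f \<longleftrightarrow> (\<forall>j\<le>k. \<forall>x. (deriv ^^ j) f differentiable (at x))"

definition smooth :: "(real \<Rightarrow> real) \<Rightarrow> bool" where
  "smooth f \<longleftrightarrow> (\<forall>k x. (deriv ^^ k) f differentiable (at x))"

lemma smooth_Ck: "smooth f \<longleftrightarrow> (\<forall>k. Ck k f)"
  unfolding smooth_def Ck_def by auto

lemma all_le_Suc_split: "(\<forall>j\<le>Suc k. P j) \<longleftrightarrow> P 0 \<and> (\<forall>i\<le>k. P (Suc i))"
  apply (auto)
  subgoal for j by (cases j) auto
  done

lemma funpow_deriv_Suc: "(deriv ^^ Suc i) f = (deriv ^^ i) (deriv f)"
  by (simp add: funpow_Suc_right del: funpow.simps)

lemma Ck_0: "Ck 0 f \<longleftrightarrow> (\<forall>x. f differentiable (at x))"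
  by (simp add: Ck_def)

lemma Ck_Suc: "Ck (Suc k) f \<longleftrightarrow> (\<forall>x. f differentiable (at x)) \<and> Ck k (deriv f)"
  unfolding Ck_def all_le_Suc_split funpow_deriv_Suc by simp

lemma Ck_mono: "Ck (Suc k) f \<Longrightarrow> Ck k f"
  unfolding Ck_def by auto

lemma Ck_diff: "Ck k f \<Longrightarrow> f differentiable (at x)"
  by (cases k) (auto simp: Ck_Suc Ck_0)

lemma Ck_DERIV: "Ck k f \<Longrightarrow> (f has_real_derivative deriv f x) (at x)"
  using Ck_diff DERIV_deriv_iff_real_differentiable by blast

lemma deriv_add_fun:
  fixes f g :: "real \<Rightarrow> real"
  assumes "\<And>x. f differentiable (at x)" "\<And>x. g differentiable (at x)"
  shows "deriv (\<lambda>x. f x + g x) = (\<lambda>x. deriv f x + deriv g x)"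
proof
  fix x
  have "((\<lambda>x. f x + g x) has_real_derivative deriv f x + deriv g x) (at x)"
    using assms DERIV_deriv_iff_real_differentiable by (intro DERIV_add) auto
  then show "deriv (\<lambda>x. f x + g x) x = deriv f x + deriv g x" by (rule DERIV_imp_deriv)
qed

lemma deriv_mult_fun:
  fixes f g :: "real \<Rightarrow> real"
  assumes "\<And>x. f differentiable (at x)" "\<And>x. g differentiable (at x)"
  shows "deriv (\<lambda>x. f x * g x) = (\<lambda>x. deriv f x * g x + f x * deriv g x)"
proof
  fix x
  have "((\<lambda>x. f x * g x) has_real_derivative deriv f x * g x + f x * deriv g x) (at x)"
  proof -
    have "((\<lambda>x. f x * g x) has_real_derivative deriv f x * g x + deriv g x * f x) (at x)"
      using assms DERIV_deriv_iff_real_differentiable by (intro DERIV_mult) auto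
    then show ?thesis by (simp add: mult.commute)
  qed
  then show "deriv (\<lambda>x. f x * g x) x = deriv f x * g x + f x * deriv g x" by (rule DERIV_imp_deriv)
qed

lemma deriv_aff_fun:
  fixes f :: "real \<Rightarrow> real"
  assumes "\<And>x. f differentiable (at x)"
  shows "deriv (\<lambda>x. f (a * x + b)) = (\<lambda>x. a * deriv f (a * x + b))"
proof
  fix x
  have d: "((\<lambda>x. a * x + b) has_real_derivative a) (at x)"
    by (auto intro!: derivative_eq_intros)
  have "((\<lambda>x. f (a * x + b)) has_real_derivative deriv f (a * x + b) * a) (at x)"
    using DERIV_chain2[OF _ d] assms DERIV_deriv_iff_real_differentiable by blast
  then show "deriv (\<lambda>x. f (a * x + b)) x = a * deriv f (a * x + b)"
    by (simp add: DERIV_imp_deriv mult.commute)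
qed

lemma deriv_inv_fun:
  fixes g :: "real \<Rightarrow> real"
  assumes "\<And>x. g differentiable (at x)" "\<And>x. g x \<noteq> 0"
  shows "deriv (\<lambda>x. 1 / g x) = (\<lambda>x. (- deriv g x) * (1 / g x) * (1 / g x))"
proof
  fix x
  have "((\<lambda>x. inverse (g x)) has_real_derivative - (deriv g x * inverse (g x ^ 2))) (at x)"
  proof -
    have d: "(g has_real_derivative deriv g x) (at x)" using assms DERIV_deriv_iff_real_differentiable by blast
    show ?thesis using DERIV_inverse_fun[OF d assms(2)[of x]] by (simp add: power2_eq_square)
  qed
  then show "deriv (\<lambda>x. 1 / g x) x = (- deriv g x) * (1 / g x) * (1 / g x)"
    by (auto dest!: DERIV_imp_deriv simp: divide_inverse power2_eq_square)
qed

lemma Ck_const: "Ck k (\<lambda>x. c)"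
proof (induction k arbitrary: c)
  case 0 then show ?case by (simp add: Ck_0)
next
  case (Suc k)
  have "deriv (\<lambda>x. c) = (\<lambda>x. 0)" by (rule ext) simp
  then show ?case using Suc by (simp add: Ck_Suc)
qed

lemma Ck_add: "Ck k f \<Longrightarrow> Ck k g \<Longrightarrow> Ck k (\<lambda>x. f x + g x)"
proof (induction k arbitrary: f g)
  case 0 then show ?case by (simp add: Ck_0)
next
  case (Suc k)
  then have df: "\<And>x. f differentiable (at x)" and dg: "\<And>x. g differentiable (at x)"
    by (auto simp: Ck_Suc)
  show ?case using Suc unfolding Ck_Suc deriv_add_fun[OF df dg] by auto
qed

lemma Ck_mult: "Ck k f \<Longrightarrow> Ck k g \<Longrightarrow> Ck k (\<lambda>x. f x * g x)"
proof (induction k arbitrary: f g)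
  case 0 then show ?case by (simp add: Ck_0)
next
  case (Suc k)
  then have df: "\<And>x. f differentiable (at x)" and dg: "\<And>x. g differentiable (at x)"
    by (auto simp: Ck_Suc)
  have "Ck k (\<lambda>x. deriv f x * g x + f x * deriv g x)"
    using Suc.prems Ck_mono[of k f] Ck_mono[of k g]
    by (intro Ck_add Suc.IH) (auto simp: Ck_Suc)
  then show ?case using df dg unfolding Ck_Suc deriv_mult_fun[OF df dg] by auto
qed

lemma diff_aff:
  fixes f :: "real \<Rightarrow> real"
  assumes df: "\<And>x. f differentiable (at x)"
  shows "(\<lambda>x. f (a * x + b)) differentiable (at x)"
proof -
  have d1: "(f has_real_derivative deriv f (a * x + b)) (at (a * x + b))"
    using df DERIV_deriv_iff_real_differentiable by blast
  have d2: "((\<lambda>x. a * x + b) has_real_derivative a) (at x)"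
    by (auto intro!: derivative_eq_intros)
  have "((\<lambda>x. f (a * x + b)) has_real_derivative deriv f (a * x + b) * a) (at x)"
    using DERIV_chain2[OF d1 d2] .
  then show "(\<lambda>x. f (a * x + b)) differentiable (at x)" using real_differentiable_def by blast
qed

lemma Ck_aff: "Ck k f \<Longrightarrow> Ck k (\<lambda>x. f (a * x + b))"
proof (induction k arbitrary: f)
  case 0 then show ?case using diff_aff by (simp add: Ck_0)
next
  case (Suc k)
  then have df: "\<And>x. f differentiable (at x)" by (auto simp: Ck_Suc)
  have d2: "\<And>x. (\<lambda>x. f (a * x + b)) differentiable (at x)" using diff_aff[OF df] .
  have "Ck k (\<lambda>x. a * deriv f (a * x + b))"
    using Suc by (intro Ck_mult Ck_const) (auto simp: Ck_Suc)
  then show ?case using d2 unfolding Ck_Suc deriv_aff_fun[OF df] by auto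
qed

lemma Ck_inv: "Ck k g \<Longrightarrow> (\<And>x. g x \<noteq> 0) \<Longrightarrow> Ck k (\<lambda>x. 1 / g x)"
proof (induction k arbitrary: g)
  case 0 then show ?case
    by (auto simp: Ck_0 intro!: derivative_intros)
next
  case (Suc k)
  then have dg: "\<And>x. g differentiable (at x)" by (auto simp: Ck_Suc)
  have d2: "\<And>x. (\<lambda>x. 1 / g x) differentiable (at x)"
    using dg Suc.prems by (auto intro!: derivative_intros)
  have B: "Ck k (\<lambda>x. 1 / g x)" using Suc.IH[OF Ck_mono[OF Suc.prems(1)]] Suc.prems(2) by blast
  have A0: "Ck k (deriv g)" using Suc.prems(1) by (simp add: Ck_Suc)
  have A: "Ck k (\<lambda>x. - deriv g x)" using Ck_mult[OF Ck_const[of k "-1"] A0] by simp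
  have "Ck k (\<lambda>x. (- deriv g x) * (1 / g x) * (1 / g x))"
    by (rule Ck_mult[OF Ck_mult[OF A B] B])
  then show ?case using d2 unfolding Ck_Suc deriv_inv_fun[OF dg Suc.prems(2)] by auto
qed

lemma smooth_const: "smooth (\<lambda>x. c)" by (simp add: smooth_Ck Ck_const)
lemma smooth_add: "smooth f \<Longrightarrow> smooth g \<Longrightarrow> smooth (\<lambda>x. f x + g x)" by (simp add: smooth_Ck Ck_add)
lemma smooth_mult: "smooth f \<Longrightarrow> smooth g \<Longrightarrow> smooth (\<lambda>x. f x * g x)" by (simp add: smooth_Ck Ck_mult)
lemma smooth_aff: "smooth f \<Longrightarrow> smooth (\<lambda>x. f (a * x + b))" by (simp add: smooth_Ck Ck_aff)
lemma smooth_inv: "smooth g \<Longrightarrow> (\<And>x. g x \<noteq> 0) \<Longrightarrow> smooth (\<lambda>x. 1 / g x)" by (simp add: smooth_Ck Ck_inv)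
lemma smooth_deriv: "smooth f \<Longrightarrow> smooth (deriv f)"
  unfolding smooth_Ck by (metis Ck_Suc)
lemma smooth_DERIV: "smooth f \<Longrightarrow> (f has_real_derivative deriv f x) (at x)"
  using Ck_DERIV smooth_Ck by blast
lemma smooth_diff: "smooth f \<Longrightarrow> smooth g \<Longrightarrow> smooth (\<lambda>x. f x - g x)"
proof -
  assume a: "smooth f" "smooth g"
  have "smooth (\<lambda>x. (-1) * g x)" using smooth_mult[OF smooth_const a(2)] .
  from smooth_add[OF a(1) this] show ?thesis by simp
qed
lemma smooth_cmult: "smooth f \<Longrightarrow> smooth (\<lambda>x. c * f x)"
  using smooth_mult[OF smooth_const] by blast
lemma smooth_isCont: "smooth f \<Longrightarrow> isCont f x"
  using smooth_DERIV DERIV_isCont by blast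
lemma smooth_cont: "smooth f \<Longrightarrow> continuous_on S f"
  using smooth_isCont continuous_at_imp_continuous_on by blast

lemma smooth_intro:
  assumes "\<And>x. (f has_real_derivative f' x) (at x)" "smooth f'"
  shows "smooth f"
proof -
  have "deriv f = f'" using assms(1) DERIV_imp_deriv by blast
  then have "Ck (Suc k) f" for k using assms smooth_Ck
    by (auto simp: Ck_Suc real_differentiable_def)
  then show ?thesis using Ck_mono smooth_Ck by blast
qed


section \<open>A smooth function with support in [0,inf)\<close>

definition Gp :: "real poly \<Rightarrow> real \<Rightarrow> real" where
  "Gp p x = (if 0 < x then poly p (1 / x) * exp (- (1 / x)) else 0)"

definition Dp :: "real poly \<Rightarrow> real poly" where
  "Dp p = [:0, 0, 1:] * (p - pderiv p)"

lemma poly_exp_lim: "((\<lambda>t::real. poly p t / exp t) \<longlongrightarrow> 0) at_top"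
proof -
  have "((\<lambda>t::real. \<Sum>i\<le>degree p. coeff p i * (t ^ i / exp t)) \<longlongrightarrow> (\<Sum>i\<le>degree p. coeff p i * 0)) at_top"
    by (intro tendsto_sum tendsto_mult tendsto_const) (rule tendsto_power_div_exp_0)
  then show ?thesis
    by (simp add: poly_altdef sum_divide_distrib)
qed

lemma Gp_deriv0: "(Gp p has_real_derivative 0) (at 0)"
proof -
  have r0: "((\<lambda>t. (Gp p (inverse t) - Gp p 0) / (inverse t - 0)) \<longlongrightarrow> 0) at_top"
  proof (rule Lim_transform_eventually[OF poly_exp_lim[of "pCons 0 p"]])
    show "\<forall>\<^sub>F x in at_top. poly (pCons 0 p) x / exp x = (Gp p (inverse x) - Gp p 0) / (inverse x - 0)"
      using eventually_gt_at_top[of 0]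
      by eventually_elim (simp add: Gp_def exp_minus field_simps)
  qed
  have r: "((\<lambda>y. (Gp p y - Gp p 0) / (y - 0)) \<longlongrightarrow> 0) (at_right 0)"
    using filterlim_at_right_to_top[THEN iffD2, OF r0] .
  have l: "((\<lambda>y. (Gp p y - Gp p 0) / (y - 0)) \<longlongrightarrow> 0) (at_left 0)"
  proof (rule tendsto_eventually)
    show "\<forall>\<^sub>F x in at_left 0. (Gp p x - Gp p 0) / (x - 0) = 0"
      using eventually_at_left_real[of "-1" 0, OF _]
      by (simp add: Gp_def eventually_at_filter eventually_at_left_real eventually_mono)
  qed
  show ?thesis
    unfolding has_field_derivative_iff using filterlim_split_at[OF l r] .
qed

lemma Gp_deriv: "(Gp p has_real_derivative Gp (Dp p) x) (at x)"
proof (cases "x = 0")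
  case True
  then show ?thesis using Gp_deriv0 by (simp add: Gp_def)
next
  case False
  show ?thesis
  proof (cases "x > 0")
    case True
    let ?h = "\<lambda>y. poly p (1 / y) * exp (- (1 / y))"
    have d1: "((\<lambda>y. poly p (1 / y)) has_real_derivative poly (pderiv p) (1 / x) * (- 1 / x\<^sup>2)) (at x)"
    proof -
      have a: "((\<lambda>y. 1 / y) has_real_derivative (- 1 / x\<^sup>2)) (at x)"
        using True by (auto intro!: derivative_eq_intros simp: power2_eq_square field_simps)
      show ?thesis using DERIV_chain2[OF poly_DERIV a] .
    qed
    have d2: "((\<lambda>y. exp (- (1 / y))) has_real_derivative exp (- (1 / x)) * (1 / x\<^sup>2)) (at x)"
      using True by (auto intro!: derivative_eq_intros simp: power2_eq_square field_simps)
    have "(?h has_real_derivative poly (pderiv p) (1 / x) * (- 1 / x\<^sup>2) * exp (- (1 / x))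
        + poly p (1 / x) * (exp (- (1 / x)) * (1 / x\<^sup>2))) (at x)"
      using DERIV_mult'[OF d1 d2] by (simp add: add.commute)
    moreover have "poly (pderiv p) (1 / x) * (- 1 / x\<^sup>2) * exp (- (1 / x))
        + poly p (1 / x) * (exp (- (1 / x)) * (1 / x\<^sup>2)) = Gp (Dp p) x"
      using True by (simp add: Gp_def Dp_def poly_mult power2_eq_square field_simps)
    ultimately have "(?h has_real_derivative Gp (Dp p) x) (at x)" by simp
    then show ?thesis
      by (rule has_field_derivative_transform_within_open[where S="{0<..}"]) (use True in \<open>auto simp: Gp_def\<close>)
  next
    case False
    with \<open>x \<noteq> 0\<close> have "x < 0" by simp
    have "((\<lambda>y. 0) has_real_derivative 0) (at x)" by simp
    then have "(Gp p has_real_derivative 0) (at x)"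
      by (rule has_field_derivative_transform_within_open[where S="{..<0}"]) (use \<open>x < 0\<close> in \<open>auto simp: Gp_def\<close>)
    then show ?thesis using \<open>x < 0\<close> by (simp add: Gp_def)
  qed
qed

lemma deriv_Gp: "deriv (Gp p) = Gp (Dp p)"
  using Gp_deriv DERIV_imp_deriv by blast

lemma funpow_deriv_Gp: "(deriv ^^ k) (Gp p) = Gp ((Dp ^^ k) p)"
  by (induction k) (simp_all add: deriv_Gp)

lemma smooth_Gp: "smooth (Gp p)"
  unfolding smooth_def funpow_deriv_Gp using Gp_deriv real_differentiable_def by blast

definition psi :: "real \<Rightarrow> real" where "psi = Gp 1"

lemma smooth_psi: "smooth psi" by (simp add: psi_def smooth_Gp)
lemma psi_pos: "0 < x \<Longrightarrow> 0 < psi x" by (simp add: psi_def Gp_def)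
lemma psi_zero: "x \<le> 0 \<Longrightarrow> psi x = 0" by (simp add: psi_def Gp_def)
lemma psi_nonneg: "0 \<le> psi x" by (simp add: psi_def Gp_def)

definition Sstep :: "real \<Rightarrow> real" where "Sstep x = psi x * (1 / (psi x + psi (1 - x)))"

lemma Sden_pos: "0 < psi x + psi (1 - x)"
  using psi_pos[of x] psi_pos[of "1 - x"] psi_nonneg[of x] psi_nonneg[of "1 - x"]
  by (cases "0 < x") auto

lemma smooth_Sstep: "smooth Sstep"
proof -
  have a: "smooth (\<lambda>x. psi ((-1) * x + 1))" by (rule smooth_aff[OF smooth_psi])
  have "smooth (\<lambda>x. psi x + psi (1 - x))" using smooth_add[OF smooth_psi a] by simp
  then have "smooth (\<lambda>x. 1 / (psi x + psi (1 - x)))"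
    by (rule smooth_inv) (use Sden_pos in \<open>metis less_irrefl\<close>)
  then show ?thesis unfolding Sstep_def[abs_def] by (rule smooth_mult[OF smooth_psi])
qed

lemma Sstep_0: "x \<le> 0 \<Longrightarrow> Sstep x = 0" by (simp add: Sstep_def psi_zero)
lemma Sstep_1: "1 \<le> x \<Longrightarrow> Sstep x = 1"
  using psi_pos[of x] by (simp add: Sstep_def psi_zero)
lemma Sstep_nonneg: "0 \<le> Sstep x"
  using Sden_pos[of x] psi_nonneg[of x] by (simp add: Sstep_def)
lemma Sstep_le1: "Sstep x \<le> 1"
  using Sden_pos[of x] psi_nonneg[of x] psi_nonneg[of "1-x"] by (simp add: Sstep_def field_simps)



abbreviation mI :: "(real \<Rightarrow> real) \<Rightarrow> bool" where
  "mI f \<equiv> set_borel_measurable lborel Iopen f"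
abbreviation intI :: "(real \<Rightarrow> real) \<Rightarrow> bool" where
  "intI f \<equiv> set_integrable lborel Iopen f"

lemma ind_eq: "(\<lambda>x. indicator Iopen x *\<^sub>R (f x :: real)) = (\<lambda>x. indicator Iopen x * f x)"
  by simp

lemma mI_mult: "mI f \<Longrightarrow> mI g \<Longrightarrow> mI (\<lambda>x. f x * g x)"
proof -
  assume a: "mI f" "mI g"
  have e: "(\<lambda>x. indicator Iopen x *\<^sub>R (f x * g x)) =
     (\<lambda>x. (indicator Iopen x *\<^sub>R f x) * (indicator Iopen x *\<^sub>R g x))"
    by (auto simp: indicator_def)
  show ?thesis using a unfolding set_borel_measurable_def e by measurable
qed

lemma mI_add: "mI f \<Longrightarrow> mI g \<Longrightarrow> mI (\<lambda>x. f x + g x)"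
proof -
  assume a: "mI f" "mI g"
  have e: "(\<lambda>x. indicator Iopen x *\<^sub>R (f x + g x)) =
     (\<lambda>x. (indicator Iopen x *\<^sub>R f x) + (indicator Iopen x *\<^sub>R g x))"
    by (auto simp: indicator_def)
  show ?thesis using a unfolding set_borel_measurable_def e by measurable
qed

lemma mI_const: "mI (\<lambda>x. c)"
  unfolding set_borel_measurable_def by measurable

lemma mI_cmult: "mI f \<Longrightarrow> mI (\<lambda>x. c * f x)"
  using mI_mult[OF mI_const] by blast

lemma mI_diff: "mI f \<Longrightarrow> mI g \<Longrightarrow> mI (\<lambda>x. f x - g x)"
  using mI_add[of f "\<lambda>x. (-1) * g x"] mI_cmult[of g "-1"] by simp

lemma mI_cong: "mI f \<Longrightarrow> (\<And>x. x \<in> Iopen \<Longrightarrow> f x = g x) \<Longrightarrow> mI g"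
proof -
  assume a: "mI f" "\<And>x. x \<in> Iopen \<Longrightarrow> f x = g x"
  have "(\<lambda>x. indicator Iopen x *\<^sub>R f x) = (\<lambda>x. indicator Iopen x *\<^sub>R g x)"
    by (rule ext, case_tac "x \<in> Iopen") (simp_all add: a(2))
  then show ?thesis using a(1) unfolding set_borel_measurable_def by simp
qed

lemma intI_cong: "intI f \<Longrightarrow> (\<And>x. x \<in> Iopen \<Longrightarrow> f x = g x) \<Longrightarrow> intI g"
proof -
  assume a: "intI f" "\<And>x. x \<in> Iopen \<Longrightarrow> f x = g x"
  have "(\<lambda>x. indicator Iopen x *\<^sub>R f x) = (\<lambda>x. indicator Iopen x *\<^sub>R g x)"
    by (rule ext, case_tac "x \<in> Iopen") (simp_all add: a(2))
  then show ?thesis using a(1) unfolding set_integrable_def by simp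
qed

lemma intI_integral_cong: "(\<And>x. x \<in> Iopen \<Longrightarrow> f x = g x) \<Longrightarrow>
   (LINT x:Iopen|lborel. f x) = (LINT x:Iopen|lborel. g x)"
proof -
  assume a: "\<And>x. x \<in> Iopen \<Longrightarrow> f x = g x"
  have "(\<lambda>x. indicator Iopen x *\<^sub>R f x) = (\<lambda>x. indicator Iopen x *\<^sub>R g x)"
    by (rule ext, case_tac "x \<in> Iopen") (simp_all add: a)
  then show ?thesis unfolding set_lebesgue_integral_def by simp
qed

lemma mI_cont: "continuous_on {-1..1} h \<Longrightarrow> mI h"
proof -
  assume "continuous_on {-1..1} h"
  then have "continuous_on Iopen h" by (rule continuous_on_subset) auto
  then have "(\<lambda>x. indicator Iopen x *\<^sub>R h x) \<in> borel_measurable borel"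
    by (intro borel_measurable_continuous_on_indicator) auto
  then show ?thesis unfolding set_borel_measurable_def by simp
qed

lemma intI_mI: "intI f \<Longrightarrow> mI f"
  unfolding set_integrable_def set_borel_measurable_def by (rule borel_measurable_integrable)

lemma intI_const: "intI (\<lambda>x. c)"
proof -
  have "integrable lborel (\<lambda>x. indicator Iopen x * c :: real)"
    by (intro integrable_mult_left integrable_real_indicator) auto
  then show ?thesis unfolding set_integrable_def by simp
qed

lemma intI_bound: "intI g \<Longrightarrow> mI f \<Longrightarrow> (\<And>x. x \<in> Iopen \<Longrightarrow> \<bar>f x\<bar> \<le> g x) \<Longrightarrow> intI f"
proof -
  assume a: "intI g" "mI f" "\<And>x. x \<in> Iopen \<Longrightarrow> \<bar>f x\<bar> \<le> g x"
  show ?thesis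
  proof (rule set_integrable_bound[where f=g])
    show "AE x in lborel. x \<in> Iopen \<longrightarrow> norm (f x) \<le> norm (g x)"
      using a(3) by (auto intro: order_trans[OF _ abs_ge_self])
  qed (use a in auto)
qed

lemma intI_add: "intI f \<Longrightarrow> intI g \<Longrightarrow> intI (\<lambda>x. f x + g x)" by (rule set_integral_add)
lemma intI_diff: "intI f \<Longrightarrow> intI g \<Longrightarrow> intI (\<lambda>x. f x - g x)" by (rule set_integral_diff)
lemma intI_cmult: "intI f \<Longrightarrow> intI (\<lambda>x. c * f x)" by (rule set_integrable_mult_right) auto

lemma cont_bound:
  fixes h :: "real \<Rightarrow> real"
  assumes "continuous_on {-1..1} h"
  obtains B where "B \<ge> 0" "\<And>x. x \<in> {-1..1} \<Longrightarrow> \<bar>h x\<bar> \<le> B"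
proof -
  have "compact (h ` {-1..1})" by (rule compact_continuous_image[OF assms compact_Icc])
  then obtain B where "\<forall>y\<in>h ` {-1..1}. norm y \<le> B" using compact_imp_bounded bounded_iff by blast
  then show ?thesis using that[of "max B 0"] by force
qed

lemma abs_le_1_sq: "\<bar>a\<bar> \<le> 1 + a\<^sup>2" for a :: real
proof (cases "\<bar>a\<bar> \<le> 1")
  case True
  have "0 \<le> a\<^sup>2" by simp
  with True show ?thesis by linarith
next
  case False
  have "\<bar>a\<bar> * 1 \<le> \<bar>a\<bar> * \<bar>a\<bar>" using False by (intro mult_left_mono) auto
  then show ?thesis by (simp add: power2_eq_square)
qed

lemma L2I_intI: "L2I f \<Longrightarrow> intI f"
  unfolding L2I_def
  by (rule intI_bound[where g="\<lambda>x. 1 + (f x)^2"]) (auto intro!: intI_add intI_const abs_le_1_sq)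

lemma sq_ineq1: "\<bar>a * b\<bar> \<le> a\<^sup>2 + b\<^sup>2" for a b :: real
proof -
  have "2 * \<bar>a\<bar> * \<bar>b\<bar> \<le> \<bar>a\<bar>\<^sup>2 + \<bar>b\<bar>\<^sup>2" by (rule sum_squares_bound)
  then have "2 * (\<bar>a\<bar> * \<bar>b\<bar>) \<le> a\<^sup>2 + b\<^sup>2" by simp
  moreover have "0 \<le> a\<^sup>2" "0 \<le> b\<^sup>2" "0 \<le> \<bar>a\<bar> * \<bar>b\<bar>" by simp_all
  ultimately show ?thesis unfolding abs_mult by linarith
qed

lemma L2I_mult_int: "L2I f \<Longrightarrow> L2I g \<Longrightarrow> intI (\<lambda>x. f x * g x)"
  unfolding L2I_def
  by (rule intI_bound[where g="\<lambda>x. (f x)^2 + (g x)^2"]) (auto intro!: intI_add mI_mult sq_ineq1)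

lemma L2I_add: "L2I f \<Longrightarrow> L2I g \<Longrightarrow> L2I (\<lambda>x. f x + g x)"
  unfolding L2I_def
proof safe
  assume a: "mI f" "intI (\<lambda>x. (f x)\<^sup>2)" "mI g" "intI (\<lambda>x. (g x)\<^sup>2)"
  show "mI (\<lambda>x. f x + g x)" using mI_add[OF a(1) a(3)] .
  show "intI (\<lambda>x. (f x + g x)\<^sup>2)"
  proof (rule intI_bound[where g="\<lambda>x. 2 * (f x)^2 + 2 * (g x)^2"])
    show "intI (\<lambda>x. 2 * (f x)\<^sup>2 + 2 * (g x)\<^sup>2)" using a by (auto intro!: intI_add intI_cmult)
    show "mI (\<lambda>x. (f x + g x)\<^sup>2)" using a unfolding power2_eq_square by (intro mI_mult mI_add)
    fix x show "\<bar>(f x + g x)\<^sup>2\<bar> \<le> 2 * (f x)\<^sup>2 + 2 * (g x)\<^sup>2"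
    proof -
      have "2 * f x * g x \<le> (f x)\<^sup>2 + (g x)\<^sup>2" by (rule sum_squares_bound)
      moreover have "0 \<le> (f x + g x)\<^sup>2" by simp
      ultimately show ?thesis by (simp add: power2_sum)
    qed
  qed
qed

lemma L2I_cmult: "L2I f \<Longrightarrow> L2I (\<lambda>x. c * f x)"
  unfolding L2I_def
proof safe
  assume a: "mI f" "intI (\<lambda>x. (f x)\<^sup>2)"
  show "mI (\<lambda>x. c * f x)" using mI_cmult[OF a(1)] .
  have "intI (\<lambda>x. c^2 * (f x)\<^sup>2)" using intI_cmult[OF a(2)] .
  then show "intI (\<lambda>x. (c * f x)\<^sup>2)" by (simp add: power_mult_distrib)
qed

lemma L2I_diff: "L2I f \<Longrightarrow> L2I g \<Longrightarrow> L2I (\<lambda>x. f x - g x)"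
proof -
  assume a: "L2I f" "L2I g"
  have "L2I (\<lambda>x. f x + (-1) * g x)" by (rule L2I_add[OF a(1) L2I_cmult[OF a(2)]])
  then show ?thesis by simp
qed

lemma L2I_cong: "L2I f \<Longrightarrow> (\<And>x. x \<in> Iopen \<Longrightarrow> f x = g x) \<Longrightarrow> L2I g"
proof -
  assume a: "L2I f" "\<And>x. x \<in> Iopen \<Longrightarrow> f x = g x"
  have "mI g" using a mI_cong[of f g] by (simp add: L2I_def)
  moreover have "intI (\<lambda>x. (g x)\<^sup>2)" using a intI_cong[of "\<lambda>x. (f x)\<^sup>2" "\<lambda>x. (g x)\<^sup>2"] by (simp add: L2I_def)
  ultimately show ?thesis by (simp add: L2I_def)
qed

lemma L2I_mult_cont: "L2I f \<Longrightarrow> continuous_on {-1..1} h \<Longrightarrow> L2I (\<lambda>x. h x * f x)"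
proof -
  assume a: "L2I f" "continuous_on {-1..1} h"
  obtain B where B: "B \<ge> 0" "\<And>x. x \<in> {-1..1} \<Longrightarrow> \<bar>h x\<bar> \<le> B" using cont_bound[OF a(2)] by blast
  show ?thesis unfolding L2I_def
  proof
    have mf: "mI f" using a(1) by (simp add: L2I_def)
    have P: "mI (\<lambda>x. h x * f x)" by (rule mI_mult[OF mI_cont[OF a(2)] mf])
    show "mI (\<lambda>x. h x * f x)" by (rule P)
    show "intI (\<lambda>x. (h x * f x)\<^sup>2)"
    proof (rule intI_bound[where g="\<lambda>x. B^2 * (f x)^2"])
      show "intI (\<lambda>x. B\<^sup>2 * (f x)\<^sup>2)" using a by (auto simp: L2I_def intro!: intI_cmult)
      show "mI (\<lambda>x. (h x * f x)\<^sup>2)" unfolding power2_eq_square by (rule mI_mult[OF P P])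
      fix x assume "x \<in> Iopen"
      then have "\<bar>h x\<bar> \<le> B" using B by auto
      then have "\<bar>h x\<bar>^2 \<le> B^2" by (rule power_mono) simp
      then have "(h x)^2 \<le> B^2" by simp
      then show "\<bar>(h x * f x)\<^sup>2\<bar> \<le> B\<^sup>2 * (f x)\<^sup>2"
        by (simp add: power_mult_distrib mult_right_mono)
    qed
  qed
qed

lemma L2I_const: "L2I (\<lambda>x. c)"
  unfolding L2I_def by (auto intro: mI_const intI_const)

lemma L2I_cont: "continuous_on {-1..1} h \<Longrightarrow> L2I h"
  using L2I_mult_cont[OF L2I_const[of 1]] by simp

lemma intI_mult_cont: "intI f \<Longrightarrow> continuous_on {-1..1} h \<Longrightarrow> intI (\<lambda>x. h x * f x)"
proof -
  assume a: "intI f" "continuous_on {-1..1} h"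
  obtain B where B: "B \<ge> 0" "\<And>x. x \<in> {-1..1} \<Longrightarrow> \<bar>h x\<bar> \<le> B" using cont_bound[OF a(2)] by blast
  show ?thesis
  proof (rule intI_bound[where g="\<lambda>x. B * \<bar>f x\<bar>"])
    show "intI (\<lambda>x. B * \<bar>f x\<bar>)" using intI_cmult[OF set_integrable_abs[OF a(1)]] .
    show "mI (\<lambda>x. h x * f x)" by (rule mI_mult[OF mI_cont[OF a(2)] intI_mI[OF a(1)]])
    fix x assume "x \<in> Iopen"
    then have "\<bar>h x\<bar> \<le> B" using B by auto
    then show "\<bar>h x * f x\<bar> \<le> B * \<bar>f x\<bar>"
      using B(1) by (simp add: abs_mult mult_right_mono)
  qed
qed


definition Pr :: "(real \<Rightarrow> real) \<Rightarrow> real \<Rightarrow> real" where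
  "Pr g x = integral {-1..x} g"

lemma intI_HK: "intI g \<Longrightarrow> g integrable_on {-1..1}"
  using set_borel_integral_eq_integral(1)[of Iopen g] integrable_on_open_interval_real by blast

lemma intI_HK_sub: "intI g \<Longrightarrow> -1 \<le> a \<Longrightarrow> b \<le> 1 \<Longrightarrow> g integrable_on {a..b}"
  using intI_HK integrable_on_subinterval by fastforce

lemma set_int_sub: "intI g \<Longrightarrow> -1 \<le> a \<Longrightarrow> b \<le> 1 \<Longrightarrow> set_integrable lborel {a<..<b} g"
  by (rule set_integrable_subset) auto

lemma LINT_HK: "intI g \<Longrightarrow> -1 \<le> a \<Longrightarrow> b \<le> 1 \<Longrightarrow>
    (LINT x:{a<..<b}|lborel. g x) = integral {a..b} g"
  using set_borel_integral_eq_integral(2)[OF set_int_sub[of g a b]] integral_open_interval_real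
  by metis

lemma LINT_I_Pr: "intI g \<Longrightarrow> (LINT x:Iopen|lborel. g x) = Pr g 1"
  using LINT_HK[of g "-1" 1] by (simp add: Pr_def)

lemma Pr_cont: "intI g \<Longrightarrow> continuous_on {-1..1} (Pr g)"
  unfolding Pr_def[abs_def] by (rule indefinite_integral_continuous_1[OF intI_HK])

lemma Pr_split: "intI g \<Longrightarrow> -1 \<le> a \<Longrightarrow> a \<le> c \<Longrightarrow> c \<le> 1 \<Longrightarrow> Pr g c = Pr g a + integral {a..c} g"
  unfolding Pr_def using Henstock_Kurzweil_Integration.integral_combine[where a="-1" and c=a and b=c and f=g] intI_HK_sub[of g "-1" c] by simp

lemma Pr_m1 [simp]: "Pr g (-1) = 0"
  by (simp add: Pr_def)

lemma Pr_DERIV: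
  assumes "continuous_on {-1..1} F" "x \<in> Iopen"
  shows "(Pr F has_real_derivative F x) (at x)"
proof -
  have "(Pr F has_real_derivative F x) (at x within {-1..1})"
    unfolding Pr_def[abs_def] using integral_has_real_derivative[OF assms(1)] assms(2) by auto
  moreover have "at x within {-1..1} = at x"
    using assms(2) by (intro at_within_interior) auto
  ultimately show ?thesis by simp
qed

lemma cont_intI: "continuous_on {-1..1} h \<Longrightarrow> intI h"
  using L2I_cont L2I_intI by blast

lemma FTC_rep:
  assumes U: "continuous_on {-1..1} U"
    and d: "\<And>x. x \<in> Iopen \<Longrightarrow> (U has_real_derivative U' x) (at x)"
    and U': "continuous_on {-1..1} U'"
    and x: "x \<in> {-1..1}"
  shows "U x = U (-1) + Pr U' x"
proof -
  have "(U' has_integral (U x - U (-1))) {-1..x}"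
  proof (rule fundamental_theorem_of_calculus_interior)
    show "-1 \<le> x" using x by auto
    show "continuous_on {-1..x} U" by (rule continuous_on_subset[OF U]) (use x in auto)
    fix y assume "y \<in> {-1<..<x}"
    then have "y \<in> Iopen" using x by auto
    then show "(U has_vector_derivative U' y) (at y)"
      using d has_real_derivative_iff_has_vector_derivative by blast
  qed
  then show ?thesis unfolding Pr_def by (simp add: integral_unique)
qed


section \<open>Fubini\<close>

lemma meas_less_ind: "(\<lambda>p::real\<times>real. indicator {..<fst p} (snd p) :: real) \<in> borel_measurable (lborel \<Otimes>\<^sub>M lborel)"
proof -
  have e: "(\<lambda>p::real\<times>real. indicator {..<fst p} (snd p) :: real) = (\<lambda>p. if snd p < fst p then 1 else 0)"
    by (auto simp: indicator_def)
  show ?thesis unfolding e by measurable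
qed

lemma fub_raw:
  fixes A B :: "real \<Rightarrow> real"
  assumes A: "integrable lborel A" and B: "integrable lborel B"
  shows "(\<integral>x. A x * (\<integral>y. B y * indicator {..<x} y \<partial>lborel) \<partial>lborel)
       = (\<integral>y. B y * (\<integral>x. A x * indicator {y<..} x \<partial>lborel) \<partial>lborel)"
proof -
  define F where "F x y = A x * (B y * indicator {..<x} y)" for x y :: real
  have mA: "A \<in> borel_measurable lborel" using A by (rule borel_measurable_integrable)
  have mB: "B \<in> borel_measurable lborel" using B by (rule borel_measurable_integrable)
  have mF: "case_prod F \<in> borel_measurable (lborel \<Otimes>\<^sub>M lborel)"
  proof -
    have "(\<lambda>p::real\<times>real. A (fst p) * (B (snd p) * indicator {..<fst p} (snd p))) \<in> borel_measurable (lborel \<Otimes>\<^sub>M lborel)"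
      using mA mB meas_less_ind by measurable
    moreover have "case_prod F = (\<lambda>p::real\<times>real. A (fst p) * (B (snd p) * indicator {..<fst p} (snd p)))"
      by (auto simp: F_def)
    ultimately show ?thesis by simp
  qed
  have intF: "integrable (lborel \<Otimes>\<^sub>M lborel) (case_prod F)"
  proof (rule lborel_pair.Fubini_integrable[OF mF])
    have e1: "(\<lambda>x. \<integral>y. norm (case_prod F (x, y)) \<partial>lborel) = (\<lambda>x. \<bar>A x\<bar> * (\<integral>y. \<bar>B y\<bar> * indicator {..<x} y \<partial>lborel))"
      by (auto simp: F_def abs_mult)
    have "integrable lborel (\<lambda>x. \<bar>A x\<bar> * (\<integral>y. \<bar>B y\<bar> * indicator {..<x} y \<partial>lborel))"
    proof (rule Bochner_Integration.integrable_bound[where f="\<lambda>x. \<bar>A x\<bar> * (\<integral>y. \<bar>B y\<bar> \<partial>lborel)"])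
      show "integrable lborel (\<lambda>x. \<bar>A x\<bar> * (\<integral>y. \<bar>B y\<bar> \<partial>lborel))"
        using A by (intro integrable_mult_left integrable_abs)
      have mI2: "(\<lambda>x. \<integral>y. \<bar>B y\<bar> * indicator {..<x} y \<partial>lborel) \<in> borel_measurable lborel"
      proof (rule lborel.borel_measurable_lebesgue_integral)
        have "(\<lambda>p::real\<times>real. \<bar>B (snd p)\<bar> * indicator {..<fst p} (snd p)) \<in> borel_measurable (lborel \<Otimes>\<^sub>M lborel)"
          using mB meas_less_ind by measurable
        then show "(\<lambda>(x, y). \<bar>B y\<bar> * indicator {..<x} y) \<in> borel_measurable (lborel \<Otimes>\<^sub>M lborel)"
          by (simp add: case_prod_beta')
      qed
      show "(\<lambda>x. \<bar>A x\<bar> * (\<integral>y. \<bar>B y\<bar> * indicator {..<x} y \<partial>lborel)) \<in> borel_measurable lborel"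
        using mA mI2 by measurable
      show "AE x in lborel. norm (\<bar>A x\<bar> * (\<integral>y. \<bar>B y\<bar> * indicator {..<x} y \<partial>lborel))
            \<le> norm (\<bar>A x\<bar> * (\<integral>y. \<bar>B y\<bar> \<partial>lborel))"
      proof (rule AE_I2)
        fix x
        have i1: "integrable lborel (\<lambda>y. \<bar>B y\<bar> * indicator {..<x} y)"
          using B by (intro integrable_real_mult_indicator integrable_abs) auto
        have "(\<integral>y. \<bar>B y\<bar> * indicator {..<x} y \<partial>lborel) \<le> (\<integral>y. \<bar>B y\<bar> \<partial>lborel)"
          using i1 B by (intro integral_mono) (auto simp: indicator_def)
        moreover have "0 \<le> (\<integral>y. \<bar>B y\<bar> * indicator {..<x} y \<partial>lborel)"
          by (intro integral_nonneg_AE) auto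
        ultimately show "norm (\<bar>A x\<bar> * (\<integral>y. \<bar>B y\<bar> * indicator {..<x} y \<partial>lborel))
            \<le> norm (\<bar>A x\<bar> * (\<integral>y. \<bar>B y\<bar> \<partial>lborel))"
          by (simp add: abs_mult mult_left_mono)
      qed
    qed
    then show "integrable lborel (\<lambda>x. \<integral>y. norm (case_prod F (x, y)) \<partial>lborel)"
      unfolding e1 .
    show "AE x in lborel. integrable lborel (\<lambda>y. case_prod F (x, y))"
    proof (rule AE_I2)
      fix x
      have "integrable lborel (\<lambda>y. A x * (B y * indicator {..<x} y))"
        using B by (intro integrable_mult_right integrable_real_mult_indicator) auto
      then show "integrable lborel (\<lambda>y. case_prod F (x, y))" by (simp add: F_def)
    qed
  qed
  have fub: "(\<integral>y. (\<integral>x. F x y \<partial>lborel) \<partial>lborel) = (\<integral>x. (\<integral>y. F x y \<partial>lborel) \<partial>lborel)"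
    by (rule lborel_pair.Fubini_integral[OF intF])
  have l: "(\<lambda>x. A x * (\<integral>y. B y * indicator {..<x} y \<partial>lborel)) = (\<lambda>x. \<integral>y. F x y \<partial>lborel)"
    by (simp add: F_def)
  have r: "(\<lambda>y. B y * (\<integral>x. A x * indicator {y<..} x \<partial>lborel)) = (\<lambda>y. \<integral>x. F x y \<partial>lborel)"
  proof
    fix y
    have "(\<lambda>x. F x y) = (\<lambda>x. B y * (A x * indicator {y<..} x))"
      by (auto simp: F_def indicator_def)
    then show "B y * (\<integral>x. A x * indicator {y<..} x \<partial>lborel) = (\<integral>x. F x y \<partial>lborel)" by simp
  qed
  show ?thesis unfolding l r fub ..
qed


lemma intI_raw: "intI g \<Longrightarrow> integrable lborel (\<lambda>x. indicator Iopen x * g x)"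
  unfolding set_integrable_def by simp

lemma fub_I:
  assumes g: "intI g" and k: "intI k"
  shows "(LINT x:Iopen|lborel. k x * Pr g x) = (LINT s:Iopen|lborel. g s * (Pr k 1 - Pr k s))"
proof -
  let ?A = "\<lambda>x. indicator Iopen x * k x"
  let ?B = "\<lambda>y. indicator Iopen y * g y"
  have F: "(\<integral>x. ?A x * (\<integral>y. ?B y * indicator {..<x} y \<partial>lborel) \<partial>lborel)
       = (\<integral>y. ?B y * (\<integral>x. ?A x * indicator {y<..} x \<partial>lborel) \<partial>lborel)"
    by (rule fub_raw[OF intI_raw[OF k] intI_raw[OF g]])
  have l: "(\<lambda>x. ?A x * (\<integral>y. ?B y * indicator {..<x} y \<partial>lborel)) = (\<lambda>x. indicator Iopen x *\<^sub>R (k x * Pr g x))"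
  proof
    fix x
    show "?A x * (\<integral>y. ?B y * indicator {..<x} y \<partial>lborel) = indicator Iopen x *\<^sub>R (k x * Pr g x)"
    proof (cases "x \<in> Iopen")
      case True
      have "(\<lambda>y. ?B y * indicator {..<x} y) = (\<lambda>y. indicator {-1<..<x} y *\<^sub>R g y)"
        using True by (auto simp: indicator_def)
      then have "(\<integral>y. ?B y * indicator {..<x} y \<partial>lborel) = (LINT y:{-1<..<x}|lborel. g y)"
        by (simp add: set_lebesgue_integral_def)
      also have "\<dots> = Pr g x" using LINT_HK[OF g, of "-1" x] True by (simp add: Pr_def)
      finally show ?thesis using True by simp
    qed simp
  qed
  have r: "(\<lambda>y. ?B y * (\<integral>x. ?A x * indicator {y<..} x \<partial>lborel)) = (\<lambda>s. indicator Iopen s *\<^sub>R (g s * (Pr k 1 - Pr k s)))"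
  proof
    fix y
    show "?B y * (\<integral>x. ?A x * indicator {y<..} x \<partial>lborel) = indicator Iopen y *\<^sub>R (g y * (Pr k 1 - Pr k y))"
    proof (cases "y \<in> Iopen")
      case True
      have "(\<lambda>x. ?A x * indicator {y<..} x) = (\<lambda>x. indicator {y<..<1} x *\<^sub>R k x)"
        using True by (auto simp: indicator_def)
      then have "(\<integral>x. ?A x * indicator {y<..} x \<partial>lborel) = (LINT x:{y<..<1}|lborel. k x)"
        by (simp add: set_lebesgue_integral_def)
      also have "\<dots> = integral {y..1} k" using LINT_HK[OF k, of y 1] True by simp
      also have "\<dots> = Pr k 1 - Pr k y" using Pr_split[OF k, of y 1] True by simp
      finally show ?thesis using True by simp
    qed simp
  qed
  show ?thesis using F unfolding l r set_lebesgue_integral_def .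
qed

lemma ibp_Pr:
  assumes g: "intI g" and dpsi: "intI dpsi"
    and rep: "\<And>x. x \<in> Iopen \<Longrightarrow> pp x = Pr dpsi x" and one: "Pr dpsi 1 = 0"
  shows "(LINT x:Iopen|lborel. (c + Pr g x) * dpsi x) = - (LINT x:Iopen|lborel. g x * pp x)"
proof -
  have i1: "intI (\<lambda>x. c * dpsi x)" using dpsi by (rule intI_cmult)
  have i2: "intI (\<lambda>x. Pr g x * dpsi x)" using intI_mult_cont[OF dpsi Pr_cont[OF g]] .
  have "(LINT x:Iopen|lborel. (c + Pr g x) * dpsi x) = (LINT x:Iopen|lborel. c * dpsi x + Pr g x * dpsi x)"
    by (simp add: distrib_right)
  also have "\<dots> = c * (LINT x:Iopen|lborel. dpsi x) + (LINT x:Iopen|lborel. dpsi x * Pr g x)"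
    using set_integral_add(2)[OF i1 i2] by (simp add: mult.commute)
  also have "(LINT x:Iopen|lborel. dpsi x) = 0" using LINT_I_Pr[OF dpsi] one by simp
  also have "(LINT x:Iopen|lborel. dpsi x * Pr g x) = (LINT s:Iopen|lborel. g s * (Pr dpsi 1 - Pr dpsi s))"
    by (rule fub_I[OF g dpsi])
  also have "\<dots> = (LINT s:Iopen|lborel. - (g s * pp s))"
    by (rule intI_integral_cong) (simp add: one rep)
  also have "\<dots> = - (LINT s:Iopen|lborel. g s * pp s)"
    unfolding set_lebesgue_integral_def by simp
  finally show ?thesis by simp
qed



lemma test_fun_iff: "test_fun \<phi> \<longleftrightarrow> smooth \<phi> \<and> (\<exists>a c. -1 < a \<and> c < 1 \<and> (\<forall>x. x \<notin> {a..c} \<longrightarrow> \<phi> x = 0))"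
  unfolding test_fun_def smooth_def by simp

lemma test_smooth: "test_fun \<phi> \<Longrightarrow> smooth \<phi>"
  by (simp add: test_fun_iff)

lemma deriv_zero_outside:
  assumes "smooth \<phi>" "\<And>x. x \<notin> {a..c} \<Longrightarrow> \<phi> x = 0" "x \<notin> {a..c}"
  shows "deriv \<phi> x = 0"
proof -
  have "((\<lambda>_. 0) has_real_derivative 0) (at x)" by simp
  then have "(\<phi> has_real_derivative 0) (at x)"
    by (rule has_field_derivative_transform_within_open[where S="- {a..c}"]) (use assms in auto)
  then show ?thesis by (rule DERIV_imp_deriv)
qed

lemma test_deriv: "test_fun \<phi> \<Longrightarrow> test_fun (deriv \<phi>)"
  unfolding test_fun_iff using smooth_deriv deriv_zero_outside by blast

lemma test_rep: "test_fun \<phi> \<Longrightarrow> x \<in> {-1..1} \<Longrightarrow> \<phi> x = Pr (deriv \<phi>) x"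
proof -
  assume t: "test_fun \<phi>" and x: "x \<in> {-1..1}"
  then obtain a c where s: "smooth \<phi>" "-1 < a" "c < 1" "\<And>x. x \<notin> {a..c} \<Longrightarrow> \<phi> x = 0"
    by (auto simp: test_fun_iff)
  have "\<phi> x = \<phi> (-1) + Pr (deriv \<phi>) x"
    using FTC_rep[OF smooth_cont[OF s(1)] smooth_DERIV[OF s(1)] smooth_cont[OF smooth_deriv[OF s(1)]] x] .
  moreover have "\<phi> (-1) = 0" using s by auto
  ultimately show ?thesis by simp
qed

lemma test_one: "test_fun \<phi> \<Longrightarrow> Pr (deriv \<phi>) 1 = 0"
proof -
  assume t: "test_fun \<phi>"
  then obtain a c where s: "smooth \<phi>" "-1 < a" "c < 1" "\<And>x. x \<notin> {a..c} \<Longrightarrow> \<phi> x = 0"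
    by (auto simp: test_fun_iff)
  have "\<phi> 1 = 0" using s by auto
  with test_rep[OF t, of 1] show ?thesis by simp
qed

lemma test_cont: "test_fun \<phi> \<Longrightarrow> continuous_on S \<phi>"
  using test_smooth smooth_cont by blast

lemma test_L2I: "test_fun \<phi> \<Longrightarrow> L2I \<phi>"
  using test_cont L2I_cont by blast

lemma wd_Pr:
  assumes g: "L2I g" and rep: "\<And>x. x \<in> Iopen \<Longrightarrow> U x = c + Pr g x"
  shows "L2_weak_deriv U g"
  unfolding L2_weak_deriv_def
proof (intro conjI allI impI)
  have gi: "intI g" using g by (rule L2I_intI)
  have "continuous_on {-1..1} (\<lambda>x. c + Pr g x)"
    using Pr_cont[OF gi] by (intro continuous_intros)
  then have "L2I (\<lambda>x. c + Pr g x)" by (rule L2I_cont)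
  then show "L2I U" by (rule L2I_cong) (simp add: rep)
  show "L2I g" by (rule g)
  fix \<phi> assume t: "test_fun \<phi>"
  have dphi: "intI (deriv \<phi>)" using test_deriv[OF t] test_L2I L2I_intI by blast
  have s1: "(LINT x:Iopen|lborel. U x * deriv \<phi> x) = (LINT x:Iopen|lborel. (c + Pr g x) * deriv \<phi> x)"
    by (rule intI_integral_cong) (simp add: rep)
  have rep': "\<And>x. x \<in> Iopen \<Longrightarrow> \<phi> x = Pr (deriv \<phi>) x" using test_rep[OF t] by auto
  have s2: "(LINT x:Iopen|lborel. (c + Pr g x) * deriv \<phi> x) = - (LINT x:Iopen|lborel. g x * \<phi> x)"
    using ibp_Pr[OF gi dphi rep' test_one[OF t]] .
  show "(LINT x:Iopen|lborel. U x * deriv \<phi> x) = - (LINT x:Iopen|lborel. g x * \<phi> x)"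
    using s1 s2 by simp
qed

lemma test_wd: "test_fun \<phi> \<Longrightarrow> L2_weak_deriv \<phi> (deriv \<phi>)"
  using wd_Pr[of "deriv \<phi>" \<phi> 0] test_rep test_deriv test_L2I by force

lemma test_H10: "test_fun \<phi> \<Longrightarrow> H10 \<phi>"
proof -
  assume t: "test_fun \<phi>"
  then obtain a c where s: "smooth \<phi>" "-1 < a" "c < 1" "\<And>x. x \<notin> {a..c} \<Longrightarrow> \<phi> x = 0"
    by (auto simp: test_fun_iff)
  have "H1 \<phi>" unfolding H1_def using test_wd[OF t] by blast
  moreover have "continuous_on {-1..1} \<phi>" using test_cont[OF t] .
  moreover have "\<phi> (-1) = 0" "\<phi> 1 = 0" using s by auto
  ultimately show ?thesis unfolding H10_def by blast
qed

lemma wd_L2: "L2_weak_deriv u g \<Longrightarrow> L2I u \<and> L2I g"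
  by (simp add: L2_weak_deriv_def)

lemma wd_eq: "L2_weak_deriv u g \<Longrightarrow> test_fun \<phi> \<Longrightarrow>
   (LINT x:Iopen|lborel. u x * deriv \<phi> x) = - (LINT x:Iopen|lborel. g x * \<phi> x)"
  by (simp add: L2_weak_deriv_def)

lemma int_L2_test: "L2I u \<Longrightarrow> test_fun \<phi> \<Longrightarrow> intI (\<lambda>x. u x * \<phi> x)"
  using intI_mult_cont[OF L2I_intI, of u \<phi>] test_cont by (simp add: mult.commute)

lemma wd_add:
  assumes "L2_weak_deriv u g" "L2_weak_deriv v h"
  shows "L2_weak_deriv (\<lambda>x. u x + v x) (\<lambda>x. g x + h x)"
  unfolding L2_weak_deriv_def
proof (intro conjI allI impI)
  show "L2I (\<lambda>x. u x + v x)" using assms by (simp add: L2_weak_deriv_def L2I_add)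
  show "L2I (\<lambda>x. g x + h x)" using assms by (simp add: L2_weak_deriv_def L2I_add)
  fix \<phi> assume t: "test_fun \<phi>"
  have td: "test_fun (deriv \<phi>)" using t by (rule test_deriv)
  have L: "L2I u" "L2I v" "L2I g" "L2I h" using assms by (auto simp: L2_weak_deriv_def)
  have "(LINT x:Iopen|lborel. (u x + v x) * deriv \<phi> x) = (LINT x:Iopen|lborel. u x * deriv \<phi> x + v x * deriv \<phi> x)"
    by (simp add: distrib_right)
  also have "\<dots> = (LINT x:Iopen|lborel. u x * deriv \<phi> x) + (LINT x:Iopen|lborel. v x * deriv \<phi> x)"
    by (rule set_integral_add(2)[OF int_L2_test[OF L(1) td] int_L2_test[OF L(2) td]])
  also have "\<dots> = - (LINT x:Iopen|lborel. g x * \<phi> x) - (LINT x:Iopen|lborel. h x * \<phi> x)"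
    using wd_eq[OF assms(1) t] wd_eq[OF assms(2) t] by simp
  also have "\<dots> = - ((LINT x:Iopen|lborel. g x * \<phi> x + h x * \<phi> x))"
    using set_integral_add(2)[OF int_L2_test[OF L(3) t] int_L2_test[OF L(4) t]] by simp
  finally show "(LINT x:Iopen|lborel. (u x + v x) * deriv \<phi> x) = - (LINT x:Iopen|lborel. (g x + h x) * \<phi> x)"
    by (simp add: distrib_right)
qed

lemma wd_cmult:
  assumes "L2_weak_deriv u g"
  shows "L2_weak_deriv (\<lambda>x. c * u x) (\<lambda>x. c * g x)"
  unfolding L2_weak_deriv_def
proof (intro conjI allI impI)
  show "L2I (\<lambda>x. c * u x)" using assms by (simp add: L2_weak_deriv_def L2I_cmult)
  show "L2I (\<lambda>x. c * g x)" using assms by (simp add: L2_weak_deriv_def L2I_cmult)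
  fix \<phi> assume t: "test_fun \<phi>"
  have "(LINT x:Iopen|lborel. c * u x * deriv \<phi> x) = c * (LINT x:Iopen|lborel. u x * deriv \<phi> x)"
    by (simp add: mult.assoc)
  also have "\<dots> = - (c * (LINT x:Iopen|lborel. g x * \<phi> x))" using wd_eq[OF assms t] by simp
  also have "c * (LINT x:Iopen|lborel. g x * \<phi> x) = (LINT x:Iopen|lborel. c * g x * \<phi> x)"
    by (simp add: mult.assoc)
  finally show "(LINT x:Iopen|lborel. c * u x * deriv \<phi> x) = - (LINT x:Iopen|lborel. c * g x * \<phi> x)" .
qed

lemma wd_diff:
  assumes "L2_weak_deriv u g" "L2_weak_deriv v h"
  shows "L2_weak_deriv (\<lambda>x. u x - v x) (\<lambda>x. g x - h x)"
  using wd_add[OF assms(1) wd_cmult[OF assms(2), of "-1"]] by simp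

lemma wd_cong:
  assumes "L2_weak_deriv u g" "\<And>x. x \<in> Iopen \<Longrightarrow> u x = u' x" "\<And>x. x \<in> Iopen \<Longrightarrow> g x = g' x"
  shows "L2_weak_deriv u' g'"
  unfolding L2_weak_deriv_def
proof (intro conjI allI impI)
  show "L2I u'" using assms L2I_cong by (auto simp: L2_weak_deriv_def)
  show "L2I g'" using assms L2I_cong by (auto simp: L2_weak_deriv_def)
  fix \<phi> assume t: "test_fun \<phi>"
  have "(LINT x:Iopen|lborel. u' x * deriv \<phi> x) = (LINT x:Iopen|lborel. u x * deriv \<phi> x)"
    by (rule intI_integral_cong) (simp add: assms)
  also have "\<dots> = - (LINT x:Iopen|lborel. g x * \<phi> x)" using wd_eq[OF assms(1) t] .
  also have "(LINT x:Iopen|lborel. g x * \<phi> x) = (LINT x:Iopen|lborel. g' x * \<phi> x)"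
    by (rule intI_integral_cong) (simp add: assms)
  finally show "(LINT x:Iopen|lborel. u' x * deriv \<phi> x) = - (LINT x:Iopen|lborel. g' x * \<phi> x)" .
qed


section \<open>du Bois-Reymond\<close>

lemma integral_zero_on: "(\<And>x. x \<in> S \<Longrightarrow> f x = (0::real)) \<Longrightarrow> integral S f = 0"
proof -
  assume "\<And>x. x \<in> S \<Longrightarrow> f x = 0"
  then have "integral S f = integral S (\<lambda>x. 0::real)" by (rule integral_cong)
  then show ?thesis by simp
qed

lemma antideriv_test:
  assumes sm: "smooth ch" and a: "-1 < a" and c: "c < 1"
    and z: "\<And>x. x \<notin> {a..c} \<Longrightarrow> ch x = 0" and one: "Pr ch 1 = 0"
  shows "test_fun (Pr ch) \<and> deriv (Pr ch) = ch"
proof -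
  have ci: "intI ch" using cont_intI smooth_cont[OF sm] by blast
  have zP: "Pr ch y = 0" if y: "y \<notin> {a..c}" for y
  proof (cases "y < a")
    case True
    show ?thesis unfolding Pr_def by (rule integral_zero_on) (use True z in auto)
  next
    case False
    with y have yc: "c < y" by auto
    show ?thesis
    proof (cases "y \<le> 1")
      case True
      have "y \<in> {-1..1}" using True yc a c False by auto
      have "integral {y..1} ch = 0" by (rule integral_zero_on) (use z yc in auto)
      then show ?thesis using Pr_split[OF ci, of y 1] True yc a False one by auto
    next
      case False
      have int: "ch integrable_on {-1..y}"
        by (rule integrable_continuous_interval[OF smooth_cont[OF sm]])
      have "integral {-1..1} ch + integral {1..y} ch = integral {-1..y} ch"
        using Henstock_Kurzweil_Integration.integral_combine[where a="-1" and c=1 and b=y and f=ch] False int by auto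
      moreover have "integral {1..y} ch = 0" by (rule integral_zero_on) (use z c in auto)
      ultimately show ?thesis using one by (simp add: Pr_def)
    qed
  qed
  have D: "(Pr ch has_real_derivative ch x) (at x)" for x
  proof (cases "x \<in> Iopen")
    case True
    then show ?thesis using Pr_DERIV[OF smooth_cont[OF sm]] by blast
  next
    case False
    then have x: "x \<notin> {a..c}" using a c by auto
    have "((\<lambda>_. 0) has_real_derivative 0) (at x)" by simp
    then have "(Pr ch has_real_derivative 0) (at x)"
      by (rule has_field_derivative_transform_within_open[where S="- {a..c}"]) (use x zP in auto)
    then show ?thesis using z[OF x] by simp
  qed
  have "smooth (Pr ch)" by (rule smooth_intro[OF D sm])
  moreover have "deriv (Pr ch) = ch" using D DERIV_imp_deriv by blast
  ultimately show ?thesis unfolding test_fun_iff using zP a c by blast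
qed

definition chi :: "real \<Rightarrow> real \<Rightarrow> real \<Rightarrow> real \<Rightarrow> real" where
  "chi n a c x = Sstep (n * (x - a)) * Sstep (n * (c - x))"

lemma smooth_chi: "smooth (chi n a c)"
proof -
  have "smooth (\<lambda>x. Sstep (n * x + (- n * a)) * Sstep ((- n) * x + n * c))"
    by (rule smooth_mult[OF smooth_aff[OF smooth_Sstep] smooth_aff[OF smooth_Sstep]])
  moreover have "(\<lambda>x. Sstep (n * x + (- n * a)) * Sstep ((- n) * x + n * c)) = chi n a c"
    by (auto simp: chi_def algebra_simps)
  ultimately show ?thesis by simp
qed

lemma chi_zero: "0 \<le> n \<Longrightarrow> x \<notin> {a<..<c} \<Longrightarrow> chi n a c x = 0"
proof -
  assume n: "0 \<le> n" and x: "x \<notin> {a<..<c}"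
  show ?thesis
  proof (cases "x \<le> a")
    case True
    then have "n * (x - a) \<le> 0" using n by (simp add: mult_nonneg_nonpos)
    then show ?thesis by (simp add: chi_def Sstep_0)
  next
    case False
    then have "c \<le> x" using x by auto
    then have "n * (c - x) \<le> 0" using n by (simp add: mult_nonneg_nonpos)
    then show ?thesis by (simp add: chi_def Sstep_0)
  qed
qed

lemma chi_test: "0 \<le> n \<Longrightarrow> -1 < a \<Longrightarrow> c < 1 \<Longrightarrow> test_fun (chi n a c)"
proof -
  assume n: "0 \<le> n" and a: "-1 < a" and c: "c < 1"
  have "\<forall>x. x \<notin> {a..c} \<longrightarrow> chi n a c x = 0" using chi_zero[OF n] by auto
  then show ?thesis unfolding test_fun_iff using smooth_chi a c by blast
qed

lemma chi_bounds: "0 \<le> chi n a c x" "chi n a c x \<le> 1"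
proof -
  have "0 \<le> Sstep (n * (x - a))" "0 \<le> Sstep (n * (c - x))" "Sstep (n * (x - a)) \<le> 1" "Sstep (n * (c - x)) \<le> 1"
    using Sstep_nonneg Sstep_le1 by auto
  then show "0 \<le> chi n a c x" "chi n a c x \<le> 1" unfolding chi_def
    using mult_le_one by auto
qed

lemma chi_lim: "(\<lambda>m. chi (real m) a c x) \<longlonglongrightarrow> indicator {a<..<c} x"
proof (cases "x \<in> {a<..<c}")
  case True
  obtain N :: nat where N: "max (1 / (x - a)) (1 / (c - x)) \<le> real N" using real_arch_simple by blast
  have "eventually (\<lambda>m. chi (real m) a c x = 1) sequentially"
    unfolding eventually_sequentially
  proof (intro exI allI impI)
    fix m assume "N \<le> m"
    then have m: "max (1 / (x - a)) (1 / (c - x)) \<le> real m" using N by linarith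
    have xa: "0 < x - a" "0 < c - x" using True by auto
    have "1 \<le> real m * (x - a)" using m xa by (simp add: field_simps)
    moreover have "1 \<le> real m * (c - x)" using m xa by (simp add: field_simps)
    ultimately show "chi (real m) a c x = 1" by (simp add: chi_def Sstep_1)
  qed
  then show ?thesis using True by (simp add: tendsto_eventually)
next
  case False
  then show ?thesis by (simp add: chi_zero)
qed

lemma chi_meas: "chi n a c \<in> borel_measurable lborel"
  using borel_measurable_continuous_onI[OF smooth_cont[OF smooth_chi]] by simp

lemma chi_DCT:
  assumes h: "intI h" and a: "-1 < a" and c: "c < 1"
  shows "(\<lambda>m. LINT x:Iopen|lborel. h x * chi (real m) a c x) \<longlonglongrightarrow> (LINT x:{a<..<c}|lborel. h x)"
proof -
  let ?s = "\<lambda>m x. indicator Iopen x * h x * chi (real m) a c x"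
  let ?f = "\<lambda>x. indicator {a<..<c} x * h x"
  have hr: "integrable lborel (\<lambda>x. indicator Iopen x * h x)" using intI_raw[OF h] .
  have "(\<lambda>m. integral\<^sup>L lborel (?s m)) \<longlonglongrightarrow> integral\<^sup>L lborel ?f"
  proof (rule integral_dominated_convergence[where w="\<lambda>x. \<bar>indicator Iopen x * h x\<bar>"])
    have "set_integrable lborel {a<..<c} h" using set_int_sub[OF h, of a c] a c by simp
    then show "?f \<in> borel_measurable lborel" unfolding set_integrable_def
      by (simp add: borel_measurable_integrable)
    show "?s m \<in> borel_measurable lborel" for m
      using borel_measurable_integrable[OF hr] chi_meas[of "real m" a c] by measurable
    show "integrable lborel (\<lambda>x. \<bar>indicator Iopen x * h x\<bar>)" using hr by (rule integrable_abs)
    show "AE x in lborel. (\<lambda>m. ?s m x) \<longlonglongrightarrow> ?f x"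
    proof (rule AE_I2)
      fix x
      have "(\<lambda>m. indicator Iopen x * h x * chi (real m) a c x) \<longlonglongrightarrow> indicator Iopen x * h x * indicator {a<..<c} x"
        by (intro tendsto_mult tendsto_const chi_lim)
      moreover have "indicator Iopen x * h x * indicator {a<..<c} x = ?f x"
        using a c by (auto simp: indicator_def)
      ultimately show "(\<lambda>m. ?s m x) \<longlonglongrightarrow> ?f x" by simp
    qed
    show "AE x in lborel. norm (?s m x) \<le> \<bar>indicator Iopen x * h x\<bar>" for m
    proof (rule AE_I2)
      fix x
      have "\<bar>chi (real m) a c x\<bar> \<le> 1" using chi_bounds[of "real m" a c x] by simp
      then show "norm (?s m x) \<le> \<bar>indicator Iopen x * h x\<bar>"
        by (simp add: abs_mult mult_left_le)
    qed
  qed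
  then show ?thesis unfolding set_lebesgue_integral_def by (simp add: mult.assoc)
qed


lemma Pr_lin1:
  assumes "continuous_on {-1..1} f" "continuous_on {-1..1} g"
  shows "Pr (\<lambda>x. \<alpha> * f x - \<beta> * g x) 1 = \<alpha> * Pr f 1 - \<beta> * Pr g 1"
proof -
  have "f integrable_on {-1..1}" "g integrable_on {-1..1}"
    using assms integrable_continuous_interval by blast+
  then have "integral {-1..1} (\<lambda>x. \<alpha> * f x - \<beta> * g x) = integral {-1..1} (\<lambda>x. \<alpha> * f x) - integral {-1..1} (\<lambda>x. \<beta> * g x)"
    by (intro Henstock_Kurzweil_Integration.integral_diff integrable_on_mult_right)
  also have "\<dots> = \<alpha> * integral {-1..1} f - \<beta> * integral {-1..1} g"
    using integral_mult[of f "{-1..1}" \<alpha>] integral_mult[of g "{-1..1}" \<beta>] \<open>f integrable_on {-1..1}\<close> \<open>g integrable_on {-1..1}\<close> by simp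
  finally show ?thesis unfolding Pr_def .
qed

lemma pair_identity:
  assumes h: "intI h" and hyp: "\<And>\<phi>. test_fun \<phi> \<Longrightarrow> (LINT x:Iopen|lborel. h x * deriv \<phi> x) = 0"
    and t1: "test_fun f1" and t2: "test_fun f2"
  shows "Pr f2 1 * (LINT x:Iopen|lborel. h x * f1 x) = Pr f1 1 * (LINT x:Iopen|lborel. h x * f2 x)"
proof -
  obtain a1 c1 where s1: "smooth f1" "-1 < a1" "c1 < 1" "\<And>x. x \<notin> {a1..c1} \<Longrightarrow> f1 x = 0"
    using t1 by (auto simp: test_fun_iff)
  obtain a2 c2 where s2: "smooth f2" "-1 < a2" "c2 < 1" "\<And>x. x \<notin> {a2..c2} \<Longrightarrow> f2 x = 0"
    using t2 by (auto simp: test_fun_iff)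
  define ch where "ch = (\<lambda>x. Pr f2 1 * f1 x - Pr f1 1 * f2 x)"
  have sm: "smooth ch" unfolding ch_def by (intro smooth_diff smooth_cmult s1(1) s2(1))
  have z: "ch x = 0" if "x \<notin> {min a1 a2..max c1 c2}" for x
  proof -
    have "x \<notin> {a1..c1}" "x \<notin> {a2..c2}" using that by auto
    then show ?thesis using s1(4)[of x] s2(4)[of x] by (simp add: ch_def)
  qed
  have one: "Pr ch 1 = 0"
    unfolding ch_def by (subst Pr_lin1) (auto intro: smooth_cont s1 s2)
  have "test_fun (Pr ch) \<and> deriv (Pr ch) = ch"
    by (rule antideriv_test[OF sm _ _ z one]) (use s1 s2 in auto)
  then have "(LINT x:Iopen|lborel. h x * ch x) = 0" using hyp by metis
  moreover have i1: "intI (\<lambda>x. h x * f1 x)" using intI_mult_cont[OF h smooth_cont[OF s1(1)]] by (simp add: mult.commute)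
  moreover have i2: "intI (\<lambda>x. h x * f2 x)" using intI_mult_cont[OF h smooth_cont[OF s2(1)]] by (simp add: mult.commute)
  moreover have "(LINT x:Iopen|lborel. h x * ch x) = Pr f2 1 * (LINT x:Iopen|lborel. h x * f1 x) - Pr f1 1 * (LINT x:Iopen|lborel. h x * f2 x)"
  proof -
    have "(LINT x:Iopen|lborel. h x * ch x) = (LINT x:Iopen|lborel. Pr f2 1 * (h x * f1 x) - Pr f1 1 * (h x * f2 x))"
      by (simp add: ch_def algebra_simps)
    also have "\<dots> = (LINT x:Iopen|lborel. Pr f2 1 * (h x * f1 x)) - (LINT x:Iopen|lborel. Pr f1 1 * (h x * f2 x))"
      by (rule set_integral_diff(2)) (use i1 i2 in \<open>auto intro: intI_cmult\<close>)
    finally show ?thesis by simp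
  qed
  ultimately show ?thesis by simp
qed

lemma LINT_one: "-1 \<le> a \<Longrightarrow> a \<le> c \<Longrightarrow> c \<le> 1 \<Longrightarrow> (LINT x:{a<..<c}|lborel. (1::real)) = c - a"
  using LINT_HK[OF intI_const[of 1], of a c] by simp

lemma interval_prop:
  assumes h: "intI h" and hyp: "\<And>\<phi>. test_fun \<phi> \<Longrightarrow> (LINT x:Iopen|lborel. h x * deriv \<phi> x) = 0"
    and a: "-1 < a" and ac: "a < c" and c: "c < 1"
  shows "(LINT x:{a<..<c}|lborel. h x) = (c - a) * (LINT x:{-1/2<..<1/2}|lborel. h x)"
proof -
  let ?f1 = "\<lambda>m. chi (real m) a c" and ?f2 = "\<lambda>m. chi (real m) (-1/2) (1/2)"
  have id: "Pr (?f2 m) 1 * (LINT x:Iopen|lborel. h x * ?f1 m x) = Pr (?f1 m) 1 * (LINT x:Iopen|lborel. h x * ?f2 m x)" for m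
    by (rule pair_identity[OF h hyp chi_test chi_test]) (use a c in auto)
  have L1: "(\<lambda>m. LINT x:Iopen|lborel. h x * ?f1 m x) \<longlonglongrightarrow> (LINT x:{a<..<c}|lborel. h x)"
    by (rule chi_DCT[OF h a c])
  have L2: "(\<lambda>m. LINT x:Iopen|lborel. h x * ?f2 m x) \<longlonglongrightarrow> (LINT x:{-1/2<..<1/2}|lborel. h x)"
    by (rule chi_DCT[OF h]) auto
  have P1: "(\<lambda>m. Pr (?f1 m) 1) \<longlonglongrightarrow> c - a"
  proof -
    have "(\<lambda>m. LINT x:Iopen|lborel. 1 * ?f1 m x) \<longlonglongrightarrow> (LINT x:{a<..<c}|lborel. (1::real))"
      by (rule chi_DCT[OF intI_const a c])
    moreover have "Pr (?f1 m) 1 = (LINT x:Iopen|lborel. 1 * ?f1 m x)" for m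
      using LINT_I_Pr[OF cont_intI[OF smooth_cont[OF smooth_chi]]] by simp
    ultimately show ?thesis using LINT_one[of a c] a ac c by simp
  qed
  have P2: "(\<lambda>m. Pr (?f2 m) 1) \<longlonglongrightarrow> 1"
  proof -
    have "(\<lambda>m. LINT x:Iopen|lborel. 1 * ?f2 m x) \<longlonglongrightarrow> (LINT x:{-1/2<..<(1/2::real)}|lborel. (1::real))"
      by (rule chi_DCT[OF intI_const]) auto
    moreover have "Pr (?f2 m) 1 = (LINT x:Iopen|lborel. 1 * ?f2 m x)" for m
      using LINT_I_Pr[OF cont_intI[OF smooth_cont[OF smooth_chi]]] by simp
    ultimately show ?thesis using LINT_one[of "-1/2" "1/2"] by simp
  qed
  have A: "(\<lambda>m. Pr (?f2 m) 1 * (LINT x:Iopen|lborel. h x * ?f1 m x)) \<longlonglongrightarrow> 1 * (LINT x:{a<..<c}|lborel. h x)"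
    by (rule tendsto_mult[OF P2 L1])
  have B: "(\<lambda>m. Pr (?f2 m) 1 * (LINT x:Iopen|lborel. h x * ?f1 m x)) \<longlonglongrightarrow> (c - a) * (LINT x:{-1/2<..<1/2}|lborel. h x)"
    unfolding id by (rule tendsto_mult[OF P1 L2])
  show ?thesis using LIMSEQ_unique[OF A B] by simp
qed

lemma Pr_zero_from_intervals:
  assumes k: "intI k" and z: "\<And>a c. -1 < a \<Longrightarrow> a < c \<Longrightarrow> c < 1 \<Longrightarrow> (LINT x:{a<..<c}|lborel. k x) = 0"
  shows "\<And>x. x \<in> {-1..1} \<Longrightarrow> Pr k x = 0"
proof -
  have zI: "Pr k x = 0" if x: "x \<in> Iopen" for x
  proof -
    have "Pr k y = Pr k x" if y: "y \<in> {-1<..<x}" for y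
    proof -
      have "integral {y..x} k = 0" using LINT_HK[OF k, of y x] z[of y x] x y by auto
      then show ?thesis using Pr_split[OF k, of y x] x y by auto
    qed
    moreover have "continuous_on (closure {-1<..<x}) (Pr k)"
      using x by (auto intro: continuous_on_subset[OF Pr_cont[OF k]])
    moreover have "-1 \<in> closure {-1<..<x}" using x by auto
    ultimately have "Pr k (-1) = Pr k x"
      using continuous_constant_on_closure[of "{-1<..<x}" "Pr k" "Pr k x" "-1"] by blast
    then show ?thesis by simp
  qed
  fix x :: real assume x: "x \<in> {-1..1}"
  have "continuous_on (closure Iopen) (Pr k)" using Pr_cont[OF k] by simp
  then show "Pr k x = 0"
    using continuous_constant_on_closure[of Iopen "Pr k" 0 x] zI x by auto
qed


lemma emeasure_density_Ioi:
  fixes p :: "real \<Rightarrow> real"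
  assumes p: "integrable lborel p" and nn: "\<And>x. 0 \<le> p x"
  shows "emeasure (density lborel (\<lambda>x. ennreal (p x))) {t<..} = ennreal (\<integral>x. p x * indicator {t<..} x \<partial>lborel)"
proof -
  have mp: "p \<in> borel_measurable lborel" using p by (rule borel_measurable_integrable)
  have "emeasure (density lborel (\<lambda>x. ennreal (p x))) {t<..} = (\<integral>\<^sup>+ x. ennreal (p x) * indicator {t<..} x \<partial>lborel)"
    by (rule emeasure_density) (use mp in auto)
  also have "\<dots> = (\<integral>\<^sup>+ x. ennreal (p x * indicator {t<..} x) \<partial>lborel)"
    by (rule nn_integral_cong) (simp add: ennreal_mult'' ennreal_indicator)
  also have "\<dots> = ennreal (\<integral>x. p x * indicator {t<..} x \<partial>lborel)"
    by (rule nn_integral_eq_integral) (use p nn in \<open>auto intro: integrable_real_mult_indicator\<close>)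
  finally show ?thesis .
qed

lemma ae_zero:
  assumes k: "intI k" and P: "\<And>x. x \<in> {-1..1} \<Longrightarrow> Pr k x = 0"
  shows "AE x in lborel. x \<in> Iopen \<longrightarrow> k x = 0"
proof -
  define kI where "kI x = indicator Iopen x * k x" for x
  have kIi: "integrable lborel kI" unfolding kI_def[abs_def] by (rule intI_raw[OF k])
  define kp where "kp x = (kI x + \<bar>kI x\<bar>) / 2" for x
  define km where "km x = (\<bar>kI x\<bar> - kI x) / 2" for x
  have kpi: "integrable lborel kp" unfolding kp_def[abs_def] using kIi by auto
  have kmi: "integrable lborel km" unfolding km_def[abs_def] using kIi by auto
  have kpn: "0 \<le> kp x" for x unfolding kp_def by simp
  have kmn: "0 \<le> km x" for x unfolding km_def by simp
  have T: "(\<integral>x. kI x * indicator {t<..} x \<partial>lborel) = 0" for t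
  proof (cases "1 \<le> t")
    case True
    have "(\<lambda>x. kI x * indicator {t<..} x) = (\<lambda>x. 0)"
      using True by (auto simp: kI_def indicator_def)
    then show ?thesis by simp
  next
    case False
    show ?thesis
    proof (cases "t < -1")
      case True
      have "(\<lambda>x. kI x * indicator {t<..} x) = (\<lambda>x. indicator Iopen x *\<^sub>R k x)"
        using True by (auto simp: kI_def indicator_def)
      then have "(\<integral>x. kI x * indicator {t<..} x \<partial>lborel) = (LINT x:Iopen|lborel. k x)"
        by (simp add: set_lebesgue_integral_def)
      also have "\<dots> = 0" using LINT_I_Pr[OF k] P[of 1] by simp
      finally show ?thesis .
    next
      case False2: False
      have "(\<lambda>x. kI x * indicator {t<..} x) = (\<lambda>x. indicator {t<..<1} x *\<^sub>R k x)"
        using False False2 by (auto simp: kI_def indicator_def)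
      then have "(\<integral>x. kI x * indicator {t<..} x \<partial>lborel) = (LINT x:{t<..<1}|lborel. k x)"
        by (simp add: set_lebesgue_integral_def)
      also have "\<dots> = integral {t..1} k" using LINT_HK[OF k, of t 1] False2 by simp
      also have "\<dots> = Pr k 1 - Pr k t" using Pr_split[OF k, of t 1] False False2 by simp
      also have "\<dots> = 0" using P[of 1] P[of t] False False2 by simp
      finally show ?thesis .
    qed
  qed
  have E: "(\<integral>x. kp x * indicator {t<..} x \<partial>lborel) = (\<integral>x. km x * indicator {t<..} x \<partial>lborel)" for t
  proof -
    have i1: "integrable lborel (\<lambda>x. kp x * indicator {t<..} x)" using kpi by (rule integrable_real_mult_indicator[rotated]) simp
    have i2: "integrable lborel (\<lambda>x. km x * indicator {t<..} x)" using kmi by (rule integrable_real_mult_indicator[rotated]) simp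
    have "(\<lambda>x. kp x * indicator {t<..} x - km x * indicator {t<..} x) = (\<lambda>x. kI x * indicator {t<..} x)"
    proof
      fix x
      have "kp x - km x = kI x" by (simp add: kp_def km_def field_simps)
      then show "kp x * indicator {t<..} x - km x * indicator {t<..} x = kI x * indicator {t<..} x"
        by (metis left_diff_distrib)
    qed
    then have "(\<integral>x. kp x * indicator {t<..} x \<partial>lborel) - (\<integral>x. km x * indicator {t<..} x \<partial>lborel) = 0"
      using T[of t] Bochner_Integration.integral_diff[OF i1 i2] by simp
    then show ?thesis by simp
  qed
  let ?Mp = "density lborel (\<lambda>x. ennreal (kp x))"
  let ?Mm = "density lborel (\<lambda>x. ennreal (km x))"
  have "?Mp = ?Mm"
  proof (rule measure_eqI_lessThan)
    show "sets ?Mp = sets borel" "sets ?Mm = sets borel" by simp_all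
    show "emeasure ?Mp {x<..} < \<infinity>" for x
      using emeasure_density_Ioi[OF kpi kpn] by simp
    show "emeasure ?Mp {x<..} = emeasure ?Mm {x<..}" for x
      using emeasure_density_Ioi[OF kpi kpn] emeasure_density_Ioi[OF kmi kmn] E by simp
  qed
  moreover have "integral\<^sup>N lborel (\<lambda>x. ennreal (kp x)) \<noteq> \<infinity>"
    using nn_integral_eq_integral[OF kpi] kpn by simp
  ultimately have "AE x in lborel. ennreal (kp x) = ennreal (km x)"
    using finite_density_unique[of "\<lambda>x. ennreal (kp x)" lborel "\<lambda>x. ennreal (km x)"]
      borel_measurable_integrable[OF kpi] borel_measurable_integrable[OF kmi] by auto
  then show ?thesis
  proof (rule AE_mp[OF _ AE_I2], intro impI)
    fix x assume "ennreal (kp x) = ennreal (km x)" "x \<in> Iopen"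
    then have "kp x = km x" using kpn kmn by simp
    then have "kI x = 0" by (simp add: kp_def km_def)
    then show "k x = 0" using \<open>x \<in> Iopen\<close> by (simp add: kI_def)
  qed
qed


lemma dBR:
  assumes h: "intI h" and hyp: "\<And>\<phi>. test_fun \<phi> \<Longrightarrow> (LINT x:Iopen|lborel. h x * deriv \<phi> x) = 0"
  shows "\<exists>K. AE x in lborel. x \<in> Iopen \<longrightarrow> h x = K"
proof -
  define K where "K = (LINT x:{-1/2<..<1/2}|lborel. h x)"
  define k where "k x = h x - K" for x
  have ki: "intI k" unfolding k_def[abs_def] by (rule intI_diff[OF h intI_const])
  have z: "(LINT x:{a<..<c}|lborel. k x) = 0" if a: "-1 < a" and ac: "a < c" and c: "c < 1" for a c
  proof -
    have "(LINT x:{a<..<c}|lborel. k x) = (LINT x:{a<..<c}|lborel. h x) - (LINT x:{a<..<c}|lborel. K)"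
      unfolding k_def using set_int_sub[OF h, of a c] set_int_sub[OF intI_const[of K], of a c] a c
      by (intro set_integral_diff(2)) auto
    also have "(LINT x:{a<..<c}|lborel. K) = (c - a) * K"
      using LINT_HK[OF intI_const[of K], of a c] a ac c by simp
    also have "(LINT x:{a<..<c}|lborel. h x) = (c - a) * K"
      unfolding K_def by (rule interval_prop[OF h hyp a ac c])
    finally show ?thesis by simp
  qed
  have "AE x in lborel. x \<in> Iopen \<longrightarrow> k x = 0"
    by (rule ae_zero[OF ki Pr_zero_from_intervals[OF ki z]])
  then have "AE x in lborel. x \<in> Iopen \<longrightarrow> h x = K"
    by (rule AE_mp[OF _ AE_I2]) (simp add: k_def)
  then show ?thesis by blast
qed

lemma REP0:
  assumes w: "L2_weak_deriv U g"
  shows "\<exists>c. AE x in lborel. x \<in> Iopen \<longrightarrow> U x = c + Pr g x"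
proof -
  have LU: "L2I U" and Lg: "L2I g" using w by (auto simp: L2_weak_deriv_def)
  have gi: "intI g" using Lg by (rule L2I_intI)
  have LP: "L2I (Pr g)" by (rule L2I_cont[OF Pr_cont[OF gi]])
  define h where "h x = U x - Pr g x" for x
  have hi: "intI h" unfolding h_def[abs_def] by (rule intI_diff[OF L2I_intI[OF LU] L2I_intI[OF LP]])
  have hyp: "(LINT x:Iopen|lborel. h x * deriv \<phi> x) = 0" if t: "test_fun \<phi>" for \<phi>
  proof -
    have td: "test_fun (deriv \<phi>)" using t by (rule test_deriv)
    have dphi: "intI (deriv \<phi>)" using td test_L2I L2I_intI by blast
    have rep': "\<And>x. x \<in> Iopen \<Longrightarrow> \<phi> x = Pr (deriv \<phi>) x" using test_rep[OF t] by auto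
    have "(LINT x:Iopen|lborel. h x * deriv \<phi> x) = (LINT x:Iopen|lborel. U x * deriv \<phi> x) - (LINT x:Iopen|lborel. Pr g x * deriv \<phi> x)"
      unfolding h_def left_diff_distrib
      by (rule set_integral_diff(2)[OF int_L2_test[OF LU td] int_L2_test[OF LP td]])
    also have "(LINT x:Iopen|lborel. U x * deriv \<phi> x) = - (LINT x:Iopen|lborel. g x * \<phi> x)"
      by (rule wd_eq[OF w t])
    also have "(LINT x:Iopen|lborel. Pr g x * deriv \<phi> x) = - (LINT x:Iopen|lborel. g x * \<phi> x)"
      using ibp_Pr[OF gi dphi rep' test_one[OF t], of 0] by simp
    finally show ?thesis by simp
  qed
  obtain K where "AE x in lborel. x \<in> Iopen \<longrightarrow> h x = K" using dBR[OF hi hyp] by blast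
  then have "AE x in lborel. x \<in> Iopen \<longrightarrow> U x = K + Pr g x"
    by (rule AE_mp[OF _ AE_I2]) (auto simp: h_def)
  then show ?thesis by blast
qed

lemma REP1:
  assumes U: "continuous_on {-1..1} U" and w: "L2_weak_deriv U g" and x: "x \<in> {-1..1}"
  shows "U x = U (-1) + Pr g x"
proof -
  obtain c where ae: "AE x in lborel. x \<in> Iopen \<longrightarrow> U x = c + Pr g x" using REP0[OF w] by blast
  have gi: "intI g" using w L2I_intI by (auto simp: L2_weak_deriv_def)
  define D where "D y = U y - (c + Pr g y)" for y
  have cD: "continuous_on {-1..1} D" unfolding D_def[abs_def]
    using U Pr_cont[OF gi] by (intro continuous_intros)
  have closedC: "closed {y \<in> {-1..1}. D y = 0}"
    by (rule continuous_closed_preimage_constant[OF cD]) simp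
  have aeC: "AE y \<in> Iopen in lebesgue. y \<in> {y \<in> {-1..1}. D y = 0}"
    using AE_completion[OF ae] by (rule AE_mp) (auto simp: D_def intro!: AE_I2)
  have zI: "D y = 0" if "y \<in> Iopen" for y
    using mem_closed_if_AE_lebesgue_open[OF _ closedC aeC that] by simp
  have zall: "D y = 0" if "y \<in> {-1..1}" for y
    using continuous_constant_on_closure[of Iopen D 0 y] cD zI that by simp
  have "D (-1) = 0" using zall by simp
  then have "c = U (-1)" by (simp add: D_def)
  with zall[OF x] show ?thesis by (simp add: D_def)
qed



lemma wd_cong_AE:
  assumes w: "L2_weak_deriv u g" and ae: "AE x in lborel. x \<in> Iopen \<longrightarrow> g x = g' x" and L: "L2I g'"
  shows "L2_weak_deriv u g'"
  unfolding L2_weak_deriv_def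
proof (intro conjI allI impI)
  show "L2I u" using w by (simp add: L2_weak_deriv_def)
  show "L2I g'" by (rule L)
  fix \<phi> assume t: "test_fun \<phi>"
  have mg: "mI g" using w by (simp add: L2_weak_deriv_def L2I_def)
  have mg': "mI g'" using L by (simp add: L2I_def)
  have mp: "mI \<phi>" using test_cont[OF t] by (rule mI_cont)
  have m1: "(\<lambda>x. indicator Iopen x *\<^sub>R (g x * \<phi> x)) \<in> borel_measurable lborel"
    using mI_mult[OF mg mp] unfolding set_borel_measurable_def .
  have m2: "(\<lambda>x. indicator Iopen x *\<^sub>R (g' x * \<phi> x)) \<in> borel_measurable lborel"
    using mI_mult[OF mg' mp] unfolding set_borel_measurable_def .
  have "(LINT x:Iopen|lborel. g x * \<phi> x) = (LINT x:Iopen|lborel. g' x * \<phi> x)"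
    unfolding set_lebesgue_integral_def
    by (rule integral_cong_AE[OF m1 m2]) (rule AE_mp[OF ae AE_I2], auto simp: indicator_def)
  then show "(LINT x:Iopen|lborel. u x * deriv \<phi> x) = - (LINT x:Iopen|lborel. g' x * \<phi> x)"
    using wd_eq[OF w t] by simp
qed

lemma quad_disc:
  fixes A B C :: real
  assumes q: "\<And>t. 0 \<le> A + 2 * t * B + t\<^sup>2 * C" and C: "0 \<le> C"
  shows "B\<^sup>2 \<le> A * C"
proof (cases "C = 0")
  case True
  have "B = 0"
  proof (rule ccontr)
    assume "B \<noteq> 0"
    have "0 \<le> A + 2 * (- (A + 1) / (2 * B)) * B + (- (A + 1) / (2 * B))\<^sup>2 * C" by (rule q)
    then show False using \<open>B \<noteq> 0\<close> True by (simp add: field_simps)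
  qed
  then show ?thesis using True by simp
next
  case False
  then have Cp: "0 < C" using C by simp
  have "0 \<le> A + 2 * (- B / C) * B + (- B / C)\<^sup>2 * C" by (rule q)
  then have "0 \<le> A - B\<^sup>2 / C" using Cp by (simp add: power2_eq_square field_simps)
  then show ?thesis using Cp by (simp add: field_simps)
qed

lemma L2I_sq_int: "L2I f \<Longrightarrow> intI (\<lambda>x. (f x)\<^sup>2)" by (simp add: L2I_def)

lemma LINT_nonneg: "(\<And>x. x \<in> Iopen \<Longrightarrow> 0 \<le> f x) \<Longrightarrow> 0 \<le> (LINT x:Iopen|lborel. (f x::real))"
  unfolding set_lebesgue_integral_def by (rule integral_nonneg_AE) (auto simp: indicator_def)

lemma LINT_sq_nonneg: "0 \<le> (LINT x:Iopen|lborel. (f x :: real)\<^sup>2)"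
  by (rule LINT_nonneg) simp

lemma CS_I:
  assumes f: "L2I f" and g: "L2I g"
  shows "(LINT x:Iopen|lborel. f x * g x)\<^sup>2 \<le> (LINT x:Iopen|lborel. (f x)\<^sup>2) * (LINT x:Iopen|lborel. (g x)\<^sup>2)"
proof (rule quad_disc)
  show "0 \<le> (LINT x:Iopen|lborel. (g x)\<^sup>2)" by (rule LINT_sq_nonneg)
  fix t
  have i1: "intI (\<lambda>x. (f x)\<^sup>2)" "intI (\<lambda>x. f x * g x)" "intI (\<lambda>x. (g x)\<^sup>2)"
    using f g L2I_mult_int by (auto simp: L2I_def)
  have "(LINT x:Iopen|lborel. (f x + t * g x)\<^sup>2) = (LINT x:Iopen|lborel. (f x)\<^sup>2 + (2 * t) * (f x * g x) + t\<^sup>2 * (g x)\<^sup>2)"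
    by (rule intI_integral_cong) (simp add: power2_eq_square algebra_simps)
  also have "\<dots> = (LINT x:Iopen|lborel. (f x)\<^sup>2) + 2 * t * (LINT x:Iopen|lborel. f x * g x) + t\<^sup>2 * (LINT x:Iopen|lborel. (g x)\<^sup>2)"
    using i1 by (simp add: set_integral_add intI_add intI_cmult)
  finally show "0 \<le> (LINT x:Iopen|lborel. (f x)\<^sup>2) + 2 * t * (LINT x:Iopen|lborel. f x * g x) + t\<^sup>2 * (LINT x:Iopen|lborel. (g x)\<^sup>2)"
    using LINT_sq_nonneg[of "\<lambda>x. f x + t * g x"] by simp
qed

lemma CS_I':
  assumes f: "L2I f" and g: "L2I g"
  shows "\<bar>LINT x:Iopen|lborel. f x * g x\<bar> \<le> sqrt (LINT x:Iopen|lborel. (f x)\<^sup>2) * sqrt (LINT x:Iopen|lborel. (g x)\<^sup>2)"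
proof -
  have "sqrt ((LINT x:Iopen|lborel. f x * g x)\<^sup>2) \<le> sqrt ((LINT x:Iopen|lborel. (f x)\<^sup>2) * (LINT x:Iopen|lborel. (g x)\<^sup>2))"
    using CS_I[OF f g] by (rule real_sqrt_le_mono)
  then show ?thesis by (simp add: real_sqrt_mult)
qed


lemma C1_of_H2:
  assumes H: "H2 f" and cf: "continuous_on {-1..1} f"
  shows "\<exists>F1 f2. continuous_on {-1..1} F1 \<and> (\<forall>x\<in>Iopen. (f has_real_derivative F1 x) (at x))
     \<and> L2I f2 \<and> (\<forall>x\<in>{-1..1}. F1 x = F1 (-1) + Pr f2 x) \<and> L2_weak_deriv f F1"
proof -
  obtain f1 f2 where w1: "L2_weak_deriv f f1" and w2: "L2_weak_deriv f1 f2"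
    using H unfolding H2_def H1_def by blast
  obtain c where ae: "AE x in lborel. x \<in> Iopen \<longrightarrow> f1 x = c + Pr f2 x" using REP0[OF w2] by blast
  have L2: "L2I f2" using w2 by (simp add: L2_weak_deriv_def)
  have f2i: "intI f2" using L2 by (rule L2I_intI)
  define F1 where "F1 x = c + Pr f2 x" for x
  have cF1: "continuous_on {-1..1} F1" unfolding F1_def[abs_def] using Pr_cont[OF f2i] by (intro continuous_intros)
  have ae2: "AE x in lborel. x \<in> Iopen \<longrightarrow> f1 x = F1 x" using ae by (simp add: F1_def)
  have wF: "L2_weak_deriv f F1" by (rule wd_cong_AE[OF w1 ae2 L2I_cont[OF cF1]])
  have repf: "f x = f (-1) + Pr F1 x" if "x \<in> {-1..1}" for x by (rule REP1[OF cf wF that])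
  have der: "(f has_real_derivative F1 x) (at x)" if x: "x \<in> Iopen" for x
  proof -
    have "((\<lambda>y. f (-1) + Pr F1 y) has_real_derivative 0 + F1 x) (at x)"
      by (rule DERIV_add[OF DERIV_const Pr_DERIV[OF cF1 x]])
    then have "((\<lambda>y. f (-1) + Pr F1 y) has_real_derivative F1 x) (at x)" by simp
    then show ?thesis
    proof (rule has_field_derivative_transform_within_open[where S=Iopen])
      show "open Iopen" by simp
      show "x \<in> Iopen" by (rule x)
      fix y :: real assume "y \<in> Iopen"
      then show "f (-1) + Pr F1 y = f y" using repf[of y] by simp
    qed
  qed
  have rep2: "\<forall>x\<in>{-1..1}. F1 x = F1 (-1) + Pr f2 x" by (simp add: F1_def)
  show ?thesis
    apply (rule exI[of _ F1], rule exI[of _ f2])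
    using cF1 der L2 wF rep2 by blast
qed

lemma test_ends: "test_fun \<phi> \<Longrightarrow> \<phi> (-1) = 0 \<and> \<phi> 1 = 0"
  using test_rep[of \<phi> "-1"] test_rep[of \<phi> 1] test_one[of \<phi>] by simp

lemma wd_prod:
  assumes cV: "continuous_on {-1..1} V" and k: "L2I k" and repV: "\<And>x. x \<in> {-1..1} \<Longrightarrow> V x = V (-1) + Pr k x"
    and cm: "continuous_on {-1..1} m" and dm: "\<And>x. x \<in> Iopen \<Longrightarrow> (m has_real_derivative m' x) (at x)"
    and cm': "continuous_on {-1..1} m'"
  shows "L2_weak_deriv (\<lambda>x. V x * m x) (\<lambda>x. k x * m x + V x * m' x)"
  unfolding L2_weak_deriv_def
proof (intro conjI allI impI)
  show "L2I (\<lambda>x. V x * m x)" using cV cm by (intro L2I_cont continuous_intros)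
  have "L2I (\<lambda>x. m x * k x)" by (rule L2I_mult_cont[OF k cm])
  then have "L2I (\<lambda>x. k x * m x)" by (simp add: mult.commute)
  moreover have "L2I (\<lambda>x. V x * m' x)" using cV cm' by (intro L2I_cont continuous_intros)
  ultimately show "L2I (\<lambda>x. k x * m x + V x * m' x)" by (rule L2I_add)
  fix \<phi> assume t: "test_fun \<phi>"
  have sp: "smooth \<phi>" using t by (rule test_smooth)
  have cp: "continuous_on {-1..1} \<phi>" "continuous_on {-1..1} (deriv \<phi>)"
    using smooth_cont sp smooth_deriv by blast+
  define ps where "ps x = m x * \<phi> x" for x
  define dps where "dps x = m' x * \<phi> x + m x * deriv \<phi> x" for x
  have cps: "continuous_on {-1..1} ps" unfolding ps_def[abs_def] using cm cp by (intro continuous_intros)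
  have cdps: "continuous_on {-1..1} dps" unfolding dps_def[abs_def] using cm cm' cp by (intro continuous_intros)
  have dps: "(ps has_real_derivative dps x) (at x)" if "x \<in> Iopen" for x
  proof -
    have "((\<lambda>x. m x * \<phi> x) has_real_derivative m' x * \<phi> x + deriv \<phi> x * m x) (at x)"
      by (rule DERIV_mult[OF dm[OF that] smooth_DERIV[OF sp]])
    then show ?thesis unfolding ps_def[abs_def] dps_def by (simp add: mult.commute)
  qed
  have e: "\<phi> (-1) = 0" "\<phi> 1 = 0" using test_ends[OF t] by auto
  have rps: "ps x = Pr dps x" if "x \<in> {-1..1}" for x
    using FTC_rep[OF cps dps cdps that] e by (simp add: ps_def)
  have one: "Pr dps 1 = 0" using rps[of 1] e by (simp add: ps_def)
  have ki: "intI k" using k by (rule L2I_intI)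
  have dpsi: "intI dps" by (rule cont_intI[OF cdps])
  have I1: "(LINT x:Iopen|lborel. (V (-1) + Pr k x) * dps x) = - (LINT x:Iopen|lborel. k x * ps x)"
    by (rule ibp_Pr[OF ki dpsi]) (use rps one in auto)
  have I2: "(LINT x:Iopen|lborel. (V (-1) + Pr k x) * dps x) =
      (LINT x:Iopen|lborel. V x * m' x * \<phi> x) + (LINT x:Iopen|lborel. V x * m x * deriv \<phi> x)"
  proof -
    have "(LINT x:Iopen|lborel. (V (-1) + Pr k x) * dps x) = (LINT x:Iopen|lborel. V x * m' x * \<phi> x + V x * m x * deriv \<phi> x)"
    proof (rule intI_integral_cong)
      fix x :: real assume "x \<in> Iopen"
      then have "x \<in> {-1..1}" by auto
      from repV[OF this] have eq: "V (-1) + Pr k x = V x" by (rule sym)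
      show "(V (-1) + Pr k x) * dps x = V x * m' x * \<phi> x + V x * m x * deriv \<phi> x"
        unfolding eq by (simp add: dps_def algebra_simps)
    qed
    also have "\<dots> = (LINT x:Iopen|lborel. V x * m' x * \<phi> x) + (LINT x:Iopen|lborel. V x * m x * deriv \<phi> x)"
      by (rule set_integral_add(2); rule cont_intI; use cV cm cm' cp in \<open>intro continuous_intros\<close>)
    finally show ?thesis .
  qed
  have i3: "intI (\<lambda>x. k x * m x * \<phi> x)"
    using intI_mult_cont[OF ki, of "\<lambda>x. m x * \<phi> x"] cm cp by (simp add: continuous_on_mult mult_ac)
  have i4: "intI (\<lambda>x. V x * m' x * \<phi> x)" by (rule cont_intI) (use cV cm' cp in \<open>intro continuous_intros\<close>)
  have "(LINT x:Iopen|lborel. (k x * m x + V x * m' x) * \<phi> x) =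
      (LINT x:Iopen|lborel. k x * m x * \<phi> x) + (LINT x:Iopen|lborel. V x * m' x * \<phi> x)"
    unfolding distrib_right by (rule set_integral_add(2)[OF i3 i4])
  moreover have "(LINT x:Iopen|lborel. k x * ps x) = (LINT x:Iopen|lborel. k x * m x * \<phi> x)"
    by (simp add: ps_def mult.assoc)
  ultimately show "(LINT x:Iopen|lborel. V x * m x * deriv \<phi> x) = - (LINT x:Iopen|lborel. (k x * m x + V x * m' x) * \<phi> x)"
    using I1 I2 by simp
qed


lemma quotient_H2:
  assumes Hf: "H2 f" and Hb: "H2 b" and cf: "continuous_on {-1..1} f" and cb: "continuous_on {-1..1} b"
    and bpos: "\<And>x. x \<in> {-1..1} \<Longrightarrow> 0 < b x"
  shows "\<exists>q1 q2. continuous_on {-1..1} q1 \<and> L2_weak_deriv (\<lambda>x. f x / b x) q1 \<and> L2_weak_deriv q1 q2"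
proof -
  obtain F1 f2 where cF1: "continuous_on {-1..1} F1" and dF: "\<forall>x\<in>Iopen. (f has_real_derivative F1 x) (at x)"
    and Lf2: "L2I f2" and rF: "\<forall>x\<in>{-1..1}. F1 x = F1 (-1) + Pr f2 x"
    using C1_of_H2[OF Hf cf] by blast
  obtain B1 b2 where cB1: "continuous_on {-1..1} B1" and dB: "\<forall>x\<in>Iopen. (b has_real_derivative B1 x) (at x)"
    and Lb2: "L2I b2" and rB: "\<forall>x\<in>{-1..1}. B1 x = B1 (-1) + Pr b2 x"
    using C1_of_H2[OF Hb cb] by blast
  have bnz: "b x \<noteq> 0" if "x \<in> {-1..1}" for x using bpos[OF that] by simp
  have bbnz: "b x * b x \<noteq> 0" if "x \<in> {-1..1}" for x using bnz[OF that] by simp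
  have bbbbnz: "b x * b x * (b x * b x) \<noteq> 0" if "x \<in> {-1..1}" for x using bnz[OF that] by simp
  define q1 where "q1 x = (F1 x * b x - f x * B1 x) / (b x * b x)" for x
  have cq1: "continuous_on {-1..1} q1" unfolding q1_def[abs_def]
    by (rule continuous_on_divide) (use cF1 cb cf cB1 bbnz in \<open>auto intro!: continuous_intros\<close>)
  have cq: "continuous_on {-1..1} (\<lambda>x. f x / b x)"
    by (rule continuous_on_divide[OF cf cb]) (use bnz in auto)
  have dq: "((\<lambda>x. f x / b x) has_real_derivative q1 x) (at x)" if x: "x \<in> Iopen" for x
    unfolding q1_def by (rule DERIV_divide) (use dF dB x bnz in auto)
  have wq: "L2_weak_deriv (\<lambda>x. f x / b x) q1"
  proof (rule wd_Pr[OF L2I_cont[OF cq1]])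
    fix x :: real assume "x \<in> Iopen"
    then have "x \<in> {-1..1}" by auto
    show "f x / b x = f (-1) / b (-1) + Pr q1 x" by (rule FTC_rep[OF cq dq cq1 \<open>x \<in> {-1..1}\<close>])
  qed
  define m1 where "m1 x = 1 / b x" for x
  define m1' where "m1' x = (0 * b x - 1 * B1 x) / (b x * b x)" for x
  define m2 where "m2 x = f x / (b x * b x)" for x
  define m2' where "m2' x = (F1 x * (b x * b x) - f x * (B1 x * b x + B1 x * b x)) / (b x * b x * (b x * b x))" for x
  have cm1: "continuous_on {-1..1} m1" unfolding m1_def[abs_def]
    by (rule continuous_on_divide) (use cb bnz in \<open>auto intro!: continuous_intros\<close>)
  have cm1': "continuous_on {-1..1} m1'" unfolding m1'_def[abs_def]
    by (rule continuous_on_divide) (use cb cB1 bbnz in \<open>auto intro!: continuous_intros\<close>)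
  have cm2: "continuous_on {-1..1} m2" unfolding m2_def[abs_def]
    by (rule continuous_on_divide) (use cf cb bbnz in \<open>auto intro!: continuous_intros\<close>)
  have cm2': "continuous_on {-1..1} m2'" unfolding m2'_def[abs_def]
    by (rule continuous_on_divide) (use cf cb cF1 cB1 bbbbnz in \<open>auto intro!: continuous_intros\<close>)
  have dm1: "(m1 has_real_derivative m1' x) (at x)" if x: "x \<in> Iopen" for x
    unfolding m1_def[abs_def] m1'_def by (rule DERIV_divide[OF DERIV_const]) (use dB x bnz in auto)
  have dbb: "((\<lambda>x. b x * b x) has_real_derivative B1 x * b x + B1 x * b x) (at x)" if x: "x \<in> Iopen" for x
    using DERIV_mult[OF bspec[OF dB x] bspec[OF dB x]] by simp
  have dm2: "(m2 has_real_derivative m2' x) (at x)" if x: "x \<in> Iopen" for x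
    unfolding m2_def[abs_def] m2'_def by (rule DERIV_divide[OF _ dbb[OF x]]) (use dF x bbnz in auto)
  have rF': "\<And>x. x \<in> {-1..1} \<Longrightarrow> F1 x = F1 (-1) + Pr f2 x" using rF by blast
  have rB': "\<And>x. x \<in> {-1..1} \<Longrightarrow> B1 x = B1 (-1) + Pr b2 x" using rB by blast
  have w1: "L2_weak_deriv (\<lambda>x. F1 x * m1 x) (\<lambda>x. f2 x * m1 x + F1 x * m1' x)"
    by (rule wd_prod[OF cF1 Lf2 rF' cm1 dm1 cm1'])
  have w2: "L2_weak_deriv (\<lambda>x. B1 x * m2 x) (\<lambda>x. b2 x * m2 x + B1 x * m2' x)"
    by (rule wd_prod[OF cB1 Lb2 rB' cm2 dm2 cm2'])
  have w3: "L2_weak_deriv (\<lambda>x. F1 x * m1 x - B1 x * m2 x) (\<lambda>x. (f2 x * m1 x + F1 x * m1' x) - (b2 x * m2 x + B1 x * m2' x))"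
    by (rule wd_diff[OF w1 w2])
  have "L2_weak_deriv q1 (\<lambda>x. (f2 x * m1 x + F1 x * m1' x) - (b2 x * m2 x + B1 x * m2' x))"
  proof (rule wd_cong[OF w3])
    fix x :: real assume "x \<in> Iopen"
    then have "b x \<noteq> 0" using bnz by auto
    then show "F1 x * m1 x - B1 x * m2 x = q1 x"
      by (simp add: m1_def m2_def q1_def field_simps)
  qed simp
  then show ?thesis using cq1 wq by blast
qed

lemma weq_second:
  assumes weq: "weak_eq \<epsilon> b F u" and wu: "L2_weak_deriv u gu"
    and cu: "continuous_on {-1..1} u" and cb: "continuous_on {-1..1} b" and cF: "continuous_on {-1..1} F"
    and e: "\<epsilon> \<noteq> 0"
  shows "L2_weak_deriv gu (\<lambda>x. (b x * u x - F x) / \<epsilon>\<^sup>2)"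
  unfolding L2_weak_deriv_def
proof (intro conjI allI impI)
  show "L2I gu" using wu by (simp add: L2_weak_deriv_def)
  show "L2I (\<lambda>x. (b x * u x - F x) / \<epsilon>\<^sup>2)"
    by (rule L2I_cont) (use cu cb cF e in \<open>auto intro!: continuous_intros\<close>)
  fix \<phi> assume t: "test_fun \<phi>"
  have cp: "continuous_on {-1..1} \<phi>" by (rule test_cont[OF t])
  have Lgu: "L2I gu" using wu by (simp add: L2_weak_deriv_def)
  have W: "(LINT x:Iopen|lborel. \<epsilon>^2 * gu x * deriv \<phi> x + b x * u x * \<phi> x) = (LINT x:Iopen|lborel. F x * \<phi> x)"
    using weq test_H10[OF t] test_wd[OF t] wu unfolding weak_eq_def by blast
  have i1: "intI (\<lambda>x. \<epsilon>^2 * gu x * deriv \<phi> x)"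
    using intI_cmult[OF int_L2_test[OF Lgu test_deriv[OF t]], of "\<epsilon>^2"] by (simp add: mult.assoc)
  have i2: "intI (\<lambda>x. b x * u x * \<phi> x)" by (rule cont_intI) (use cu cb cp in \<open>intro continuous_intros\<close>)
  have i3: "intI (\<lambda>x. F x * \<phi> x)" by (rule cont_intI) (use cF cp in \<open>intro continuous_intros\<close>)
  have "\<epsilon>^2 * (LINT x:Iopen|lborel. gu x * deriv \<phi> x) + (LINT x:Iopen|lborel. b x * u x * \<phi> x) = (LINT x:Iopen|lborel. F x * \<phi> x)"
    using W set_integral_add(2)[OF i1 i2] by (simp add: mult.assoc)
  then have A: "(LINT x:Iopen|lborel. gu x * deriv \<phi> x) = ((LINT x:Iopen|lborel. F x * \<phi> x) - (LINT x:Iopen|lborel. b x * u x * \<phi> x)) / \<epsilon>^2"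
    using e by (simp add: field_simps)
  have "(LINT x:Iopen|lborel. (b x * u x - F x) / \<epsilon>\<^sup>2 * \<phi> x) = (LINT x:Iopen|lborel. (1 / \<epsilon>^2) * (b x * u x * \<phi> x - F x * \<phi> x))"
    by (rule intI_integral_cong) (simp add: field_simps)
  also have "\<dots> = (1 / \<epsilon>^2) * ((LINT x:Iopen|lborel. b x * u x * \<phi> x) - (LINT x:Iopen|lborel. F x * \<phi> x))"
    using set_integral_diff(2)[OF i2 i3] by simp
  finally have B: "(LINT x:Iopen|lborel. (b x * u x - F x) / \<epsilon>\<^sup>2 * \<phi> x) = (1 / \<epsilon>^2) * ((LINT x:Iopen|lborel. b x * u x * \<phi> x) - (LINT x:Iopen|lborel. F x * \<phi> x))" .
  have ar: "\<And>X P Q R::real. X = (Q - P) / \<epsilon>^2 \<Longrightarrow> R = (1 / \<epsilon>^2) * (P - Q) \<Longrightarrow> X = - R"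
    by (simp add: diff_divide_distrib)
  show "(LINT x:Iopen|lborel. gu x * deriv \<phi> x) = - (LINT x:Iopen|lborel. (b x * u x - F x) / \<epsilon>\<^sup>2 * \<phi> x)"
    by (rule ar[OF A B])
qed



lemma weq_apply:
  assumes "weak_eq \<epsilon> b F u" "L2_weak_deriv u u'" "H10 \<phi>" "L2_weak_deriv \<phi> \<phi>'"
  shows "(LINT x:Iopen|lborel. \<epsilon>^2 * u' x * \<phi>' x + b x * u x * \<phi> x) = (LINT x:Iopen|lborel. F x * \<phi> x)"
  using assms unfolding weak_eq_def by blast

lemma sq_diff_le: "(a - c)^2 \<le> 2 * a^2 + 2 * c^2" for a c :: real
proof -
  have "0 \<le> (a + c)^2" by simp
  then have "0 \<le> a^2 + 2 * a * c + c^2" by (simp add: power2_sum)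
  moreover have "(a - c)^2 = a^2 - 2 * a * c + c^2" by (simp add: power2_diff)
  ultimately show ?thesis by linarith
qed

lemma core1:
  fixes b f u m p q1 q2 :: "real \<Rightarrow> real" and \<epsilon> lb ub :: real
  assumes cb: "continuous_on {-1..1} b" and cf: "continuous_on {-1..1} f"
    and lb: "0 < lb" and bnd: "\<And>x. x \<in> {-1..1} \<Longrightarrow> lb \<le> b x \<and> b x \<le> ub"
    and cq1: "continuous_on {-1..1} q1" and wq: "L2_weak_deriv (\<lambda>x. f x / b x) q1"
    and wq1: "L2_weak_deriv q1 q2"
    and e: "0 < \<epsilon>"
    and pd: "problem_data \<epsilon> b f u m p"
  shows "\<exists>gR hR. L2_weak_deriv (remainder b f u m p) gR \<and> L2_weak_deriv gR hR
      \<and> H10 (remainder b f u m p) \<and> continuous_on {-1..1} (remainder b f u m p)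
      \<and> remainder b f u m p (-1) = 0 \<and> remainder b f u m p 1 = 0
      \<and> enorm \<epsilon> b (remainder b f u m p) gR \<le> \<epsilon>^2 * sqrt (LINT x:Iopen|lborel. (q2 x)^2) / sqrt lb
      \<and> L2norm (remainder b f u m p) \<le> enorm \<epsilon> b (remainder b f u m p) gR / sqrt lb
      \<and> (LINT x:Iopen|lborel. (hR x)^2) \<le> 2 * ub^2 * (LINT x:Iopen|lborel. (q2 x)^2) / lb^2 + 2 * (LINT x:Iopen|lborel. (q2 x)^2)"
proof -
  define Nq where "Nq = sqrt (LINT x:Iopen|lborel. (q2 x)^2)"
  have bpos: "0 < b x" if "x \<in> {-1..1}" for x using bnd[OF that] lb by linarith
  have bnz: "b x \<noteq> 0" if "x \<in> {-1..1}" for x using bpos[OF that] by simp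
  have cu: "continuous_on {-1..1} u" and H10u: "H10 u" and u1: "u (-1) = 0" "u 1 = 0" and weu: "weak_eq \<epsilon> b f u"
    and cm: "continuous_on {-1..1} m" and H1m: "H1 m" and m1: "m (-1) = - (f (-1) / b (-1))" "m 1 = 0"
    and wem: "weak_eq \<epsilon> b (\<lambda>_. 0) m"
    and cp: "continuous_on {-1..1} p" and H1p: "H1 p" and p1: "p (-1) = 0" "p 1 = - (f 1 / b 1)"
    and wep: "weak_eq \<epsilon> b (\<lambda>_. 0) p"
    using pd unfolding problem_data_def by auto
  obtain gu where wu: "L2_weak_deriv u gu" using H10u unfolding H10_def H1_def by blast
  obtain gm where wm: "L2_weak_deriv m gm" using H1m unfolding H1_def by blast
  obtain gp where wp: "L2_weak_deriv p gp" using H1p unfolding H1_def by blast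
  have enz: "\<epsilon> \<noteq> 0" using e by simp
  have c0: "continuous_on {-1..1} (\<lambda>_::real. 0::real)" by simp
  have wu2: "L2_weak_deriv gu (\<lambda>x. (b x * u x - f x) / \<epsilon>\<^sup>2)" by (rule weq_second[OF weu wu cu cb cf enz])
  have wm2: "L2_weak_deriv gm (\<lambda>x. (b x * m x - 0) / \<epsilon>\<^sup>2)" by (rule weq_second[OF wem wm cm cb c0 enz])
  have wp2: "L2_weak_deriv gp (\<lambda>x. (b x * p x - 0) / \<epsilon>\<^sup>2)" by (rule weq_second[OF wep wp cp cb c0 enz])
  define uR where "uR = remainder b f u m p"
  have uR_def': "uR x = u x - f x / b x - m x - p x" for x by (simp add: uR_def remainder_def)
  have cq: "continuous_on {-1..1} (\<lambda>x. f x / b x)"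
    by (rule continuous_on_divide[OF cf cb]) (use bnz in auto)
  have cuR: "continuous_on {-1..1} uR" unfolding uR_def remainder_def[abs_def]
    using cu cf cb cm cp bnz by (auto intro!: continuous_intros)
  have uRm1: "uR (-1) = 0" using u1 m1 p1 by (simp add: uR_def')
  have uR1: "uR 1 = 0" using u1 m1 p1 by (simp add: uR_def')
  define gR where "gR x = gu x - q1 x - gm x - gp x" for x
  have wR: "L2_weak_deriv uR gR"
  proof -
    have "L2_weak_deriv (\<lambda>x. u x - f x / b x - m x - p x) (\<lambda>x. gu x - q1 x - gm x - gp x)"
      by (rule wd_diff[OF wd_diff[OF wd_diff[OF wu wq] wm] wp])
    then show ?thesis unfolding gR_def[abs_def] uR_def remainder_def[abs_def] .
  qed
  define hR where "hR x = b x * uR x / \<epsilon>^2 - q2 x" for x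
  have wR2: "L2_weak_deriv gR hR"
  proof -
    have w: "L2_weak_deriv gR (\<lambda>x. (b x * u x - f x) / \<epsilon>\<^sup>2 - q2 x - (b x * m x - 0) / \<epsilon>\<^sup>2 - (b x * p x - 0) / \<epsilon>\<^sup>2)"
      unfolding gR_def[abs_def] by (rule wd_diff[OF wd_diff[OF wd_diff[OF wu2 wq1] wm2] wp2])
    show ?thesis
    proof (rule wd_cong[OF w])
      fix x :: real assume "x \<in> Iopen"
      then have "b x \<noteq> 0" using bnz by auto
      then show "(b x * u x - f x) / \<epsilon>\<^sup>2 - q2 x - (b x * m x - 0) / \<epsilon>\<^sup>2 - (b x * p x - 0) / \<epsilon>\<^sup>2 = hR x"
        using enz by (simp add: hR_def uR_def' field_simps)
    qed simp
  qed
  have H10R: "H10 uR"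
    unfolding H10_def H1_def using wR cuR uRm1 uR1 by blast
  have LgR: "L2I gR" and LuR: "L2I uR" using wR by (auto simp: L2_weak_deriv_def)
  have Lgu: "L2I gu" and Lgm: "L2I gm" and Lgp: "L2I gp" using wu wm wp by (auto simp: L2_weak_deriv_def)
  have Lq1: "L2I q1" and Lq2: "L2I q2" using wq1 by (auto simp: L2_weak_deriv_def)
  (* energy identity *)
  have E1: "(LINT x:Iopen|lborel. \<epsilon>^2 * gu x * gR x + b x * u x * uR x) = (LINT x:Iopen|lborel. f x * uR x)"
    by (rule weq_apply[OF weu wu H10R wR])
  have E2: "(LINT x:Iopen|lborel. \<epsilon>^2 * gm x * gR x + b x * m x * uR x) = 0"
    using weq_apply[OF wem wm H10R wR] by simp
  have E3: "(LINT x:Iopen|lborel. \<epsilon>^2 * gp x * gR x + b x * p x * uR x) = 0"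
    using weq_apply[OF wep wp H10R wR] by simp
  have iA: "intI (\<lambda>x. \<epsilon>^2 * g x * gR x + b x * v x * uR x)" if Lg: "L2I g" and cv: "continuous_on {-1..1} v" for g v
  proof (rule intI_add)
    show "intI (\<lambda>x. \<epsilon>^2 * g x * gR x)"
      using intI_cmult[OF L2I_mult_int[OF Lg LgR], of "\<epsilon>^2"] by (simp add: mult.assoc)
    show "intI (\<lambda>x. b x * v x * uR x)" by (rule cont_intI) (use cb cv cuR in \<open>intro continuous_intros\<close>)
  qed
  have iF: "intI (\<lambda>x. f x * uR x)" by (rule cont_intI) (use cf cuR in \<open>intro continuous_intros\<close>)
  define A where "A = (LINT x:Iopen|lborel. \<epsilon>^2 * (gR x)^2 + b x * (uR x)^2)"
  have iE: "intI (\<lambda>x. \<epsilon>^2 * (gR x)^2 + b x * (uR x)^2)"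
  proof (rule intI_add)
    show "intI (\<lambda>x. \<epsilon>^2 * (gR x)^2)" by (rule intI_cmult[OF L2I_sq_int[OF LgR]])
    show "intI (\<lambda>x. b x * (uR x)^2)" by (rule cont_intI) (use cb cuR in \<open>intro continuous_intros\<close>)
  qed
  have iQ: "intI (\<lambda>x. q1 x * gR x)" by (rule L2I_mult_int[OF Lq1 LgR])
  have comb: "(LINT x:Iopen|lborel. (\<epsilon>^2 * (gR x)^2 + b x * (uR x)^2) + \<epsilon>^2 * (q1 x * gR x)) =
     (LINT x:Iopen|lborel. ((\<epsilon>^2 * gu x * gR x + b x * u x * uR x) - (\<epsilon>^2 * gm x * gR x + b x * m x * uR x)
        - (\<epsilon>^2 * gp x * gR x + b x * p x * uR x)) - f x * uR x)"
  proof (rule intI_integral_cong)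
    fix x :: real assume "x \<in> Iopen"
    then have "b x \<noteq> 0" using bnz by auto
    then show "(\<epsilon>^2 * (gR x)^2 + b x * (uR x)^2) + \<epsilon>^2 * (q1 x * gR x) =
     ((\<epsilon>^2 * gu x * gR x + b x * u x * uR x) - (\<epsilon>^2 * gm x * gR x + b x * m x * uR x)
        - (\<epsilon>^2 * gp x * gR x + b x * p x * uR x)) - f x * uR x"
      by (simp add: gR_def uR_def' power2_eq_square field_simps)
  qed
  have "(LINT x:Iopen|lborel. ((\<epsilon>^2 * gu x * gR x + b x * u x * uR x) - (\<epsilon>^2 * gm x * gR x + b x * m x * uR x)
        - (\<epsilon>^2 * gp x * gR x + b x * p x * uR x)) - f x * uR x) = 0"
    using E1 E2 E3 iA[OF Lgu cu] iA[OF Lgm cm] iA[OF Lgp cp] iF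
    by (simp add: set_integral_diff intI_diff)
  moreover have "(LINT x:Iopen|lborel. (\<epsilon>^2 * (gR x)^2 + b x * (uR x)^2) + \<epsilon>^2 * (q1 x * gR x)) = A + \<epsilon>^2 * (LINT x:Iopen|lborel. q1 x * gR x)"
    unfolding A_def using set_integral_add(2)[OF iE intI_cmult[OF iQ, of "\<epsilon>^2"]] by simp
  ultimately have Aeq: "A = - (\<epsilon>^2 * (LINT x:Iopen|lborel. q1 x * gR x))" using comb by simp
  have repR: "uR x = Pr gR x" if "x \<in> {-1..1}" for x using REP1[OF cuR wR that] uRm1 by simp
  have repq1: "q1 x = q1 (-1) + Pr q2 x" if "x \<in> {-1..1}" for x by (rule REP1[OF cq1 wq1 that])
  have "(LINT x:Iopen|lborel. q1 x * gR x) = (LINT x:Iopen|lborel. (q1 (-1) + Pr q2 x) * gR x)"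
  proof (rule intI_integral_cong)
    fix x :: real assume "x \<in> Iopen"
    then have "x \<in> {-1..1}" by auto
    from repq1[OF this] show "q1 x * gR x = (q1 (-1) + Pr q2 x) * gR x" by simp
  qed
  also have "\<dots> = - (LINT x:Iopen|lborel. q2 x * uR x)"
  proof (rule ibp_Pr[OF L2I_intI[OF Lq2] L2I_intI[OF LgR]])
    show "\<And>x. x \<in> Iopen \<Longrightarrow> uR x = Pr gR x" using repR by auto
    show "Pr gR 1 = 0" using repR[of 1] uR1 by simp
  qed
  finally have Aeq2: "A = \<epsilon>^2 * (LINT x:Iopen|lborel. q2 x * uR x)" using Aeq by simp
  have A0: "0 \<le> A" unfolding A_def
  proof (rule LINT_nonneg)
    fix x :: real assume "x \<in> Iopen"
    then have "0 < b x" using bpos by auto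
    then show "0 \<le> \<epsilon>^2 * (gR x)^2 + b x * (uR x)^2" by simp
  qed
  have uA: "lb * (LINT x:Iopen|lborel. (uR x)^2) \<le> A"
  proof -
    have "lb * (LINT x:Iopen|lborel. (uR x)^2) = (LINT x:Iopen|lborel. lb * (uR x)^2)" by simp
    also have "\<dots> \<le> A" unfolding A_def
    proof (rule set_integral_mono)
      show "intI (\<lambda>x. lb * (uR x)\<^sup>2)" by (rule intI_cmult[OF L2I_sq_int[OF LuR]])
      show "intI (\<lambda>x. \<epsilon>^2 * (gR x)^2 + b x * (uR x)^2)" by (rule iE)
      fix x :: real assume "x \<in> Iopen"
      then have "lb \<le> b x" using bnd by auto
      then have "lb * (uR x)^2 \<le> b x * (uR x)^2" by (simp add: mult_right_mono)
      then show "lb * (uR x)\<^sup>2 \<le> \<epsilon>^2 * (gR x)^2 + b x * (uR x)^2" by (simp add: add_increasing)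
    qed
    finally show ?thesis .
  qed
  define U where "U = (LINT x:Iopen|lborel. (uR x)^2)"
  have U0: "0 \<le> U" unfolding U_def by (rule LINT_sq_nonneg)
  have UA: "U \<le> A / lb" using uA lb by (simp add: U_def field_simps)
  have CS: "\<bar>LINT x:Iopen|lborel. q2 x * uR x\<bar> \<le> Nq * sqrt U"
    unfolding Nq_def U_def by (rule CS_I'[OF Lq2 LuR])
  have Nq0: "0 \<le> Nq" unfolding Nq_def using LINT_sq_nonneg[of q2] by simp
  have sA: "sqrt A \<le> \<epsilon>^2 * Nq / sqrt lb"
  proof (cases "A = 0")
    case True
    have "0 \<le> \<epsilon>^2 * Nq / sqrt lb" using Nq0 lb by (intro divide_nonneg_nonneg mult_nonneg_nonneg) auto
    then show ?thesis using True by simp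
  next
    case False
    then have Ap: "0 < A" using A0 by simp
    have X: "(LINT x:Iopen|lborel. q2 x * uR x) \<le> Nq * sqrt U" using CS by linarith
    have "\<epsilon>^2 * (LINT x:Iopen|lborel. q2 x * uR x) \<le> \<epsilon>^2 * (Nq * sqrt U)"
      by (rule mult_left_mono[OF X]) simp
    then have "A \<le> \<epsilon>^2 * (Nq * sqrt U)" using Aeq2 by simp
    also have "\<dots> \<le> \<epsilon>^2 * (Nq * (sqrt A / sqrt lb))"
    proof -
      have "sqrt U \<le> sqrt (A / lb)" using UA by (rule real_sqrt_le_mono)
      then have "sqrt U \<le> sqrt A / sqrt lb" by (simp add: real_sqrt_divide)
      then show ?thesis using Nq0 by (intro mult_left_mono) auto
    qed
    finally have A1: "A \<le> \<epsilon>^2 * (Nq * (sqrt A / sqrt lb))" .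
    have eq1: "sqrt A * sqrt A = A" using A0 by simp
    have eq2: "\<epsilon>^2 * (Nq * (sqrt A / sqrt lb)) = (\<epsilon>^2 * Nq / sqrt lb) * sqrt A" by simp
    have "sqrt A * sqrt A \<le> (\<epsilon>^2 * Nq / sqrt lb) * sqrt A" using A1 unfolding eq1 eq2 .
    then show ?thesis by (rule mult_right_le_imp_le) (use Ap in simp)
  qed
  have en: "enorm \<epsilon> b uR gR = sqrt A" unfolding enorm_def A_def ..
  have L2n: "L2norm uR = sqrt U" unfolding L2norm_def U_def ..
  have L2le: "L2norm uR \<le> enorm \<epsilon> b uR gR / sqrt lb"
  proof -
    have "sqrt U \<le> sqrt (A / lb)" using UA by (rule real_sqrt_le_mono)
    then show ?thesis unfolding L2n en by (simp add: real_sqrt_divide)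
  qed
  have Ule: "U \<le> \<epsilon>^4 * Nq^2 / lb^2"
  proof -
    have s1: "sqrt U \<le> sqrt A / sqrt lb" using L2le unfolding L2n en .
    have s2: "sqrt A / sqrt lb \<le> (\<epsilon>^2 * Nq / sqrt lb) / sqrt lb" by (rule divide_right_mono[OF sA]) (use lb in simp)
    have s3: "(\<epsilon>^2 * Nq / sqrt lb) / sqrt lb = \<epsilon>^2 * Nq / lb"
      using lb by (simp add: divide_divide_eq_left)
    have "sqrt U \<le> \<epsilon>^2 * Nq / lb" using s1 s2 s3 by linarith
    then have "(sqrt U)^2 \<le> (\<epsilon>^2 * Nq / lb)^2" by (rule power_mono) (use U0 in simp)
    then show ?thesis using U0 by (simp add: power_divide power_mult_distrib)
  qed
  have Lq2s: "intI (\<lambda>x. (q2 x)^2)" by (rule L2I_sq_int[OF Lq2])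
  have hb: "(LINT x:Iopen|lborel. (hR x)^2) \<le> (LINT x:Iopen|lborel. 2 * ub^2 / \<epsilon>^4 * (uR x)^2 + 2 * (q2 x)^2)"
  proof (rule set_integral_mono)
    have LhR: "L2I hR" using wR2 by (simp add: L2_weak_deriv_def)
    show "intI (\<lambda>x. (hR x)\<^sup>2)" by (rule L2I_sq_int[OF LhR])
    show "intI (\<lambda>x. 2 * ub^2 / \<epsilon>^4 * (uR x)^2 + 2 * (q2 x)^2)"
      by (rule intI_add[OF intI_cmult[OF L2I_sq_int[OF LuR]] intI_cmult[OF Lq2s]])
    fix x :: real assume x: "x \<in> Iopen"
    then have bx: "0 < b x" "b x \<le> ub" using bpos bnd by auto
    have "(hR x)^2 \<le> 2 * (b x * uR x / \<epsilon>^2)^2 + 2 * (q2 x)^2"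
      unfolding hR_def by (rule sq_diff_le)
    also have "(b x * uR x / \<epsilon>^2)^2 \<le> ub^2 / \<epsilon>^4 * (uR x)^2"
    proof -
      have "(b x)^2 \<le> ub^2" using bx by (intro power_mono) auto
      then have "(b x)^2 * (uR x)^2 \<le> ub^2 * (uR x)^2" by (rule mult_right_mono) simp
      then show ?thesis using e by (simp add: power_mult_distrib power_divide field_simps)
    qed
    finally show "(hR x)\<^sup>2 \<le> 2 * ub^2 / \<epsilon>^4 * (uR x)^2 + 2 * (q2 x)^2" by simp
  qed
  also have "\<dots> = 2 * ub^2 / \<epsilon>^4 * U + 2 * (LINT x:Iopen|lborel. (q2 x)^2)"
    unfolding U_def set_integral_add(2)[OF intI_cmult[OF L2I_sq_int[OF LuR], of "2 * ub^2 / \<epsilon>^4"] intI_cmult[OF Lq2s, of 2]]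
      set_integral_mult_right ..
  also have "\<dots> \<le> 2 * ub^2 / \<epsilon>^4 * (\<epsilon>^4 * Nq^2 / lb^2) + 2 * (LINT x:Iopen|lborel. (q2 x)^2)"
    using Ule by (intro add_right_mono mult_left_mono) auto
  also have "\<dots> = 2 * ub^2 * (LINT x:Iopen|lborel. (q2 x)^2) / lb^2 + 2 * (LINT x:Iopen|lborel. (q2 x)^2)"
    using e Lq2s unfolding Nq_def by (simp add: LINT_sq_nonneg)
  finally have hB: "(LINT x:Iopen|lborel. (hR x)^2) \<le> 2 * ub^2 * (LINT x:Iopen|lborel. (q2 x)^2) / lb^2 + 2 * (LINT x:Iopen|lborel. (q2 x)^2)" .
  have "enorm \<epsilon> b uR gR \<le> \<epsilon>^2 * Nq / sqrt lb" using sA en by simp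
  then show ?thesis
    using wR wR2 H10R cuR uRm1 uR1 L2le hB unfolding uR_def Nq_def by blast
qed



lemma qu_facts:
  assumes "quasi_uniform \<kappa> N xs"
  shows "1 \<le> N" "xs 0 = -1" "xs N = 1" "\<And>i. i < N \<Longrightarrow> xs i < xs (Suc i)"
    "\<And>i j. i < N \<Longrightarrow> j < N \<Longrightarrow> xs (Suc i) - xs i \<le> \<kappa> * (xs (Suc j) - xs j)"
  using assms unfolding quasi_uniform_def by auto

lemma xs_mono_aux:
  fixes xs :: "nat \<Rightarrow> real"
  assumes inc: "\<And>i. i < N \<Longrightarrow> xs i < xs (Suc i)"
  shows "i \<le> j \<Longrightarrow> j \<le> N \<Longrightarrow> xs i \<le> xs j"
proof (induction j)
  case 0 then show ?case by simp
next
  case (Suc j)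
  show ?case
  proof (cases "i = Suc j")
    case True then show ?thesis by simp
  next
    case False
    then have "i \<le> j" using Suc.prems by simp
    then have "xs i \<le> xs j" using Suc by simp
    also have "xs j < xs (Suc j)" using inc Suc.prems by simp
    finally show ?thesis by simp
  qed
qed

lemma xs_strict_aux:
  fixes xs :: "nat \<Rightarrow> real"
  assumes inc: "\<And>i. i < N \<Longrightarrow> xs i < xs (Suc i)"
  shows "i < j \<Longrightarrow> j \<le> N \<Longrightarrow> xs i < xs j"
proof -
  assume ij: "i < j" "j \<le> N"
  have "xs i < xs (Suc i)" using inc ij by simp
  also have "xs (Suc i) \<le> xs j" using xs_mono_aux[where N=N and xs=xs and i="Suc i" and j=j, OF inc] ij by simp
  finally show ?thesis .
qed

lemma xs_cover_aux:
  fixes xs :: "nat \<Rightarrow> real"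
  assumes inc: "\<And>i. i < N \<Longrightarrow> xs i < xs (Suc i)"
  shows "1 \<le> n \<Longrightarrow> n \<le> N \<Longrightarrow> xs 0 \<le> x \<Longrightarrow> x \<le> xs n \<Longrightarrow> \<exists>i<n. xs i \<le> x \<and> x \<le> xs (Suc i)"
proof (induction n)
  case 0 then show ?case by simp
next
  case (Suc n)
  show ?case
  proof (cases "x \<le> xs n \<and> 1 \<le> n")
    case True
    then obtain i where "i < n" "xs i \<le> x \<and> x \<le> xs (Suc i)" using Suc by auto
    then show ?thesis by (intro exI[of _ i]) auto
  next
    case False
    then have "xs n \<le> x \<or> n = 0" by auto
    then have "xs n \<le> x" using Suc.prems by auto
    then show ?thesis using Suc.prems by (intro exI[of _ n]) auto
  qed
qed

lemma telescope_xs: "(\<Sum>j<n. xs (Suc j) - xs j) = xs n - (xs 0 :: real)"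
  by (induction n) auto

lemma hmax_bound:
  assumes q: "quasi_uniform \<kappa> N xs" and i: "i < N"
  shows "xs (Suc i) - xs i \<le> 2 * \<kappa> / real N"
proof -
  note f = qu_facts[OF q]
  have "real N * (xs (Suc i) - xs i) = (\<Sum>j<N. xs (Suc i) - xs i)" by simp
  also have "\<dots> \<le> (\<Sum>j<N. \<kappa> * (xs (Suc j) - xs j))"
    by (rule sum_mono) (use f(5) i in auto)
  also have "\<dots> = \<kappa> * (xs N - xs 0)" by (simp add: sum_distrib_left[symmetric] telescope_xs)
  also have "\<dots> = 2 * \<kappa>" using f by simp
  finally show ?thesis using f(1) by (simp add: field_simps)
qed

lemma pl_interp_elem:
  fixes xs :: "nat \<Rightarrow> real"
  assumes inc: "\<And>i. i < N \<Longrightarrow> xs i < xs (Suc i)" and i: "i < N" and x: "xs i \<le> x" "x \<le> xs (Suc i)"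
  shows "pl_interp N xs v x = v (xs i) + (v (xs (Suc i)) - v (xs i)) * (x - xs i) / (xs (Suc i) - xs i)"
proof -
  have ex: "\<exists>i<N. xs i \<le> x \<and> x \<le> xs (Suc i)" using i x by blast
  define j where "j = (SOME j. j < N \<and> xs j \<le> x \<and> x \<le> xs (Suc j))"
  have j: "j < N" "xs j \<le> x" "x \<le> xs (Suc j)" using someI_ex[OF ex] unfolding j_def by auto
  have val: "pl_interp N xs v x = v (xs j) + (v (xs (Suc j)) - v (xs j)) * (x - xs j) / (xs (Suc j) - xs j)"
    unfolding pl_interp_def using ex by (simp add: j_def Let_def)
  have hj: "xs j < xs (Suc j)" using inc j by simp
  have hi: "xs i < xs (Suc i)" using inc i by simp
  show ?thesis
  proof (cases "j = i")
    case True then show ?thesis using val by simp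
  next
    case False
    show ?thesis
    proof (cases "j < i")
      case True
      have "xs (Suc j) \<le> xs i" using xs_mono_aux[where N=N and xs=xs and i="Suc j" and j=i, OF inc] True i by simp
      then have e: "x = xs i" "x = xs (Suc j)" using x j by auto
      then show ?thesis using val hj by simp
    next
      case False2: False
      then have "i < j" using False by simp
      have "xs (Suc i) \<le> xs j" using xs_mono_aux[where N=N and xs=xs and i="Suc i" and j=j, OF inc] \<open>i < j\<close> j by simp
      then have e: "x = xs (Suc i)" "x = xs j" using x j by auto
      then show ?thesis using val hi by simp
    qed
  qed
qed



lemma L2I_ind: "L2I (\<lambda>x. c * indicator {a..<b} x)"
  unfolding L2I_def
proof
  have m: "mI (indicator {a..<b} :: real \<Rightarrow> real)"
    unfolding set_borel_measurable_def by measurable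
  show "mI (\<lambda>x. c * indicator {a..<b} x)" by (rule mI_cmult[OF m])
  show "intI (\<lambda>x. (c * indicator {a..<b} x)\<^sup>2)"
  proof (rule intI_bound[OF intI_const[of "c^2"]])
    show "mI (\<lambda>x. (c * indicator {a..<b} x)\<^sup>2)" unfolding power2_eq_square
      by (rule mI_mult[OF mI_cmult[OF m] mI_cmult[OF m]])
    fix x show "\<bar>(c * indicator {a..<b} x)\<^sup>2\<bar> \<le> c\<^sup>2" by (simp add: indicator_def)
  qed
qed

lemma L2I_sum: "(\<And>i. i < n \<Longrightarrow> L2I (F i)) \<Longrightarrow> L2I (\<lambda>x. \<Sum>i<(n::nat). F i x)"
proof (induction n)
  case 0 then show ?case using L2I_const[of 0] by simp
next
  case (Suc n)
  have "L2I (\<lambda>x. (\<Sum>i<n. F i x) + F n x)" using Suc by (intro L2I_add) auto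
  then show ?case by simp
qed

lemma mI_abs: "mI F \<Longrightarrow> mI (\<lambda>x. \<bar>F x\<bar>)"
proof -
  assume a: "mI F"
  have e: "(\<lambda>x. indicator Iopen x *\<^sub>R \<bar>F x\<bar>) = (\<lambda>x. \<bar>indicator Iopen x *\<^sub>R F x\<bar>)"
    by (auto simp: indicator_def)
  show ?thesis using a unfolding set_borel_measurable_def e by measurable
qed

lemma mI_ind_oo: "mI (indicator {a<..<c} :: real \<Rightarrow> real)"
  unfolding set_borel_measurable_def by measurable

lemma CS_sub:
  assumes F: "L2I F" and a: "-1 \<le> a" and ac: "a \<le> c" and c: "c \<le> 1"
  shows "(integral {a..c} (\<lambda>y. \<bar>F y\<bar>))^2 \<le> (c - a) * integral {a..c} (\<lambda>y. (F y)^2)"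
proof -
  let ?g = "\<lambda>y. indicator {a<..<c} y :: real"
  let ?f = "\<lambda>y. indicator {a<..<c} y * \<bar>F y\<bar>"
  have mF: "mI F" using F by (simp add: L2I_def)
  have Lg: "L2I ?g"
    unfolding L2I_def
  proof
    show "mI ?g" by (rule mI_ind_oo)
    show "intI (\<lambda>x. (?g x)\<^sup>2)"
    proof (rule intI_bound[OF intI_const[of 1]])
      show "mI (\<lambda>x. (?g x)\<^sup>2)" unfolding power2_eq_square by (rule mI_mult[OF mI_ind_oo mI_ind_oo])
    qed (simp add: indicator_def)
  qed
  have Lf: "L2I ?f"
    unfolding L2I_def
  proof
    have mf: "mI ?f" by (rule mI_mult[OF mI_ind_oo mI_abs[OF mF]])
    show "mI ?f" by (rule mf)
    show "intI (\<lambda>x. (?f x)\<^sup>2)"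
    proof (rule intI_bound[OF L2I_sq_int[OF F]])
      show "mI (\<lambda>x. (?f x)\<^sup>2)" unfolding power2_eq_square by (rule mI_mult[OF mf mf])
    qed (simp add: indicator_def)
  qed
  have sub: "{a<..<c} \<subseteq> Iopen" using a c by auto
  have conv: "(LINT x:Iopen|lborel. indicator {a<..<c} x * H x) = (LINT x:{a<..<c}|lborel. H x)" for H :: "real \<Rightarrow> real"
  proof -
    have "(\<lambda>x. indicator Iopen x *\<^sub>R (indicator {a<..<c} x * H x)) = (\<lambda>x. indicator {a<..<c} x *\<^sub>R H x)"
    proof (rule ext)
      fix x
      show "indicator Iopen x *\<^sub>R (indicator {a<..<c} x * H x) = indicator {a<..<c} x *\<^sub>R H x"
      proof (cases "x \<in> {a<..<c}")
        case True then have "x \<in> Iopen" using sub by blast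
        with True show ?thesis by simp
      qed simp
    qed
    then show ?thesis unfolding set_lebesgue_integral_def by simp
  qed
  have absF: "intI (\<lambda>y. \<bar>F y\<bar>)" by (rule set_integrable_abs[OF L2I_intI[OF F]])
  have e1: "(LINT x:Iopen|lborel. ?f x * ?g x) = integral {a..c} (\<lambda>y. \<bar>F y\<bar>)"
  proof -
    have "(LINT x:Iopen|lborel. ?f x * ?g x) = (LINT x:Iopen|lborel. indicator {a<..<c} x * \<bar>F x\<bar>)"
      by (rule intI_integral_cong) (simp add: indicator_def)
    also have "\<dots> = (LINT x:{a<..<c}|lborel. \<bar>F x\<bar>)" by (rule conv)
    also have "\<dots> = integral {a..c} (\<lambda>y. \<bar>F y\<bar>)" by (rule LINT_HK[OF absF a c])
    finally show ?thesis .
  qed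
  have e2: "(LINT x:Iopen|lborel. (?f x)^2) = integral {a..c} (\<lambda>y. (F y)^2)"
  proof -
    have "(LINT x:Iopen|lborel. (?f x)^2) = (LINT x:Iopen|lborel. indicator {a<..<c} x * (F x)^2)"
      by (rule intI_integral_cong) (simp add: indicator_def)
    also have "\<dots> = (LINT x:{a<..<c}|lborel. (F x)^2)" by (rule conv)
    also have "\<dots> = integral {a..c} (\<lambda>y. (F y)^2)" by (rule LINT_HK[OF L2I_sq_int[OF F] a c])
    finally show ?thesis .
  qed
  have e3: "(LINT x:Iopen|lborel. (?g x)^2) = c - a"
  proof -
    have "(LINT x:Iopen|lborel. (?g x)^2) = (LINT x:Iopen|lborel. indicator {a<..<c} x * 1)"
      by (rule intI_integral_cong) (simp add: indicator_def)
    also have "\<dots> = (LINT x:{a<..<c}|lborel. (1::real))" by (rule conv)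
    also have "\<dots> = c - a" by (rule LINT_one[OF a ac c])
    finally show ?thesis .
  qed
  show ?thesis using CS_I[OF Lf Lg] unfolding e1 e2 e3 by (simp add: mult.commute)
qed

context
  fixes uR G hR :: "real \<Rightarrow> real" and N :: nat and xs :: "nat \<Rightarrow> real"
  assumes inc: "\<And>i. i < N \<Longrightarrow> xs i < xs (Suc i)" and x0: "xs 0 = -1" and xN: "xs N = 1" and N1: "1 \<le> N"
    and cG: "continuous_on {-1..1} G" and LhR: "L2I hR"
    and repG: "\<And>x. x \<in> {-1..1} \<Longrightarrow> G x = G (-1) + Pr hR x"
    and repU: "\<And>x. x \<in> {-1..1} \<Longrightarrow> uR x = Pr G x"
begin

definition sI :: "nat \<Rightarrow> real" where
  "sI i = (uR (xs (Suc i)) - uR (xs i)) / (xs (Suc i) - xs i)"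

definition sl :: "real \<Rightarrow> real" where
  "sl x = (\<Sum>i<N. sI i * indicator {xs i..<xs (Suc i)} x)"

definition gw :: "real \<Rightarrow> real" where
  "gw x = G x - sl x"

lemma xs_mono: "i \<le> j \<Longrightarrow> j \<le> N \<Longrightarrow> xs i \<le> xs j"
  by (rule xs_mono_aux[where N=N and xs=xs, OF inc])

lemma xs_range: "i \<le> N \<Longrightarrow> xs i \<in> {-1..1}"
  using xs_mono[of 0 i] xs_mono[of i N] x0 xN by auto

lemma elem_sub: "i < N \<Longrightarrow> {xs i..xs (Suc i)} \<subseteq> {-1..1}"
  using xs_range[of i] xs_range[of "Suc i"] by auto

lemma sl_on:
  assumes i: "i < N" and x: "xs i \<le> x" "x < xs (Suc i)"
  shows "sl x = sI i"
proof -
  have "(\<Sum>j<N. sI j * indicator {xs j..<xs (Suc j)} x) = (\<Sum>j<N. if j = i then sI i else 0)"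
  proof (rule sum.cong[OF refl])
    fix j assume j: "j \<in> {..<N}"
    show "sI j * indicator {xs j..<xs (Suc j)} x = (if j = i then sI i else 0)"
    proof (cases "j = i")
      case True then show ?thesis using x by simp
    next
      case False
      have "x \<notin> {xs j..<xs (Suc j)}"
      proof (cases "j < i")
        case True
        then have "xs (Suc j) \<le> xs i" using xs_mono[of "Suc j" i] i by simp
        then show ?thesis using x by auto
      next
        case False2: False
        then have "Suc i \<le> j" using False by simp
        then have "xs (Suc i) \<le> xs j" using xs_mono[of "Suc i" j] j by simp
        then show ?thesis using x by auto
      qed
      then show ?thesis using False by simp
    qed
  qed
  also have "\<dots> = sI i" using i by simp
  finally show ?thesis unfolding sl_def .
qed

lemma L2_sl: "L2I sl"
  unfolding sl_def[abs_def] by (rule L2I_sum) (rule L2I_ind)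

lemma L2_gw: "L2I gw"
  unfolding gw_def[abs_def] by (rule L2I_diff[OF L2I_cont[OF cG] L2_sl])

lemma int_gw: "intI gw" by (rule L2I_intI[OF L2_gw])

lemma Gint: "-1 \<le> a \<Longrightarrow> c \<le> 1 \<Longrightarrow> G integrable_on {a..c}"
  by (rule integrable_continuous_interval) (rule continuous_on_subset[OF cG], auto)

lemma Pr_gw_elem:
  assumes i: "i < N" and x: "xs i \<le> x" "x \<le> xs (Suc i)"
  shows "Pr gw x = Pr gw (xs i) + (uR x - uR (xs i)) - sI i * (x - xs i)"
    and "integral {xs i..x} gw = integral {xs i..x} (\<lambda>y. G y - sI i)"
proof -
  have r: "xs i \<in> {-1..1}" "xs (Suc i) \<in> {-1..1}" using xs_range i by auto
  then have xr: "x \<in> {-1..1}" using x by auto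
  have "integral {xs i..x} gw = integral {xs i<..<x} gw" by (rule integral_open_interval_real)
  also have "\<dots> = integral {xs i<..<x} (\<lambda>y. G y - sI i)"
  proof (rule integral_cong)
    fix y assume "y \<in> {xs i<..<x}"
    then have "xs i \<le> y" "y < xs (Suc i)" using x by auto
    then show "gw y = G y - sI i" using sl_on[OF i] by (simp add: gw_def)
  qed
  also have "\<dots> = integral {xs i..x} (\<lambda>y. G y - sI i)" by (rule integral_open_interval_real[symmetric])
  finally show eq: "integral {xs i..x} gw = integral {xs i..x} (\<lambda>y. G y - sI i)" .
  have "integral {xs i..x} (\<lambda>y. G y - sI i) = integral {xs i..x} G - integral {xs i..x} (\<lambda>y. sI i)"
    by (rule Henstock_Kurzweil_Integration.integral_diff) (use Gint r xr in auto)
  also have "integral {xs i..x} G = Pr G x - Pr G (xs i)"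
    using Pr_split[OF cont_intI[OF cG], of "xs i" x] r xr x by simp
  also have "Pr G x - Pr G (xs i) = uR x - uR (xs i)" using repU r xr by simp
  also have "integral {xs i..x} (\<lambda>y. sI i) = sI i * (x - xs i)" using x by simp
  finally have "integral {xs i..x} gw = uR x - uR (xs i) - sI i * (x - xs i)" using eq by simp
  then show "Pr gw x = Pr gw (xs i) + (uR x - uR (xs i)) - sI i * (x - xs i)"
    using Pr_split[OF int_gw, of "xs i" x] r xr x by simp
qed

lemma Pr_gw_nodes: "i \<le> N \<Longrightarrow> Pr gw (xs i) = 0"
proof (induction i)
  case 0 then show ?case using x0 by simp
next
  case (Suc i)
  then have i: "i < N" by simp
  have h: "xs i < xs (Suc i)" using inc i by simp
  have "Pr gw (xs (Suc i)) = Pr gw (xs i) + (uR (xs (Suc i)) - uR (xs i)) - sI i * (xs (Suc i) - xs i)"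
    by (rule Pr_gw_elem(1)[OF i]) (use h in auto)
  also have "\<dots> = 0" using Suc.IH i h by (simp add: sI_def)
  finally show ?case .
qed

lemma w_rep:
  assumes x: "x \<in> {-1..1}"
  shows "uR x - pl_interp N xs uR x = Pr gw x"
proof -
  obtain i where i: "i < N" "xs i \<le> x" "x \<le> xs (Suc i)"
    using xs_cover_aux[where N=N and xs=xs and n=N and x=x, OF inc] N1 x x0 xN by auto
  have h: "xs i < xs (Suc i)" using inc i by simp
  have "pl_interp N xs uR x = uR (xs i) + (uR (xs (Suc i)) - uR (xs i)) * (x - xs i) / (xs (Suc i) - xs i)"
    by (rule pl_interp_elem[OF inc i])
  moreover have "Pr gw x = (uR x - uR (xs i)) - sI i * (x - xs i)"
    using Pr_gw_elem(1)[OF i] Pr_gw_nodes[of i] i by simp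
  ultimately show ?thesis by (simp add: sI_def)
qed

lemma wd_w: "L2_weak_deriv (\<lambda>x. uR x - pl_interp N xs uR x) gw"
  by (rule wd_Pr[OF L2_gw, where c=0]) (use w_rep in auto)


definition Ai :: "nat \<Rightarrow> real" where
  "Ai i = integral {xs i..xs (Suc i)} (\<lambda>y. \<bar>hR y\<bar>)"

lemma absh: "intI (\<lambda>y. \<bar>hR y\<bar>)" by (rule set_integrable_abs[OF L2I_intI[OF LhR]])

lemma G_diff1:
  assumes i: "i < N" and yz: "xs i \<le> z" "z \<le> y" "y \<le> xs (Suc i)"
  shows "\<bar>G y - G z\<bar> \<le> Ai i"
proof -
  have r: "xs i \<in> {-1..1}" "xs (Suc i) \<in> {-1..1}" using xs_range i by auto
  have hi: "intI hR" by (rule L2I_intI[OF LhR])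
  have "G y - G z = Pr hR y - Pr hR z" using repG[of y] repG[of z] r yz by simp
  also have "\<dots> = integral {z..y} hR" using Pr_split[OF hi, of z y] r yz by simp
  finally have e: "G y - G z = integral {z..y} hR" .
  have "norm (integral {z..y} hR) \<le> integral {z..y} (\<lambda>y. \<bar>hR y\<bar>)"
    by (rule integral_norm_bound_integral) (use intI_HK_sub[OF hi] intI_HK_sub[OF absh] r yz in auto)
  also have "\<dots> \<le> Ai i" unfolding Ai_def
    by (rule integral_subset_le) (use intI_HK_sub[OF absh] r yz in auto)
  finally show ?thesis using e by simp
qed

lemma G_diff:
  assumes i: "i < N" and y: "y \<in> {xs i..xs (Suc i)}" and z: "z \<in> {xs i..xs (Suc i)}"
  shows "\<bar>G y - G z\<bar> \<le> Ai i"
proof (cases "z \<le> y")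
  case True then show ?thesis using G_diff1[OF i] y z by auto
next
  case False
  then have "\<bar>G z - G y\<bar> \<le> Ai i" using G_diff1[OF i] y z by auto
  then show ?thesis by (simp add: abs_minus_commute)
qed

lemma G_s:
  assumes i: "i < N" and y: "y \<in> {xs i..xs (Suc i)}"
  shows "\<bar>G y - sI i\<bar> \<le> Ai i"
proof -
  let ?a = "xs i" and ?c = "xs (Suc i)"
  have h: "?a < ?c" using inc i by simp
  have r: "?a \<in> {-1..1}" "?c \<in> {-1..1}" using xs_range i by auto
  have GI: "G integrable_on {?a..?c}" using Gint r by auto
  have "uR ?c - uR ?a = Pr G ?c - Pr G ?a" using repU r by simp
  also have "\<dots> = integral {?a..?c} G" using Pr_split[OF cont_intI[OF cG], of ?a ?c] r h by simp
  finally have s: "sI i = integral {?a..?c} G / (?c - ?a)" by (simp add: sI_def)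
  have iy: "integral {?a..?c} (\<lambda>z. G y - G z) = (?c - ?a) * G y - integral {?a..?c} G"
    using Henstock_Kurzweil_Integration.integral_diff[OF integrable_const_ivl GI, of "G y"] h by simp
  have "norm (integral {?a..?c} (\<lambda>z. G y - G z)) \<le> integral {?a..?c} (\<lambda>z. Ai i)"
  proof (rule integral_norm_bound_integral)
    show "(\<lambda>z. G y - G z) integrable_on {?a..?c}" by (rule integrable_diff[OF integrable_const_ivl GI])
    show "(\<lambda>z. Ai i) integrable_on {?a..?c}" by (rule integrable_const_ivl)
    fix z assume "z \<in> {?a..?c}"
    then show "norm (G y - G z) \<le> Ai i" using G_diff[OF i y] by simp
  qed
  also have "\<dots> = (?c - ?a) * Ai i" using h by simp
  finally have "\<bar>(?c - ?a) * G y - integral {?a..?c} G\<bar> \<le> (?c - ?a) * Ai i" using iy by simp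
  then have B: "\<bar>(?c - ?a) * G y - integral {?a..?c} G\<bar> / (?c - ?a) \<le> Ai i"
    using h by (simp add: divide_le_eq mult.commute)
  have eq: "G y - sI i = ((?c - ?a) * G y - integral {?a..?c} G) / (?c - ?a)"
    using h by (simp add: s diff_divide_distrib)
  show ?thesis unfolding eq using B h by (simp add: abs_divide)
qed

lemma gw_bound:
  assumes i: "i < N" and y: "xs i < y" "y < xs (Suc i)"
  shows "\<bar>gw y\<bar> \<le> Ai i"
  using G_s[OF i, of y] sl_on[OF i, of y] y by (simp add: gw_def)

lemma W_bound:
  assumes i: "i < N" and y: "xs i \<le> y" "y \<le> xs (Suc i)"
  shows "\<bar>Pr gw y\<bar> \<le> (xs (Suc i) - xs i) * Ai i"
proof -
  have r: "xs i \<in> {-1..1}" "xs (Suc i) \<in> {-1..1}" using xs_range i by auto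
  have A0: "0 \<le> Ai i" unfolding Ai_def
    by (rule Henstock_Kurzweil_Integration.integral_nonneg) (use intI_HK_sub[OF absh] r in auto)
  have "Pr gw y = integral {xs i..y} gw"
    using Pr_split[OF int_gw, of "xs i" y] Pr_gw_nodes[of i] r y i by simp
  also have "\<dots> = integral {xs i..y} (\<lambda>z. G z - sI i)" by (rule Pr_gw_elem(2)[OF i y])
  finally have e: "Pr gw y = integral {xs i..y} (\<lambda>z. G z - sI i)" .
  have "norm (integral {xs i..y} (\<lambda>z. G z - sI i)) \<le> integral {xs i..y} (\<lambda>z. Ai i)"
  proof (rule integral_norm_bound_integral)
    show "(\<lambda>z. G z - sI i) integrable_on {xs i..y}" using Gint r y by (intro integrable_diff) auto
    show "(\<lambda>z. Ai i) integrable_on {xs i..y}" by (rule integrable_const_ivl)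
    fix z assume "z \<in> {xs i..y}"
    then show "norm (G z - sI i) \<le> Ai i" using G_s[OF i, of z] y by auto
  qed
  also have "\<dots> = (y - xs i) * Ai i" using y by simp
  also have "\<dots> \<le> (xs (Suc i) - xs i) * Ai i" using y A0 by (intro mult_right_mono) auto
  finally show ?thesis using e by simp
qed


lemma sqint_elem: "L2I F \<Longrightarrow> i < N \<Longrightarrow> (\<lambda>y. (F y)^2) integrable_on {xs i..xs (Suc i)}"
  using intI_HK_sub[OF L2I_sq_int, of F "xs i" "xs (Suc i)"] xs_range[of i] xs_range[of "Suc i"] by auto

lemma hR_elem_nonneg: "i < N \<Longrightarrow> 0 \<le> integral {xs i..xs (Suc i)} (\<lambda>y. (hR y)^2)"
  by (rule Henstock_Kurzweil_Integration.integral_nonneg[OF sqint_elem[OF LhR]]) auto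

lemma Ai_sq: "i < N \<Longrightarrow> (Ai i)^2 \<le> (xs (Suc i) - xs i) * integral {xs i..xs (Suc i)} (\<lambda>y. (hR y)^2)"
  unfolding Ai_def
  by (rule CS_sub[OF LhR]) (use xs_range[of i] xs_range[of "Suc i"] inc[of i] in auto)

lemma Ai_nonneg: "i < N \<Longrightarrow> 0 \<le> Ai i"
  unfolding Ai_def
  by (rule Henstock_Kurzweil_Integration.integral_nonneg)
     (use intI_HK_sub[OF absh] xs_range[of i] xs_range[of "Suc i"] in auto)

lemma E_gw:
  assumes i: "i < N"
  shows "integral {xs i..xs (Suc i)} (\<lambda>y. (gw y)^2) \<le> (xs (Suc i) - xs i)^2 * integral {xs i..xs (Suc i)} (\<lambda>y. (hR y)^2)"
proof -
  let ?a = "xs i" and ?c = "xs (Suc i)"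
  have h: "?a < ?c" using inc i by simp
  have gi: "(\<lambda>y. (gw y)^2) integrable_on {?a..?c}" by (rule sqint_elem[OF L2_gw i])
  have "integral {?a..?c} (\<lambda>y. (gw y)^2) = integral {?a<..<?c} (\<lambda>y. (gw y)^2)"
    by (rule integral_open_interval_real)
  also have "\<dots> \<le> integral {?a<..<?c} (\<lambda>y. (Ai i)^2)"
  proof (rule integral_le)
    show "(\<lambda>y. (gw y)^2) integrable_on {?a<..<?c}" using gi integrable_on_open_interval_real by blast
    show "(\<lambda>y. (Ai i)^2) integrable_on {?a<..<?c}" using integrable_on_open_interval_real integrable_const_ivl by blast
    fix y assume "y \<in> {?a<..<?c}"
    then have "\<bar>gw y\<bar> \<le> Ai i" using gw_bound[OF i] by auto
    then have "\<bar>gw y\<bar>^2 \<le> (Ai i)^2" by (rule power_mono) simp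
    then show "(gw y)^2 \<le> (Ai i)^2" by simp
  qed
  also have "\<dots> = (?c - ?a) * (Ai i)^2"
    using integral_open_interval_real[of ?a ?c "\<lambda>y. (Ai i)^2"] h by simp
  also have "\<dots> \<le> (?c - ?a) * ((?c - ?a) * integral {?a..?c} (\<lambda>y. (hR y)^2))"
    using Ai_sq[OF i] h by (intro mult_left_mono) auto
  finally show ?thesis by (simp add: power2_eq_square mult.assoc)
qed

lemma cont_Prgw: "continuous_on {-1..1} (Pr gw)" by (rule Pr_cont[OF int_gw])

lemma E_W:
  assumes i: "i < N"
  shows "integral {xs i..xs (Suc i)} (\<lambda>y. (Pr gw y)^2) \<le> (xs (Suc i) - xs i)^4 * integral {xs i..xs (Suc i)} (\<lambda>y. (hR y)^2)"
proof -
  let ?a = "xs i" and ?c = "xs (Suc i)"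
  have h: "?a < ?c" using inc i by simp
  have gi: "(\<lambda>y. (Pr gw y)^2) integrable_on {?a..?c}"
    by (rule integrable_continuous_interval, rule continuous_on_subset[of "{-1..1}"])
       (use cont_Prgw elem_sub[OF i] in \<open>auto intro!: continuous_intros\<close>)
  have "integral {?a..?c} (\<lambda>y. (Pr gw y)^2) \<le> integral {?a..?c} (\<lambda>y. ((?c - ?a) * Ai i)^2)"
  proof (rule integral_le[OF gi integrable_const_ivl])
    fix y assume "y \<in> {?a..?c}"
    then have "\<bar>Pr gw y\<bar> \<le> (?c - ?a) * Ai i" using W_bound[OF i] by auto
    then have "\<bar>Pr gw y\<bar>^2 \<le> ((?c - ?a) * Ai i)^2" by (rule power_mono) simp
    then show "(Pr gw y)^2 \<le> ((?c - ?a) * Ai i)^2" by simp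
  qed
  also have "\<dots> = (?c - ?a)^3 * (Ai i)^2" using h by (simp add: power2_eq_square power3_eq_cube)
  also have "\<dots> \<le> (?c - ?a)^3 * ((?c - ?a) * integral {?a..?c} (\<lambda>y. (hR y)^2))"
    using Ai_sq[OF i] h by (intro mult_left_mono) auto
  finally show ?thesis by (simp add: power_numeral_reduce mult.assoc)
qed

lemma sum_elems:
  fixes F :: "real \<Rightarrow> real"
  assumes F: "F integrable_on {-1..1}"
  shows "n \<le> N \<Longrightarrow> integral {xs 0..xs n} F = (\<Sum>i<n. integral {xs i..xs (Suc i)} F)"
proof (induction n)
  case 0 then show ?case by simp
next
  case (Suc n)
  have r: "xs 0 \<in> {-1..1}" "xs n \<in> {-1..1}" "xs (Suc n) \<in> {-1..1}" using xs_range Suc.prems by auto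
  have m: "xs 0 \<le> xs n" "xs n \<le> xs (Suc n)" using xs_mono[of 0 n] xs_mono[of n "Suc n"] Suc.prems by auto
  have Fi: "F integrable_on {xs 0..xs (Suc n)}" by (rule integrable_on_subinterval[OF F]) (use r in auto)
  have "integral {xs 0..xs (Suc n)} F = integral {xs 0..xs n} F + integral {xs n..xs (Suc n)} F"
    using Henstock_Kurzweil_Integration.integral_combine[where a="xs 0" and c="xs n" and b="xs (Suc n)" and f=F] m Fi by simp
  then show ?case using Suc by simp
qed

lemma totals:
  assumes H: "\<And>i. i < N \<Longrightarrow> xs (Suc i) - xs i \<le> Hm"
  shows "integral {-1..1} (\<lambda>y. (gw y)^2) \<le> Hm^2 * integral {-1..1} (\<lambda>y. (hR y)^2)"
    and "integral {-1..1} (\<lambda>y. (Pr gw y)^2) \<le> Hm^4 * integral {-1..1} (\<lambda>y. (hR y)^2)"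
proof -
  have hI: "(\<lambda>y. (hR y)^2) integrable_on {-1..1}" by (rule intI_HK[OF L2I_sq_int[OF LhR]])
  have gI: "(\<lambda>y. (gw y)^2) integrable_on {-1..1}" by (rule intI_HK[OF L2I_sq_int[OF L2_gw]])
  have wI: "(\<lambda>y. (Pr gw y)^2) integrable_on {-1..1}"
    by (rule integrable_continuous_interval) (use cont_Prgw in \<open>intro continuous_intros\<close>)
  have hpos: "0 < xs (Suc i) - xs i" if "i < N" for i using inc that by simp
  have sh: "integral {-1..1} (\<lambda>y. (hR y)^2) = (\<Sum>i<N. integral {xs i..xs (Suc i)} (\<lambda>y. (hR y)^2))"
    using sum_elems[OF hI, of N] x0 xN by simp
  have "integral {-1..1} (\<lambda>y. (gw y)^2) = (\<Sum>i<N. integral {xs i..xs (Suc i)} (\<lambda>y. (gw y)^2))"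
    using sum_elems[OF gI, of N] x0 xN by simp
  also have "\<dots> \<le> (\<Sum>i<N. Hm^2 * integral {xs i..xs (Suc i)} (\<lambda>y. (hR y)^2))"
  proof (rule sum_mono)
    fix i assume i: "i \<in> {..<N}"
    then have "(xs (Suc i) - xs i)^2 \<le> Hm^2" using H hpos by (intro power_mono) (auto simp: less_imp_le)
    then have "(xs (Suc i) - xs i)^2 * integral {xs i..xs (Suc i)} (\<lambda>y. (hR y)^2) \<le> Hm^2 * integral {xs i..xs (Suc i)} (\<lambda>y. (hR y)^2)"
      using hR_elem_nonneg i by (intro mult_right_mono) auto
    then show "integral {xs i..xs (Suc i)} (\<lambda>y. (gw y)^2) \<le> Hm^2 * integral {xs i..xs (Suc i)} (\<lambda>y. (hR y)^2)"
      using E_gw i by (meson lessThan_iff order_trans)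
  qed
  also have "\<dots> = Hm^2 * integral {-1..1} (\<lambda>y. (hR y)^2)" unfolding sh by (simp add: sum_distrib_left)
  finally show "integral {-1..1} (\<lambda>y. (gw y)^2) \<le> Hm^2 * integral {-1..1} (\<lambda>y. (hR y)^2)" .
  have "integral {-1..1} (\<lambda>y. (Pr gw y)^2) = (\<Sum>i<N. integral {xs i..xs (Suc i)} (\<lambda>y. (Pr gw y)^2))"
    using sum_elems[OF wI, of N] x0 xN by simp
  also have "\<dots> \<le> (\<Sum>i<N. Hm^4 * integral {xs i..xs (Suc i)} (\<lambda>y. (hR y)^2))"
  proof (rule sum_mono)
    fix i assume i: "i \<in> {..<N}"
    then have "(xs (Suc i) - xs i)^4 \<le> Hm^4" using H hpos by (intro power_mono) (auto simp: less_imp_le)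
    then have "(xs (Suc i) - xs i)^4 * integral {xs i..xs (Suc i)} (\<lambda>y. (hR y)^2) \<le> Hm^4 * integral {xs i..xs (Suc i)} (\<lambda>y. (hR y)^2)"
      using hR_elem_nonneg i by (intro mult_right_mono) auto
    then show "integral {xs i..xs (Suc i)} (\<lambda>y. (Pr gw y)^2) \<le> Hm^4 * integral {xs i..xs (Suc i)} (\<lambda>y. (hR y)^2)"
      using E_W i by (meson lessThan_iff order_trans)
  qed
  also have "\<dots> = Hm^4 * integral {-1..1} (\<lambda>y. (hR y)^2)" unfolding sh by (simp add: sum_distrib_left)
  finally show "integral {-1..1} (\<lambda>y. (Pr gw y)^2) \<le> Hm^4 * integral {-1..1} (\<lambda>y. (hR y)^2)" .
qed


lemma interp_final:
  assumes H: "\<And>i. i < N \<Longrightarrow> xs (Suc i) - xs i \<le> Hm"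
  shows "\<exists>g. L2_weak_deriv (\<lambda>x. uR x - pl_interp N xs uR x) g
    \<and> (LINT x:Iopen|lborel. (g x)^2) \<le> Hm^2 * (LINT x:Iopen|lborel. (hR x)^2)
    \<and> (LINT x:Iopen|lborel. (uR x - pl_interp N xs uR x)^2) \<le> Hm^4 * (LINT x:Iopen|lborel. (hR x)^2)"
proof (intro exI conjI)
  show "L2_weak_deriv (\<lambda>x. uR x - pl_interp N xs uR x) gw" by (rule wd_w)
  have eh: "(LINT x:Iopen|lborel. (hR x)^2) = integral {-1..1} (\<lambda>y. (hR y)^2)"
    using LINT_I_Pr[OF L2I_sq_int[OF LhR]] by (simp add: Pr_def)
  have eg: "(LINT x:Iopen|lborel. (gw x)^2) = integral {-1..1} (\<lambda>y. (gw y)^2)"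
    using LINT_I_Pr[OF L2I_sq_int[OF L2_gw]] by (simp add: Pr_def)
  have ew: "(LINT x:Iopen|lborel. (uR x - pl_interp N xs uR x)^2) = integral {-1..1} (\<lambda>y. (Pr gw y)^2)"
  proof -
    have "(LINT x:Iopen|lborel. (uR x - pl_interp N xs uR x)^2) = (LINT x:Iopen|lborel. (Pr gw x)^2)"
    proof (rule intI_integral_cong)
      fix x :: real assume "x \<in> Iopen"
      then have "x \<in> {-1..1}" by auto
      then show "(uR x - pl_interp N xs uR x)^2 = (Pr gw x)^2" using w_rep by simp
    qed
    also have "\<dots> = integral {-1..1} (\<lambda>y. (Pr gw y)^2)"
      using LINT_I_Pr[OF cont_intI] cont_Prgw by (simp add: Pr_def continuous_intros)
    finally show ?thesis .
  qed
  show "(LINT x:Iopen|lborel. (gw x)^2) \<le> Hm^2 * (LINT x:Iopen|lborel. (hR x)^2)"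
    unfolding eg eh by (rule totals(1)[OF H])
  show "(LINT x:Iopen|lborel. (uR x - pl_interp N xs uR x)^2) \<le> Hm^4 * (LINT x:Iopen|lborel. (hR x)^2)"
    unfolding ew eh by (rule totals(2)[OF H])
qed

end



lemma final_arith:
  fixes \<epsilon> \<kappa> ub HB A B Hm E :: real and N :: nat
  assumes e: "0 < \<epsilon>" "\<epsilon> \<le> 1" and N: "1 \<le> N" and k: "1 \<le> \<kappa>" and ub: "0 \<le> ub" and HB: "0 \<le> HB"
    and Hm: "Hm = 2 * \<kappa> / real N" and A: "0 \<le> A" "A \<le> Hm^2 * HB" and B: "0 \<le> B" "B \<le> Hm^4 * HB"
    and E: "0 \<le> E" "E \<le> \<epsilon>^2 * A + ub * B"
  shows "sqrt E \<le> sqrt ((4 * \<kappa>^2 + 16 * ub * \<kappa>^4) * HB) / real N"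
    and "real N \<le> 1 / \<epsilon> \<Longrightarrow> sqrt E \<le> sqrt ((4 * \<kappa>^2 + 16 * ub * \<kappa>^4) * HB) / (real N)^2"
proof -
  define n where "n = real N"
  have n1: "1 \<le> n" using N by (simp add: n_def)
  have n0: "0 < n" using n1 by simp
  define K where "K = 4 * \<kappa>^2 + 16 * ub * \<kappa>^4"
  have K0: "0 \<le> K" unfolding K_def using ub by simp
  have H2: "Hm^2 = 4 * \<kappa>^2 / n^2" using Hm by (simp add: n_def power_divide)
  have H4: "Hm^4 = 16 * \<kappa>^4 / n^4" using Hm by (simp add: n_def power_divide)
  have e2: "\<epsilon>^2 \<le> 1" using e by (simp add: power_le_one)
  have n24: "1 / n^4 \<le> 1 / n^2"
  proof -
    have "n^2 \<le> n^4" using n1 by (simp add: power_increasing)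
    then show ?thesis using n0 by (simp add: frac_le)
  qed
  have t1: "\<epsilon>^2 * A \<le> 4 * \<kappa>^2 * HB / n^2"
  proof -
    have "\<epsilon>^2 * A \<le> 1 * A" using e2 A(1) by (intro mult_right_mono) auto
    also have "\<dots> \<le> 4 * \<kappa>^2 / n^2 * HB" using A(2) H2 by simp
    finally show ?thesis by simp
  qed
  have t2: "ub * B \<le> 16 * ub * \<kappa>^4 * HB / n^4"
  proof -
    have "ub * B \<le> ub * (16 * \<kappa>^4 / n^4 * HB)" using B(2) H4 ub by (intro mult_left_mono) auto
    also have "ub * (16 * \<kappa>^4 / n^4 * HB) = 16 * ub * \<kappa>^4 * HB / n^4" by (simp add: field_simps)
    finally show ?thesis .
  qed
  have t2': "16 * ub * \<kappa>^4 * HB / n^4 \<le> 16 * ub * \<kappa>^4 * HB / n^2"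
  proof -
    have "0 \<le> 16 * ub * \<kappa>^4 * HB" using ub HB by simp
    then have "16 * ub * \<kappa>^4 * HB * (1 / n^4) \<le> 16 * ub * \<kappa>^4 * HB * (1 / n^2)"
      using n24 by (intro mult_left_mono) auto
    then show ?thesis by simp
  qed
  have "E \<le> K * HB / n^2" using E(2) t1 t2 t2' by (simp add: K_def add_divide_distrib distrib_right)
  then have "sqrt E \<le> sqrt (K * HB / n^2)" by (rule real_sqrt_le_mono)
  also have "\<dots> = sqrt (K * HB) / n" using n0 by (simp add: real_sqrt_divide)
  finally show "sqrt E \<le> sqrt ((4 * \<kappa>^2 + 16 * ub * \<kappa>^4) * HB) / real N" by (simp add: K_def n_def)
  assume Ne: "real N \<le> 1 / \<epsilon>"
  have "\<epsilon> * n \<le> 1" using Ne e by (simp add: n_def field_simps)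
  then have "(\<epsilon> * n)^2 \<le> 1" using e n0 by (simp add: power_le_one)
  then have e2n: "\<epsilon>^2 \<le> 1 / n^2" using n0 by (simp add: power_mult_distrib field_simps)
  have t1': "\<epsilon>^2 * A \<le> 4 * \<kappa>^2 * HB / n^4"
  proof -
    have "\<epsilon>^2 * A \<le> 1 / n^2 * (4 * \<kappa>^2 / n^2 * HB)" using e2n A H2 by (intro mult_mono) auto
    then show ?thesis by (simp add: power_numeral_reduce field_simps)
  qed
  have "E \<le> K * HB / n^4" using E(2) t1' t2 by (simp add: K_def add_divide_distrib distrib_right)
  then have "sqrt E \<le> sqrt (K * HB / n^4)" by (rule real_sqrt_le_mono)
  also have "sqrt (K * HB / n^4) = sqrt (K * HB) / n^2"
  proof -
    have "sqrt (n^4) = n^2" using n0 by (metis power2_eq_square power_mult_numeral real_sqrt_abs2 abs_of_nonneg less_imp_le zero_le_power2 num_double numeral_times_numeral semiring_norm(2))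
    then show ?thesis by (simp add: real_sqrt_divide)
  qed
  finally show "sqrt E \<le> sqrt ((4 * \<kappa>^2 + 16 * ub * \<kappa>^4) * HB) / (real N)^2" by (simp add: K_def n_def)
qed


theorem mainTheorem5:
  fixes b f :: "real \<Rightarrow> real" and lb ub :: real
  assumes "H2 b" and "H2 f"
    and "continuous_on {-1..1} b" and "continuous_on {-1..1} f"
    and "0 < lb" and "\<forall>x\<in>{-1..1}. lb \<le> b x \<and> b x \<le> ub"
  shows
   "(\<exists>C. \<forall>\<epsilon> u uBLm uBLp. 0 < \<epsilon> \<and> \<epsilon> \<le> 1 \<and> problem_data \<epsilon> b f u uBLm uBLp \<longrightarrow>
       (let uR = remainder b f u uBLm uBLp in
         H2 uR \<and> H10 uR \<and> L2norm uR \<le> C * \<epsilon>^2 \<and>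
         (\<exists>g. L2_weak_deriv uR g \<and> L2norm uR \<le> enorm \<epsilon> b uR g / sqrt lb \<and>
              enorm \<epsilon> b uR g \<le> C * \<epsilon>^2 \<and>
              (\<exists>h. L2_weak_deriv g h \<and> L2norm h \<le> C)))) \<and>
    (\<forall>\<kappa>\<ge>1. \<exists>C. \<forall>\<epsilon> u uBLm uBLp N xs.
       0 < \<epsilon> \<and> \<epsilon> \<le> 1 \<and> problem_data \<epsilon> b f u uBLm uBLp \<and> quasi_uniform \<kappa> N xs \<longrightarrow>
       (let uR = remainder b f u uBLm uBLp;
            w = (\<lambda>x. uR x - pl_interp N xs uR x) in
         \<exists>g. L2_weak_deriv w g \<and> enorm \<epsilon> b w g \<le> C / real N \<and>
             (real N \<le> 1 / \<epsilon> \<longrightarrow> enorm \<epsilon> b w g \<le> C / (real N)^2)))"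
proof -
  note Hb = assms(1) and Hf = assms(2) and cb = assms(3) and cf = assms(4) and lb = assms(5)
  have bnd: "\<And>x. x \<in> {-1..1} \<Longrightarrow> lb \<le> b x \<and> b x \<le> ub" using assms(6) by blast
  have bpos: "\<And>x. x \<in> {-1..1} \<Longrightarrow> 0 < b x" using bnd lb by force
  have lbub: "lb \<le> ub" using bnd[of 0] by auto
  have ub0: "0 \<le> ub" using lb lbub by simp
  obtain q1 q2 where cq1: "continuous_on {-1..1} q1" and wq: "L2_weak_deriv (\<lambda>x. f x / b x) q1"
    and wq1: "L2_weak_deriv q1 q2"
    using quotient_H2[OF Hf Hb cf cb bpos] by blast
  define Q2 where "Q2 = (LINT x:Iopen|lborel. (q2 x)^2)"
  have Q20: "0 \<le> Q2" unfolding Q2_def by (rule LINT_sq_nonneg)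
  define HB where "HB = 2 * ub^2 * Q2 / lb^2 + 2 * Q2"
  have HB0: "0 \<le> HB" unfolding HB_def using Q20 lb by simp
  have core: "\<exists>gR hR. L2_weak_deriv (remainder b f u m p) gR \<and> L2_weak_deriv gR hR
      \<and> H10 (remainder b f u m p) \<and> continuous_on {-1..1} (remainder b f u m p)
      \<and> remainder b f u m p (-1) = 0 \<and> remainder b f u m p 1 = 0
      \<and> enorm \<epsilon> b (remainder b f u m p) gR \<le> \<epsilon>^2 * sqrt Q2 / sqrt lb
      \<and> L2norm (remainder b f u m p) \<le> enorm \<epsilon> b (remainder b f u m p) gR / sqrt lb
      \<and> (LINT x:Iopen|lborel. (hR x)^2) \<le> HB"
    if "0 < \<epsilon>" "problem_data \<epsilon> b f u m p" for \<epsilon> u m p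
    using core1[OF cb cf lb bnd cq1 wq wq1 that] unfolding Q2_def HB_def by simp
  define C1 where "C1 = sqrt Q2 / sqrt lb + sqrt Q2 / lb + sqrt HB"
  have C1a: "sqrt Q2 / sqrt lb \<le> C1" and C1b: "sqrt Q2 / lb \<le> C1" and C1c: "sqrt HB \<le> C1"
    unfolding C1_def using lb Q20 HB0 by auto
  show ?thesis
  proof (rule conjI)
    show "\<exists>C. \<forall>\<epsilon> u uBLm uBLp. 0 < \<epsilon> \<and> \<epsilon> \<le> 1 \<and> problem_data \<epsilon> b f u uBLm uBLp \<longrightarrow>
       (let uR = remainder b f u uBLm uBLp in
         H2 uR \<and> H10 uR \<and> L2norm uR \<le> C * \<epsilon>^2 \<and>
         (\<exists>g. L2_weak_deriv uR g \<and> L2norm uR \<le> enorm \<epsilon> b uR g / sqrt lb \<and>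
              enorm \<epsilon> b uR g \<le> C * \<epsilon>^2 \<and>
              (\<exists>h. L2_weak_deriv g h \<and> L2norm h \<le> C)))"
    proof (intro exI[of _ C1] allI impI)
      fix \<epsilon> u m p assume H: "0 < \<epsilon> \<and> \<epsilon> \<le> 1 \<and> problem_data \<epsilon> b f u m p"
      then obtain gR hR where wR: "L2_weak_deriv (remainder b f u m p) gR" and wR2: "L2_weak_deriv gR hR"
        and H10R: "H10 (remainder b f u m p)"
        and en: "enorm \<epsilon> b (remainder b f u m p) gR \<le> \<epsilon>^2 * sqrt Q2 / sqrt lb"
        and L2le: "L2norm (remainder b f u m p) \<le> enorm \<epsilon> b (remainder b f u m p) gR / sqrt lb"
        and hB: "(LINT x:Iopen|lborel. (hR x)^2) \<le> HB"
        using core[of \<epsilon> u m p] by blast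
      have e2: "0 \<le> \<epsilon>^2" by simp
      have en2: "enorm \<epsilon> b (remainder b f u m p) gR \<le> C1 * \<epsilon>^2"
      proof -
        have "\<epsilon>^2 * sqrt Q2 / sqrt lb = \<epsilon>^2 * (sqrt Q2 / sqrt lb)" by simp
        also have "\<dots> \<le> \<epsilon>^2 * C1" using C1a e2 by (rule mult_left_mono)
        finally show ?thesis using en by (simp add: mult.commute)
      qed
      have L2b: "L2norm (remainder b f u m p) \<le> C1 * \<epsilon>^2"
      proof -
        have "enorm \<epsilon> b (remainder b f u m p) gR / sqrt lb \<le> (\<epsilon>^2 * sqrt Q2 / sqrt lb) / sqrt lb"
          by (rule divide_right_mono[OF en]) (use lb in simp)
        also have "(\<epsilon>^2 * sqrt Q2 / sqrt lb) / sqrt lb = \<epsilon>^2 * (sqrt Q2 / lb)"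
          using lb by (simp add: divide_divide_eq_left)
        also have "\<dots> \<le> \<epsilon>^2 * C1" using C1b e2 by (rule mult_left_mono)
        finally show ?thesis using L2le by (simp add: mult.commute)
      qed
      have hN: "L2norm hR \<le> C1"
      proof -
        have "L2norm hR \<le> sqrt HB" unfolding L2norm_def using hB by (rule real_sqrt_le_mono)
        then show ?thesis using C1c by simp
      qed
      have H2R: "H2 (remainder b f u m p)" unfolding H2_def H1_def using wR wR2 by blast
      show "let uR = remainder b f u m p in
         H2 uR \<and> H10 uR \<and> L2norm uR \<le> C1 * \<epsilon>^2 \<and>
         (\<exists>g. L2_weak_deriv uR g \<and> L2norm uR \<le> enorm \<epsilon> b uR g / sqrt lb \<and>
              enorm \<epsilon> b uR g \<le> C1 * \<epsilon>^2 \<and>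
              (\<exists>h. L2_weak_deriv g h \<and> L2norm h \<le> C1))"
        unfolding Let_def using H2R H10R L2b wR L2le en2 wR2 hN by blast
    qed
    show "\<forall>\<kappa>\<ge>1. \<exists>C. \<forall>\<epsilon> u uBLm uBLp N xs.
       0 < \<epsilon> \<and> \<epsilon> \<le> 1 \<and> problem_data \<epsilon> b f u uBLm uBLp \<and> quasi_uniform \<kappa> N xs \<longrightarrow>
       (let uR = remainder b f u uBLm uBLp;
            w = (\<lambda>x. uR x - pl_interp N xs uR x) in
         \<exists>g. L2_weak_deriv w g \<and> enorm \<epsilon> b w g \<le> C / real N \<and>
             (real N \<le> 1 / \<epsilon> \<longrightarrow> enorm \<epsilon> b w g \<le> C / (real N)^2))"
    proof (intro allI impI)
      fix \<kappa> :: real assume k: "1 \<le> \<kappa>"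
      define C2 where "C2 = sqrt ((4 * \<kappa>^2 + 16 * ub * \<kappa>^4) * HB)"
      show "\<exists>C. \<forall>\<epsilon> u uBLm uBLp N xs.
       0 < \<epsilon> \<and> \<epsilon> \<le> 1 \<and> problem_data \<epsilon> b f u uBLm uBLp \<and> quasi_uniform \<kappa> N xs \<longrightarrow>
       (let uR = remainder b f u uBLm uBLp;
            w = (\<lambda>x. uR x - pl_interp N xs uR x) in
         \<exists>g. L2_weak_deriv w g \<and> enorm \<epsilon> b w g \<le> C / real N \<and>
             (real N \<le> 1 / \<epsilon> \<longrightarrow> enorm \<epsilon> b w g \<le> C / (real N)^2))"
      proof (intro exI[of _ C2] allI impI)
        fix \<epsilon> u m p N xs
        assume H: "0 < \<epsilon> \<and> \<epsilon> \<le> 1 \<and> problem_data \<epsilon> b f u m p \<and> quasi_uniform \<kappa> N xs"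
        define uR where "uR = remainder b f u m p"
        obtain gR hR where wR: "L2_weak_deriv uR gR" and wR2: "L2_weak_deriv gR hR"
          and cuR: "continuous_on {-1..1} uR" and uRm1: "uR (-1) = 0"
          and hB: "(LINT x:Iopen|lborel. (hR x)^2) \<le> HB"
          using core[of \<epsilon> u m p] H unfolding uR_def by blast
        have LhR: "L2I hR" using wR2 by (simp add: L2_weak_deriv_def)
        obtain c where ae: "AE x in lborel. x \<in> Iopen \<longrightarrow> gR x = c + Pr hR x" using REP0[OF wR2] by blast
        define G where "G x = c + Pr hR x" for x
        have cG: "continuous_on {-1..1} G" unfolding G_def[abs_def]
          using Pr_cont[OF L2I_intI[OF LhR]] by (intro continuous_intros)
        have ae2: "AE x in lborel. x \<in> Iopen \<longrightarrow> gR x = G x" using ae by (simp add: G_def)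
        have wG: "L2_weak_deriv uR G" by (rule wd_cong_AE[OF wR ae2 L2I_cont[OF cG]])
        have repU: "\<And>x. x \<in> {-1..1} \<Longrightarrow> uR x = Pr G x" using REP1[OF cuR wG] uRm1 by simp
        have repG: "\<And>x. x \<in> {-1..1} \<Longrightarrow> G x = G (-1) + Pr hR x" by (simp add: G_def)
        have q: "quasi_uniform \<kappa> N xs" using H by blast
        note qf = qu_facts[OF q]
        define Hm where "Hm = 2 * \<kappa> / real N"
        have Hb: "\<And>i. i < N \<Longrightarrow> xs (Suc i) - xs i \<le> Hm" unfolding Hm_def by (rule hmax_bound[OF q])
        obtain g where wg: "L2_weak_deriv (\<lambda>x. uR x - pl_interp N xs uR x) g"
          and Ag: "(LINT x:Iopen|lborel. (g x)^2) \<le> Hm^2 * (LINT x:Iopen|lborel. (hR x)^2)"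
          and Bw: "(LINT x:Iopen|lborel. (uR x - pl_interp N xs uR x)^2) \<le> Hm^4 * (LINT x:Iopen|lborel. (hR x)^2)"
          using interp_final[where uR=uR and G=G and hR=hR and N=N and xs=xs, OF qf(4) qf(2) qf(3) qf(1) cG LhR repG repU Hb]
          by blast
        define w where "w x = uR x - pl_interp N xs uR x" for x
        have Lg: "L2I g" and Lw: "L2I w" using wg by (auto simp: L2_weak_deriv_def w_def[abs_def])
        define A where "A = (LINT x:Iopen|lborel. (g x)^2)"
        define B where "B = (LINT x:Iopen|lborel. (w x)^2)"
        define E where "E = (LINT x:Iopen|lborel. \<epsilon>^2 * (g x)^2 + b x * (w x)^2)"
        have A0: "0 \<le> A" unfolding A_def by (rule LINT_sq_nonneg)
        have B0: "0 \<le> B" unfolding B_def by (rule LINT_sq_nonneg)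
        have hB0: "0 \<le> (LINT x:Iopen|lborel. (hR x)^2)" by (rule LINT_sq_nonneg)
        have Hm0: "0 \<le> Hm" unfolding Hm_def using k by simp
        have A1: "A \<le> Hm^2 * HB"
        proof -
          have "A \<le> Hm^2 * (LINT x:Iopen|lborel. (hR x)^2)" using Ag unfolding A_def .
          also have "\<dots> \<le> Hm^2 * HB" using hB by (intro mult_left_mono) auto
          finally show ?thesis .
        qed
        have B1: "B \<le> Hm^4 * HB"
        proof -
          have "B \<le> Hm^4 * (LINT x:Iopen|lborel. (hR x)^2)" using Bw unfolding B_def w_def .
          also have "\<dots> \<le> Hm^4 * HB" using hB by (intro mult_left_mono) auto
          finally show ?thesis .
        qed
        have ibw: "intI (\<lambda>x. b x * (w x)^2)" by (rule intI_mult_cont[OF L2I_sq_int[OF Lw] cb])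
        have iE1: "intI (\<lambda>x. \<epsilon>^2 * (g x)^2)" by (rule intI_cmult[OF L2I_sq_int[OF Lg]])
        have E0: "0 \<le> E" unfolding E_def
        proof (rule LINT_nonneg)
          fix x :: real assume "x \<in> Iopen"
          then have "0 < b x" using bpos by auto
          then show "0 \<le> \<epsilon>^2 * (g x)^2 + b x * (w x)^2" by simp
        qed
        have E1: "E \<le> \<epsilon>^2 * A + ub * B"
        proof -
          have "E = \<epsilon>^2 * A + (LINT x:Iopen|lborel. b x * (w x)^2)"
            unfolding E_def A_def using set_integral_add(2)[OF iE1 ibw] by simp
          moreover have "(LINT x:Iopen|lborel. b x * (w x)^2) \<le> (LINT x:Iopen|lborel. ub * (w x)^2)"
          proof (rule set_integral_mono[OF ibw intI_cmult[OF L2I_sq_int[OF Lw]]])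
            fix x :: real assume "x \<in> Iopen"
            then have "b x \<le> ub" using bnd by auto
            then show "b x * (w x)^2 \<le> ub * (w x)^2" by (rule mult_right_mono) simp
          qed
          moreover have "(LINT x:Iopen|lborel. ub * (w x)^2) = ub * B" unfolding B_def by (rule set_integral_mult_right)
          ultimately show ?thesis by linarith
        qed
        have Ee: "enorm \<epsilon> b w g = sqrt E" unfolding enorm_def E_def ..
        have fa1: "sqrt E \<le> C2 / real N" and fa2: "real N \<le> 1 / \<epsilon> \<Longrightarrow> sqrt E \<le> C2 / (real N)^2"
          using final_arith[of \<epsilon> N \<kappa> ub HB Hm A B E] H qf(1) k ub0 HB0 Hm_def A0 A1 B0 B1 E0 E1
          unfolding C2_def by auto
        show "let uR = remainder b f u m p;
            w = (\<lambda>x. uR x - pl_interp N xs uR x) in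
         \<exists>g. L2_weak_deriv w g \<and> enorm \<epsilon> b w g \<le> C2 / real N \<and>
             (real N \<le> 1 / \<epsilon> \<longrightarrow> enorm \<epsilon> b w g \<le> C2 / (real N)^2)"
          unfolding Let_def uR_def[symmetric]
        proof (intro exI[of _ g] conjI impI)
          show "L2_weak_deriv (\<lambda>x. uR x - pl_interp N xs uR x) g" by (rule wg)
          show "enorm \<epsilon> b (\<lambda>x. uR x - pl_interp N xs uR x) g \<le> C2 / real N"
            using fa1 Ee unfolding w_def[abs_def] by simp
          assume "real N \<le> 1 / \<epsilon>"
          then show "enorm \<epsilon> b (\<lambda>x. uR x - pl_interp N xs uR x) g \<le> C2 / (real N)^2"
            using fa2 Ee unfolding w_def[abs_def] by simp
        qed
      qed
    qed
  qed
qed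


end
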